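(* Consider the cellular $1$-chain on the surface $D$ $$\tilde\delta^E_{\mathrm{edge}}:=\sum_{x\in E}\sum_{y:\,in(y)=x}y-\sum_{x\in\iota E}\sum_{y:\,in(y)=x}y .$$ Then $\tilde\delta^E_{\mathrm{edge}}$ is a boundary modulo $3$. More precisely, for any face $z_o$ of $D$, letting $D(z_o)$ be the complement in $D$ of the interiors of $z_o$ and $\iota z_o$, there are integers $n_z$ indexed by the faces $z\neq z_o,\iota z_o$ such that $\tilde\delta^E_{\mathrm{edge}}\equiv\sum_z n_z\,\partial z$ modulo $3$ times the group of cellular $1$-chains; i.e. $\tilde\delta^E_{\mathrm{edge}}$ is a boundary modulo $3$ as a chain on $D(z_o)$.
   Context: $D\subset\mathbb R^3$ is a regular dodecahedron centered at $0$ regarded as a cellular 2-sphere (vertices, oriented edges, faces with their outward-induced orientation), $\iota=-\mathrm{id}$. For an oriented edge $y$, $in(y)$ is its initial vertex. $\mathcal K$ is the set of five cubes inscribed in $D$; for a fixed $e\in\mathcal K$, its 8 vertices split into two 4-element sets of pairwise non-adjacent (in the cube) vertices, $E$ and $\iota E$. *)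

theory Defs
  imports "HOL-Analysis.Analysis" "HOL-Library.Function_Algebras"
begin

type_synonym pt = "real^3"

definition gphi :: real where "gphi = (1 + sqrt 5) / 2"

definition dodeca_V :: "pt set" where
  "dodeca_V =
     {vector [a, b, c] | a b c. a \<in> {-1, 1} \<and> b \<in> {-1, 1} \<and> c \<in> {-1, 1}}
   \<union> {vector [0, s / gphi, t * gphi] | s t. s \<in> {-1, 1} \<and> t \<in> {-1, 1}}
   \<union> {vector [s / gphi, t * gphi, 0] | s t. s \<in> {-1, 1} \<and> t \<in> {-1, 1}}
   \<union> {vector [t * gphi, 0, s / gphi] | s t. s \<in> {-1, 1} \<and> t \<in> {-1, 1}}"

definition exposed_face :: "pt set \<Rightarrow> pt set \<Rightarrow> bool" where
  "exposed_face V F \<longleftrightarrow> (\<exists>n c. n \<noteq> 0 \<and> (\<forall>v\<in>V. n \<bullet> v \<le> c) \<and> F = {v\<in>V. n \<bullet> v = c})"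

definition dodeca_faces :: "pt set set" where
  "dodeca_faces = {F. exposed_face dodeca_V F \<and> card F \<ge> 3}"

definition dodeca_oedges :: "(pt \<times> pt) set" where
  "dodeca_oedges = {(u, v). u \<noteq> v \<and> exposed_face dodeca_V {u, v}}"

text \<open>Cellular integral 1-chains are represented as functions on ordered pairs;
  the oriented edge (u,v) is the chain with value 1 at (u,v) and -1 at (v,u),
  so that the reversed edge is the negative chain.\<close>
type_synonym chain1 = "pt \<times> pt \<Rightarrow> int"

definition edge_chain :: "pt \<times> pt \<Rightarrow> chain1" where
  "edge_chain y = (\<lambda>w. if w = y then 1 else if w = (snd y, fst y) then -1 else 0)"

text \<open>Boundary of a face with the orientation induced by the outward normal: an edge (u,v)
  of the face is positively oriented iff det(u, v, p) > 0 where p is the (outward) sum of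
  the face's vertices (counterclockwise seen from outside).\<close>
definition face_boundary :: "pt set \<Rightarrow> chain1" where
  "face_boundary z = (\<Sum>y\<in>{(u, v). (u, v) \<in> dodeca_oedges \<and> u \<in> z \<and> v \<in> z
        \<and> (cross3 u v) \<bullet> (\<Sum>w\<in>z. w) > 0}. edge_chain y)"

definition is_cube_vertex_set :: "pt set \<Rightarrow> bool" where
  "is_cube_vertex_set S \<longleftrightarrow> (\<exists>a e1 e2 e3. e1 \<noteq> 0 \<and> norm e1 = norm e2 \<and> norm e2 = norm e3
      \<and> e1 \<bullet> e2 = 0 \<and> e2 \<bullet> e3 = 0 \<and> e1 \<bullet> e3 = 0
      \<and> S = {a + s1 *\<^sub>R e1 + s2 *\<^sub>R e2 + s3 *\<^sub>R e3 | s1 s2 s3.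
               s1 \<in> {-1, 1} \<and> s2 \<in> {-1, 1} \<and> s3 \<in> {-1, 1}})"

definition inscribed_cubes :: "pt set set" where
  "inscribed_cubes = {S. S \<subseteq> dodeca_V \<and> is_cube_vertex_set S}"

definition cube_adj :: "pt set \<Rightarrow> pt \<Rightarrow> pt \<Rightarrow> bool" where
  "cube_adj S u v \<longleftrightarrow> u \<in> S \<and> v \<in> S \<and> u \<noteq> v \<and>
     (\<forall>w\<in>S. \<forall>w'\<in>S. w \<noteq> w' \<longrightarrow> dist u v \<le> dist w w')"

definition delta_edge :: "pt set \<Rightarrow> chain1" where
  "delta_edge E = (\<Sum>x\<in>E. \<Sum>y\<in>{y\<in>dodeca_oedges. fst y = x}. edge_chain y)
                - (\<Sum>x\<in>uminus ` E. \<Sum>y\<in>{y\<in>dodeca_oedges. fst y = x}. edge_chain y)"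

end

theory Submission
  imports Defs
begin


type_synonym zq = "int \<times> int"
type_synonym zv = "zq \<times> zq \<times> zq"

definition zr :: "zq \<Rightarrow> real" where "zr p = real_of_int (fst p) + real_of_int (snd p) * gphi"
definition zadd :: "zq \<Rightarrow> zq \<Rightarrow> zq" where "zadd p q = (fst p + fst q, snd p + snd q)"
definition zsub :: "zq \<Rightarrow> zq \<Rightarrow> zq" where "zsub p q = (fst p - fst q, snd p - snd q)"
definition zmul :: "zq \<Rightarrow> zq \<Rightarrow> zq" where
  "zmul p q = (fst p * fst q + snd p * snd q, fst p * snd q + snd p * fst q + snd p * snd q)"
definition zpos2 :: "int \<Rightarrow> int \<Rightarrow> bool" where
  "zpos2 s b = ((0 \<le> s \<and> 0 \<le> b \<and> (s \<noteq> 0 \<or> b \<noteq> 0)) \<or> (s < 0 \<and> 0 < b \<and> s * s < 5*b*b) \<or> (0 < s \<and> b < 0 \<and> 5*b*b < s * s))"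
definition zpos :: "zq \<Rightarrow> bool" where "zpos p = zpos2 (2 * fst p + snd p) (snd p)"

definition vadd :: "zv \<Rightarrow> zv \<Rightarrow> zv" where
  "vadd u v = (case u of (a,b,c) \<Rightarrow> case v of (d,e,f) \<Rightarrow> (zadd a d, zadd b e, zadd c f))"
definition vsub :: "zv \<Rightarrow> zv \<Rightarrow> zv" where
  "vsub u v = (case u of (a,b,c) \<Rightarrow> case v of (d,e,f) \<Rightarrow> (zsub a d, zsub b e, zsub c f))"
definition vsm :: "zq \<Rightarrow> zv \<Rightarrow> zv" where
  "vsm k v = (case v of (d,e,f) \<Rightarrow> (zmul k d, zmul k e, zmul k f))"
definition vdot :: "zv \<Rightarrow> zv \<Rightarrow> zq" where
  "vdot u v = (case u of (a,b,c) \<Rightarrow> case v of (d,e,f) \<Rightarrow> zadd (zmul a d) (zadd (zmul b e) (zmul c f)))"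
definition vcross :: "zv \<Rightarrow> zv \<Rightarrow> zv" where
  "vcross u v = (case u of (a,b,c) \<Rightarrow> case v of (d,e,f) \<Rightarrow>
     (zsub (zmul b f) (zmul c e), zsub (zmul c d) (zmul a f), zsub (zmul a e) (zmul b d)))"
definition vzero :: zv where "vzero = ((0,0),(0,0),(0,0))"

definition vec3 :: "zv \<Rightarrow> pt" where
  "vec3 v = (case v of (a,b,c) \<Rightarrow> vector [zr a, zr b, zr c])"

lemma gphi_sq: "gphi * gphi = gphi + 1"
  unfolding gphi_def by (simp add: field_simps)

lemma zr_add: "zr (zadd p q) = zr p + zr q" by (simp add: zr_def zadd_def algebra_simps)
lemma zr_sub: "zr (zsub p q) = zr p - zr q" by (simp add: zr_def zsub_def algebra_simps)
lemma zr_mul: "zr (zmul p q) = zr p * zr q"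
proof -
  have "zr p * zr q = fst p * fst q + (fst p * snd q + snd p * fst q) * gphi + snd p * snd q * (gphi*gphi)"
    by (simp add: zr_def algebra_simps)
  also have "\<dots> = zr (zmul p q)" by (simp add: gphi_sq zr_def zmul_def algebra_simps)
  finally show ?thesis by simp
qed


lemma zpos2_sound:
  assumes "zpos2 s b" shows "real_of_int s + real_of_int b * sqrt 5 > 0"
proof -
  have s5: "sqrt 5 > 0" by simp
  consider "0 \<le> s \<and> 0 \<le> b \<and> (s \<noteq> 0 \<or> b \<noteq> 0)" | "s < 0 \<and> 0 < b \<and> s * s < 5*b*b" | "0 < s \<and> b < 0 \<and> 5*b*b < s * s"
    using assms unfolding zpos2_def by blast
  then show ?thesis
  proof cases
    case 1 then show ?thesis using s5
      by (smt (verit, best) mult_nonneg_nonneg mult_pos_pos of_int_0_less_iff of_int_nonneg)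
  next
    case 2
    hence "real_of_int s * real_of_int s < 5 * (real_of_int b * real_of_int b)"
      by (metis (mono_tags, opaque_lifting) mult.assoc of_int_less_iff of_int_mult of_int_numeral)
    hence "sqrt (real_of_int s * real_of_int s) < sqrt (5 * (real_of_int b * real_of_int b))"
      by (rule real_sqrt_less_mono)
    hence "- real_of_int s < sqrt 5 * real_of_int b" using 2
      by (simp add: real_sqrt_mult real_sqrt_mult_self)
    then show ?thesis by (simp add: algebra_simps)
  next
    case 3
    hence "5 * (real_of_int b * real_of_int b) < real_of_int s * real_of_int s"
      by (metis (mono_tags, opaque_lifting) mult.assoc of_int_less_iff of_int_mult of_int_numeral)
    hence "sqrt (5 * (real_of_int b * real_of_int b)) < sqrt (real_of_int s * real_of_int s)"
      by (rule real_sqrt_less_mono)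
    hence "- (sqrt 5 * real_of_int b) < real_of_int s" using 3
      by (simp add: real_sqrt_mult real_sqrt_mult_self)
    then show ?thesis by (simp add: algebra_simps)
  qed
qed

lemma zpos_sound: "zpos p \<Longrightarrow> zr p > 0"
proof -
  assume "zpos p"
  hence "real_of_int (2 * fst p + snd p) + real_of_int (snd p) * sqrt 5 > 0"
    using zpos2_sound zpos_def by blast
  moreover have "real_of_int (2 * fst p + snd p) + real_of_int (snd p) * sqrt 5 = 2 * zr p"
    by (simp add: zr_def gphi_def algebra_simps)
  ultimately show ?thesis by simp
qed

lemma vec3_add: "vec3 (vadd u v) = vec3 u + vec3 v"
  by (cases u; cases v) (auto simp: vec3_def vadd_def vec_eq_iff forall_3 zr_add)
lemma vec3_sub: "vec3 (vsub u v) = vec3 u - vec3 v"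
  by (cases u; cases v) (auto simp: vec3_def vsub_def vec_eq_iff forall_3 zr_sub)
lemma vec3_sm: "vec3 (vsm k v) = zr k *\<^sub>R vec3 v"
  by (cases v) (auto simp: vec3_def vsm_def vec_eq_iff forall_3 zr_mul)
lemma vec3_inner: "vec3 u \<bullet> vec3 v = zr (vdot u v)"
  by (cases u; cases v) (auto simp: vec3_def vdot_def inner_vec_def sum_3 zr_add zr_mul)
lemma vec3_cross: "cross3 (vec3 u) (vec3 v) = vec3 (vcross u v)"
  by (cases u; cases v) (auto simp: vec3_def vcross_def cross3_def vec_eq_iff forall_3 zr_sub zr_mul)
lemma vec3_zero: "vec3 vzero = 0"
  by (auto simp: vec3_def vzero_def vec_eq_iff forall_3 zr_def)


definition vt :: "zv list" where "vt = [((-1,0),(-1,0),(-1,0)), ((-1,0),(-1,0),(1,0)), ((-1,0),(1,0),(-1,0)), ((-1,0),(1,0),(1,0)), ((1,0),(-1,0),(-1,0)), ((1,0),(-1,0),(1,0)), ((1,0),(1,0),(-1,0)), ((1,0),(1,0),(1,0)), ((0,0),(1,-1),(0,-1)), ((1,-1),(0,-1),(0,0)), ((0,-1),(0,0),(1,-1)), ((0,0),(1,-1),(0,1)), ((1,-1),(0,1),(0,0)), ((0,1),(0,0),(1,-1)), ((0,0),(-1,1),(0,-1)), ((-1,1),(0,-1),(0,0)), ((0,-1),(0,0),(-1,1)), ((0,0),(-1,1),(0,1)), ((-1,1),(0,1),(0,0)), ((0,1),(0,0),(-1,1))]"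
definition nb :: "nat list list" where "nb = [[8, 9, 10], [9, 11, 16], [10, 12, 14], [12, 16, 17], [8, 13, 15], [11, 15, 19], [13, 14, 18], [17, 18, 19], [0, 4, 14], [0, 1, 15], [0, 2, 16], [1, 5, 17], [2, 3, 18], [4, 6, 19], [2, 6, 8], [4, 5, 9], [1, 3, 10], [3, 7, 11], [6, 7, 12], [5, 7, 13]]"
definition ngl :: "nat list" where "ngl = [7, 6, 5, 4, 3, 2, 1, 0, 17, 18, 19, 14, 15, 16, 11, 12, 13, 8, 9, 10]"
definition fcs :: "nat list list" where "fcs = [[0, 1, 9, 10, 16], [0, 2, 8, 10, 14], [0, 4, 8, 9, 15], [1, 3, 11, 16, 17], [1, 5, 9, 11, 15], [2, 3, 10, 12, 16], [2, 6, 12, 14, 18], [3, 7, 12, 17, 18], [4, 5, 13, 15, 19], [4, 6, 8, 13, 14], [5, 7, 11, 17, 19], [6, 7, 13, 18, 19]]"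
definition ngfl :: "nat list" where "ngfl = [11, 10, 7, 9, 6, 8, 4, 2, 5, 3, 1, 0]"
definition fau :: "nat list list" where "fau = [[0, 1, 2], [3, 0, 4], [6, 1, 5], [3, 7, 5], [8, 2, 9], [8, 10, 4], [6, 11, 9], [11, 10, 7], [9, 1, 2], [4, 2, 0], [5, 0, 1], [10, 3, 4], [7, 6, 5], [11, 8, 9], [9, 1, 6], [4, 2, 8], [5, 0, 3], [10, 3, 7], [7, 6, 11], [11, 8, 10]]"
definition certt :: "zq list list list" where "certt = [[[(0,0), (0,0), (0,0)], [(0,0), (0,1), (1,0)], [(1,0), (0,0), (0,1)], [(1,0), (0,1), (1,1)], [(0,1), (1,0), (0,0)], [(0,1), (1,1), (1,0)], [(1,1), (1,0), (0,1)], [(1,1), (1,1), (1,1)], [(1,0), (0,0), (0,0)], [(0,0), (1,0), (0,0)], [(0,0), (0,0), (1,0)], [(1,0), (1,1), (0,1)], [(0,1), (1,0), (1,1)], [(1,1), (0,1), (1,0)], [(0,1), (0,0), (1,0)], [(1,0), (0,1), (0,0)], [(0,0), (1,0), (0,1)], [(0,1), (1,1), (1,1)], [(1,1), (0,1), (1,1)], [(1,1), (1,1), (0,1)]], [[(0,1), (0,0), (1,0)], [(0,0), (0,0), (0,0)], [(0,1), (1,0), (1,1)], [(0,0), (1,0), (0,1)], [(1,1), (0,1), (1,0)], [(1,0), (0,1), (0,0)], [(1,1), (1,1), (1,1)], [(1,0), (1,1), (0,1)], [(1,1), (1,0), (0,1)], [(1,0), (0,0), (0,0)], [(1,0), (0,0),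 (0,1)], [(0,0), (1,0), (0,0)], [(1,0), (0,1), (1,1)], [(1,1), (1,1), (0,1)], [(1,1), (0,1), (1,1)], [(0,1), (1,0), (0,0)], [(0,0), (0,0), (1,0)], [(0,0), (0,1), (1,0)], [(0,1), (1,1), (1,1)], [(0,1), (1,1), (1,0)]], [[(0,1), (0,0), (1,0)], [(1,1), (0,1), (1,0)], [(0,0), (0,0), (0,0)], [(1,0), (0,1), (0,0)], [(0,1), (1,0), (1,1)], [(1,1), (1,1), (1,1)], [(0,0), (1,0), (0,1)], [(1,0), (1,1), (0,1)], [(1,0), (0,0), (0,1)], [(1,1), (1,0), (0,1)], [(1,0), (0,0), (0,0)], [(1,1), (1,1), (0,1)], [(0,0), (1,0), (0,0)], [(1,0), (0,1), (1,1)], [(0,0), (0,0), (1,0)], [(1,1), (0,1), (1,1)], [(0,1), (1,0), (0,0)], [(0,1), (1,1), (1,0)], [(0,0), (0,1), (1,0)], [(0,1), (1,1), (1,1)]], [[(0,1), (1,1), (1,0)], [(0,0), (0,1), (1,0)], [(0,1), (1,0), (0,0)], [(0,0), (0,0), (0,0)], [(1,1), (1,1), (1,1)], [(1,0), (0,1), (1,1)], [(1,1), (1,0), (0,1)], [(1,0), (0,0), (0,1)], [(1,1), (1,1), (0,1)], [(1,0), (1,1), (0,1)], [(1,0), (0,1), (0,0)], [(0,0), (1,0), (0,1)], [(1,0), (0,0), (0,0)], [(1,1), (0,1), (1,1)], [(1,1), (0,1), (1,0)], [(0,1), (1,1), (1,1)], [(0,0), (1,0), (0,0)], [(0,0), (0,0),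 (1,0)], [(0,1), (0,0), (1,0)], [(0,1), (1,0), (1,1)]], [[(0,1), (0,0), (1,0)], [(0,1), (1,0), (1,1)], [(1,1), (0,1), (1,0)], [(1,1), (1,1), (1,1)], [(0,0), (0,0), (0,0)], [(0,0), (1,0), (0,1)], [(1,0), (0,1), (0,0)], [(1,0), (1,1), (0,1)], [(1,0), (0,0), (0,0)], [(1,0), (0,0), (0,1)], [(1,1), (1,0), (0,1)], [(1,0), (0,1), (1,1)], [(1,1), (1,1), (0,1)], [(0,0), (1,0), (0,0)], [(0,1), (1,0), (0,0)], [(0,0), (0,0), (1,0)], [(1,1), (0,1), (1,1)], [(0,1), (1,1), (1,1)], [(0,1), (1,1), (1,0)], [(0,0), (0,1), (1,0)]], [[(0,1), (1,1), (1,0)], [(0,1), (1,0), (0,0)], [(1,1), (1,1), (1,1)], [(1,1), (1,0), (0,1)], [(0,0), (0,1), (1,0)], [(0,0), (0,0), (0,0)], [(1,0), (0,1), (1,1)], [(1,0), (0,0), (0,1)], [(1,0), (1,1), (0,1)], [(1,0), (0,1), (0,0)], [(1,1), (1,1), (0,1)], [(1,0), (0,0), (0,0)], [(1,1), (0,1), (1,1)], [(0,0), (1,0), (0,1)], [(0,1), (1,1), (1,1)], [(0,0), (1,0), (0,0)], [(1,1), (0,1), (1,0)], [(0,1), (0,0), (1,0)], [(0,1), (1,0), (1,1)], [(0,0), (0,0), (1,0)]], [[(0,1), (1,1), (1,0)], [(1,1), (1,1), (1,1)], [(0,0), (0,1), (1,0)], [(1,0), (0,1), (1,1)], [(0,1),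 (1,0), (0,0)], [(1,1), (1,0), (0,1)], [(0,0), (0,0), (0,0)], [(1,0), (0,0), (0,1)], [(1,0), (0,1), (0,0)], [(1,1), (1,1), (0,1)], [(1,0), (1,1), (0,1)], [(1,1), (0,1), (1,1)], [(0,0), (1,0), (0,1)], [(1,0), (0,0), (0,0)], [(0,0), (1,0), (0,0)], [(1,1), (0,1), (1,0)], [(0,1), (1,1), (1,1)], [(0,1), (1,0), (1,1)], [(0,0), (0,0), (1,0)], [(0,1), (0,0), (1,0)]], [[(1,1), (1,1), (1,1)], [(1,1), (1,0), (0,1)], [(0,1), (1,1), (1,0)], [(0,1), (1,0), (0,0)], [(1,0), (0,1), (1,1)], [(1,0), (0,0), (0,1)], [(0,0), (0,1), (1,0)], [(0,0), (0,0), (0,0)], [(0,1), (1,1), (1,1)], [(1,1), (0,1), (1,1)], [(1,1), (1,1), (0,1)], [(0,1), (0,0), (1,0)], [(1,0), (0,1), (0,0)], [(0,0), (1,0), (0,1)], [(1,0), (1,1), (0,1)], [(0,1), (1,0), (1,1)], [(1,1), (0,1), (1,0)], [(1,0), (0,0), (0,0)], [(0,0), (1,0), (0,0)], [(0,0), (0,0), (1,0)]], [[(1,0), (0,0), (0,0)], [(1,1), (0,1), (1,0)], [(1,0), (0,0), (0,1)], [(1,1), (0,1), (1,1)], [(0,0), (1,0), (0,0)], [(0,1), (1,1), (1,0)], [(0,0), (1,0), (0,1)], [(0,1), (1,1), (1,1)], [(0,0), (0,0), (0,0)], [(0,1), (1,0), (0,0)], [(0,1), (0,0), (1,0)], [(1,1),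 (1,1), (0,1)], [(0,1), (1,0), (1,1)], [(0,0), (0,1), (1,0)], [(0,0), (0,0), (1,0)], [(1,0), (0,1), (0,0)], [(1,1), (1,0), (0,1)], [(1,1), (1,1), (1,1)], [(1,0), (0,1), (1,1)], [(1,0), (1,1), (0,1)]], [[(1,0), (0,0), (0,0)], [(0,0), (1,0), (0,0)], [(1,1), (0,1), (1,0)], [(0,1), (1,1), (1,0)], [(1,0), (0,0), (0,1)], [(0,0), (1,0), (0,1)], [(1,1), (0,1), (1,1)], [(0,1), (1,1), (1,1)], [(0,1), (0,0), (1,0)], [(0,0), (0,0), (0,0)], [(0,1), (1,0), (0,0)], [(0,0), (0,1), (1,0)], [(1,1), (1,1), (0,1)], [(0,1), (1,0), (1,1)], [(1,1), (1,0), (0,1)], [(0,0), (0,0), (1,0)], [(1,0), (0,1), (0,0)], [(1,0), (1,1), (0,1)], [(1,1), (1,1), (1,1)], [(1,0), (0,1), (1,1)]], [[(1,0), (0,0), (0,0)], [(1,0), (0,0), (0,1)], [(0,0), (1,0), (0,0)], [(0,0), (1,0), (0,1)], [(1,1), (0,1), (1,0)], [(1,1), (0,1), (1,1)], [(0,1), (1,1), (1,0)], [(0,1), (1,1), (1,1)], [(0,1), (1,0), (0,0)], [(0,1), (0,0), (1,0)], [(0,0), (0,0), (0,0)], [(0,1), (1,0), (1,1)], [(0,0), (0,1), (1,0)], [(1,1), (1,1), (0,1)], [(1,0), (0,1), (0,0)], [(1,1), (1,0), (0,1)], [(0,0), (0,0), (1,0)], [(1,0), (0,1), (1,1)], [(1,0),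 (1,1), (0,1)], [(1,1), (1,1), (1,1)]], [[(1,1), (0,1), (1,0)], [(1,0), (0,0), (0,0)], [(1,1), (0,1), (1,1)], [(1,0), (0,0), (0,1)], [(0,1), (1,1), (1,0)], [(0,0), (1,0), (0,0)], [(0,1), (1,1), (1,1)], [(0,0), (1,0), (0,1)], [(1,1), (1,1), (0,1)], [(0,1), (1,0), (0,0)], [(1,1), (1,0), (0,1)], [(0,0), (0,0), (0,0)], [(0,1), (1,0), (1,1)], [(1,0), (1,1), (0,1)], [(1,1), (1,1), (1,1)], [(1,0), (0,1), (0,0)], [(0,1), (0,0), (1,0)], [(0,0), (0,0), (1,0)], [(1,0), (0,1), (1,1)], [(0,0), (0,1), (1,0)]], [[(1,1), (0,1), (1,0)], [(0,1), (1,1), (1,0)], [(1,0), (0,0), (0,0)], [(0,0), (1,0), (0,0)], [(1,1), (0,1), (1,1)], [(0,1), (1,1), (1,1)], [(1,0), (0,0), (0,1)], [(0,0), (1,0), (0,1)], [(1,1), (1,0), (0,1)], [(1,1), (1,1), (0,1)], [(0,1), (1,0), (0,0)], [(1,0), (1,1), (0,1)], [(0,0), (0,0), (0,0)], [(0,1), (1,0), (1,1)], [(0,1), (0,0), (1,0)], [(1,1), (1,1), (1,1)], [(1,0), (0,1), (0,0)], [(0,0), (0,1), (1,0)], [(0,0), (0,0), (1,0)], [(1,0), (0,1), (1,1)]], [[(1,1), (0,1), (1,0)], [(1,1), (0,1), (1,1)], [(0,1), (1,1), (1,0)], [(0,1), (1,1), (1,1)], [(1,0), (0,0), (0,0)],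 [(1,0), (0,0), (0,1)], [(0,0), (1,0), (0,0)], [(0,0), (1,0), (0,1)], [(0,1), (1,0), (0,0)], [(1,1), (1,0), (0,1)], [(1,1), (1,1), (0,1)], [(0,1), (1,0), (1,1)], [(1,0), (1,1), (0,1)], [(0,0), (0,0), (0,0)], [(1,0), (0,1), (0,0)], [(0,1), (0,0), (1,0)], [(1,1), (1,1), (1,1)], [(1,0), (0,1), (1,1)], [(0,0), (0,1), (1,0)], [(0,0), (0,0), (1,0)]], [[(1,0), (0,0), (0,1)], [(1,1), (0,1), (1,1)], [(1,0), (0,0), (0,0)], [(1,1), (0,1), (1,0)], [(0,0), (1,0), (0,1)], [(0,1), (1,1), (1,1)], [(0,0), (1,0), (0,0)], [(0,1), (1,1), (1,0)], [(0,0), (0,0), (1,0)], [(0,1), (1,0), (1,1)], [(0,1), (0,0), (1,0)], [(1,1), (1,1), (1,1)], [(0,1), (1,0), (0,0)], [(0,0), (0,1), (1,0)], [(0,0), (0,0), (0,0)], [(1,0), (0,1), (1,1)], [(1,1), (1,0), (0,1)], [(1,1), (1,1), (0,1)], [(1,0), (0,1), (0,0)], [(1,0), (1,1), (0,1)]], [[(1,0), (0,0), (0,1)], [(0,0), (1,0), (0,1)], [(1,1), (0,1), (1,1)], [(0,1), (1,1), (1,1)], [(1,0), (0,0), (0,0)], [(0,0), (1,0), (0,0)], [(1,1), (0,1), (1,0)], [(0,1), (1,1), (1,0)], [(0,1), (0,0), (1,0)], [(0,0), (0,0), (1,0)], [(0,1), (1,0), (1,1)], [(0,0), (0,1), (1,0)],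 [(1,1), (1,1), (1,1)], [(0,1), (1,0), (0,0)], [(1,1), (1,0), (0,1)], [(0,0), (0,0), (0,0)], [(1,0), (0,1), (1,1)], [(1,0), (1,1), (0,1)], [(1,1), (1,1), (0,1)], [(1,0), (0,1), (0,0)]], [[(1,0), (0,0), (0,1)], [(1,0), (0,0), (0,0)], [(0,0), (1,0), (0,1)], [(0,0), (1,0), (0,0)], [(1,1), (0,1), (1,1)], [(1,1), (0,1), (1,0)], [(0,1), (1,1), (1,1)], [(0,1), (1,1), (1,0)], [(0,1), (1,0), (1,1)], [(0,1), (0,0), (1,0)], [(0,0), (0,0), (1,0)], [(0,1), (1,0), (0,0)], [(0,0), (0,1), (1,0)], [(1,1), (1,1), (1,1)], [(1,0), (0,1), (1,1)], [(1,1), (1,0), (0,1)], [(0,0), (0,0), (0,0)], [(1,0), (0,1), (0,0)], [(1,0), (1,1), (0,1)], [(1,1), (1,1), (0,1)]], [[(1,1), (0,1), (1,1)], [(1,0), (0,0), (0,1)], [(1,1), (0,1), (1,0)], [(1,0), (0,0), (0,0)], [(0,1), (1,1), (1,1)], [(0,0), (1,0), (0,1)], [(0,1), (1,1), (1,0)], [(0,0), (1,0), (0,0)], [(1,1), (1,1), (1,1)], [(0,1), (1,0), (1,1)], [(1,1), (1,0), (0,1)], [(0,0), (0,0), (1,0)], [(0,1), (1,0), (0,0)], [(1,0), (1,1), (0,1)], [(1,1), (1,1), (0,1)], [(1,0), (0,1), (1,1)], [(0,1), (0,0), (1,0)], [(0,0), (0,0), (0,0)], [(1,0), (0,1), (0,0)],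 [(0,0), (0,1), (1,0)]], [[(1,1), (0,1), (1,1)], [(0,1), (1,1), (1,1)], [(1,0), (0,0), (0,1)], [(0,0), (1,0), (0,1)], [(1,1), (0,1), (1,0)], [(0,1), (1,1), (1,0)], [(1,0), (0,0), (0,0)], [(0,0), (1,0), (0,0)], [(1,1), (1,0), (0,1)], [(1,1), (1,1), (1,1)], [(0,1), (1,0), (1,1)], [(1,0), (1,1), (0,1)], [(0,0), (0,0), (1,0)], [(0,1), (1,0), (0,0)], [(0,1), (0,0), (1,0)], [(1,1), (1,1), (0,1)], [(1,0), (0,1), (1,1)], [(0,0), (0,1), (1,0)], [(0,0), (0,0), (0,0)], [(1,0), (0,1), (0,0)]], [[(1,1), (0,1), (1,1)], [(1,1), (0,1), (1,0)], [(0,1), (1,1), (1,1)], [(0,1), (1,1), (1,0)], [(1,0), (0,0), (0,1)], [(1,0), (0,0), (0,0)], [(0,0), (1,0), (0,1)], [(0,0), (1,0), (0,0)], [(0,1), (1,0), (1,1)], [(1,1), (1,0), (0,1)], [(1,1), (1,1), (1,1)], [(0,1), (1,0), (0,0)], [(1,0), (1,1), (0,1)], [(0,0), (0,0), (1,0)], [(1,0), (0,1), (1,1)], [(0,1), (0,0), (1,0)], [(1,1), (1,1), (0,1)], [(1,0), (0,1), (0,0)], [(0,0), (0,1), (1,0)], [(0,0), (0,0), (0,0)]]]"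
definition ce :: "(nat \<times> nat) list" where "ce = [(0,8), (0,9), (0,10), (1,9), (1,11), (1,16), (2,10), (2,12), (2,14), (3,12), (3,16), (3,17), (4,8), (4,13), (4,15), (5,11), (5,15), (5,19), (6,13), (6,14), (6,18), (7,17), (7,18), (7,19), (8,14), (9,15), (10,16), (11,17), (12,18), (13,19)]"
definition tets :: "nat list list" where "tets = [[0, 3, 5, 6], [0, 11, 12, 13], [1, 2, 4, 7], [1, 8, 12, 19], [2, 9, 13, 17], [3, 9, 14, 19], [4, 10, 11, 18], [5, 8, 16, 18], [6, 10, 15, 17], [7, 14, 15, 16]]"
definition fbvt :: "int list list" where "fbvt = [[0, 1, -1, -1, 0, 1, 0, 0, 0, 0, 0, 0, 0, 0, 0, 0, 0, 0, 0, 0, 0, 0, 0, 0, 0, 0, -1, 0, 0, 0], [-1, 0, 1, 0, 0, 0, -1, 0, 1, 0, 0, 0, 0, 0, 0, 0, 0, 0, 0, 0, 0, 0, 0, 0, -1, 0, 0, 0, 0, 0], [1, -1, 0, 0, 0, 0, 0, 0, 0, 0, 0, 0, -1, 0, 1, 0, 0, 0, 0, 0, 0, 0, 0, 0, 0, -1, 0, 0, 0, 0], [0, 0, 0, 0, 1, -1, 0, 0, 0, 0, 1, -1, 0, 0, 0, 0, 0, 0, 0, 0, 0, 0, 0, 0, 0, 0, 0, 1, 0, 0], [0, 0, 0, 1, -1, 0, 0, 0, 0, 0, 0, 0, 0, 0, 0, 1, -1, 0, 0, 0, 0, 0, 0, 0, 0, 1, 0, 0, 0, 0], [0, 0, 0,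 0, 0, 0, 1, -1, 0, 1, -1, 0, 0, 0, 0, 0, 0, 0, 0, 0, 0, 0, 0, 0, 0, 0, 1, 0, 0, 0], [0, 0, 0, 0, 0, 0, 0, 1, -1, 0, 0, 0, 0, 0, 0, 0, 0, 0, 0, 1, -1, 0, 0, 0, 0, 0, 0, 0, 1, 0], [0, 0, 0, 0, 0, 0, 0, 0, 0, -1, 0, 1, 0, 0, 0, 0, 0, 0, 0, 0, 0, -1, 1, 0, 0, 0, 0, 0, -1, 0], [0, 0, 0, 0, 0, 0, 0, 0, 0, 0, 0, 0, 0, 1, -1, 0, 1, -1, 0, 0, 0, 0, 0, 0, 0, 0, 0, 0, 0, 1], [0, 0, 0, 0, 0, 0, 0, 0, 0, 0, 0, 0, 1, -1, 0, 0, 0, 0, 1, -1, 0, 0, 0, 0, 1, 0, 0, 0, 0, 0], [0, 0, 0, 0, 0, 0, 0, 0, 0, 0, 0, 0, 0, 0, 0, -1, 0, 1, 0, 0, 0, 1, 0, -1, 0, 0, 0, -1, 0, 0], [0, 0, 0, 0, 0, 0, 0, 0, 0, 0, 0, 0, 0, 0, 0, 0, 0, 0, -1, 0, 1, 0, -1, 1, 0, 0, 0, 0, 0, -1]]"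
definition dlt :: "int list list" where "dlt = [[1, 1, 1, -1, -1, -1, -1, -1, -1, 1, 1, 1, -1, -1, -1, 1, 1, 1, 1, 1, 1, -1, -1, -1, 0, 0, 0, 0, 0, 0], [1, 1, 1, 0, -1, 1, 0, -1, 1, -1, 1, 0, 0, -1, 1, -1, 1, 0, -1, 1, 0, -1, -1, -1, 1, 1, 1, 1, 1, 1], [-1, -1, -1, 1, 1, 1, 1, 1, 1, -1, -1, -1, 1, 1, 1, -1, -1, -1, -1, -1, -1, 1, 1, 1, 0, 0, 0, 0, 0, 0], [-1, 0, 1, 1, 1, 1, 1, -1, 0, -1, 0, 1, -1, 0, 1, 0, 1, -1, -1, -1, -1, 1, 0, -1, 1, 1, -1, 1, 1, -1], [1, -1, 0, -1, 0, 1, 1, 1, 1, 0, 1, -1, 1, -1, 0, -1, -1, -1, -1, 0, 1, -1, 1, 0, -1, 1, 1, -1, 1, 1], [0, -1, 1, -1, 1, 0, 1, 0, -1, 1, 1, 1, -1, -1, -1, 1, 0, -1, 0, -1, 1, 0, 1, -1, -1, 1, -1, -1, 1, -1], [0, 1, -1, 1, -1, 0, -1, 0, 1, -1, -1, -1, 1, 1, 1, -1, 0, 1, 0, 1, -1, 0, -1, 1, 1, -1, 1, 1, -1, 1], [-1, 1, 0, 1, 0, -1, -1, -1, -1, 0, -1, 1, -1, 1, 0, 1, 1, 1, 1, 0, -1, 1, -1, 0, 1, -1, -1, 1, -1, -1], [1, 0, -1, -1, -1, -1, -1, 1, 0, 1, 0, -1, 1, 0, -1, 0, -1, 1, 1,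 1, 1, -1, 0, 1, -1, -1, 1, -1, -1, 1], [-1, -1, -1, 0, 1, -1, 0, 1, -1, 1, -1, 0, 0, 1, -1, 1, -1, 0, 1, -1, 0, 1, 1, 1, -1, -1, -1, -1, -1, -1]]"
definition solt :: "int list list list" where "solt = [[[0, 1, 2, 1, 2, 0, 2, 2, 0, 1, 1, 0], [2, 0, 1, 0, 1, 2, 1, 1, 2, 0, 0, 2], [1, 2, 0, 2, 0, 1, 0, 0, 1, 2, 2, 1], [2, 0, 1, 0, 1, 2, 1, 1, 2, 0, 0, 2], [1, 2, 0, 2, 0, 1, 0, 0, 1, 2, 2, 1], [0, 1, 2, 1, 2, 0, 2, 2, 0, 1, 1, 0], [1, 2, 0, 2, 0, 1, 0, 0, 1, 2, 2, 1], [1, 2, 0, 2, 0, 1, 0, 0, 1, 2, 2, 1], [0, 1, 2, 1, 2, 0, 2, 2, 0, 1, 1, 0], [2, 0, 1, 0, 1, 2, 1, 1, 2, 0, 0, 2], [2, 0, 1, 0, 1, 2, 1, 1, 2, 0, 0, 2], [0, 1, 2, 1, 2, 0, 2, 2, 0, 1, 1, 0]], [[0, 1, 2, 2, 0, 1, 0, 2, 1, 2, 1, 0], [2, 0, 1, 1, 2, 0, 2, 1, 0, 1, 0, 2], [1, 2, 0, 0, 1, 2, 1, 0, 2, 0, 2, 1], [1, 2, 0, 0, 1, 2, 1, 0, 2, 0, 2, 1], [0, 1, 2, 2, 0, 1, 0, 2, 1, 2, 1, 0], [2, 0, 1, 1, 2, 0, 2, 1, 0, 1, 0, 2], [0, 1,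 2, 2, 0, 1, 0, 2, 1, 2, 1, 0], [1, 2, 0, 0, 1, 2, 1, 0, 2, 0, 2, 1], [2, 0, 1, 1, 2, 0, 2, 1, 0, 1, 0, 2], [1, 2, 0, 0, 1, 2, 1, 0, 2, 0, 2, 1], [2, 0, 1, 1, 2, 0, 2, 1, 0, 1, 0, 2], [0, 1, 2, 2, 0, 1, 0, 2, 1, 2, 1, 0]], [[0, 2, 1, 2, 1, 0, 1, 1, 0, 2, 2, 0], [1, 0, 2, 0, 2, 1, 2, 2, 1, 0, 0, 1], [2, 1, 0, 1, 0, 2, 0, 0, 2, 1, 1, 2], [1, 0, 2, 0, 2, 1, 2, 2, 1, 0, 0, 1], [2, 1, 0, 1, 0, 2, 0, 0, 2, 1, 1, 2], [0, 2, 1, 2, 1, 0, 1, 1, 0, 2, 2, 0], [2, 1, 0, 1, 0, 2, 0, 0, 2, 1, 1, 2], [2, 1, 0, 1, 0, 2, 0, 0, 2, 1, 1, 2], [0, 2, 1, 2, 1, 0, 1, 1, 0, 2, 2, 0], [1, 0, 2, 0, 2, 1, 2, 2, 1, 0, 0, 1], [1, 0, 2, 0, 2, 1, 2, 2, 1, 0, 0, 1], [0, 2, 1, 2, 1, 0, 1, 1, 0, 2, 2, 0]], [[0, 1, 0, 2, 1, 2, 1, 0, 2, 2, 1, 0], [2, 0, 2, 1, 0, 1, 0, 2, 1, 1, 0, 2], [0, 1, 0, 2, 1, 2, 1, 0, 2, 2, 1, 0], [1, 2, 1, 0, 2, 0, 2, 1, 0, 0, 2, 1], [2, 0, 2, 1,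 0, 1, 0, 2, 1, 1, 0, 2], [1, 2, 1, 0, 2, 0, 2, 1, 0, 0, 2, 1], [2, 0, 2, 1, 0, 1, 0, 2, 1, 1, 0, 2], [0, 1, 0, 2, 1, 2, 1, 0, 2, 2, 1, 0], [1, 2, 1, 0, 2, 0, 2, 1, 0, 0, 2, 1], [1, 2, 1, 0, 2, 0, 2, 1, 0, 0, 2, 1], [2, 0, 2, 1, 0, 1, 0, 2, 1, 1, 0, 2], [0, 1, 0, 2, 1, 2, 1, 0, 2, 2, 1, 0]], [[0, 0, 1, 2, 2, 1, 2, 1, 1, 2, 0, 0], [0, 0, 1, 2, 2, 1, 2, 1, 1, 2, 0, 0], [2, 2, 0, 1, 1, 0, 1, 0, 0, 1, 2, 2], [1, 1, 2, 0, 0, 2, 0, 2, 2, 0, 1, 1], [1, 1, 2, 0, 0, 2, 0, 2, 2, 0, 1, 1], [2, 2, 0, 1, 1, 0, 1, 0, 0, 1, 2, 2], [1, 1, 2, 0, 0, 2, 0, 2, 2, 0, 1, 1], [2, 2, 0, 1, 1, 0, 1, 0, 0, 1, 2, 2], [2, 2, 0, 1, 1, 0, 1, 0, 0, 1, 2, 2], [1, 1, 2, 0, 0, 2, 0, 2, 2, 0, 1, 1], [0, 0, 1, 2, 2, 1, 2, 1, 1, 2, 0, 0], [0, 0, 1, 2, 2, 1, 2, 1, 1, 2, 0, 0]], [[0, 1, 1, 0, 2, 2, 2, 1, 2, 0, 1, 0], [2, 0, 0, 2, 1, 1, 1, 0, 1, 2, 0, 2], [2, 0, 0, 2, 1, 1,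 1, 0, 1, 2, 0, 2], [0, 1, 1, 0, 2, 2, 2, 1, 2, 0, 1, 0], [1, 2, 2, 1, 0, 0, 0, 2, 0, 1, 2, 1], [1, 2, 2, 1, 0, 0, 0, 2, 0, 1, 2, 1], [1, 2, 2, 1, 0, 0, 0, 2, 0, 1, 2, 1], [2, 0, 0, 2, 1, 1, 1, 0, 1, 2, 0, 2], [1, 2, 2, 1, 0, 0, 0, 2, 0, 1, 2, 1], [0, 1, 1, 0, 2, 2, 2, 1, 2, 0, 1, 0], [2, 0, 0, 2, 1, 1, 1, 0, 1, 2, 0, 2], [0, 1, 1, 0, 2, 2, 2, 1, 2, 0, 1, 0]], [[0, 2, 2, 0, 1, 1, 1, 2, 1, 0, 2, 0], [1, 0, 0, 1, 2, 2, 2, 0, 2, 1, 0, 1], [1, 0, 0, 1, 2, 2, 2, 0, 2, 1, 0, 1], [0, 2, 2, 0, 1, 1, 1, 2, 1, 0, 2, 0], [2, 1, 1, 2, 0, 0, 0, 1, 0, 2, 1, 2], [2, 1, 1, 2, 0, 0, 0, 1, 0, 2, 1, 2], [2, 1, 1, 2, 0, 0, 0, 1, 0, 2, 1, 2], [1, 0, 0, 1, 2, 2, 2, 0, 2, 1, 0, 1], [2, 1, 1, 2, 0, 0, 0, 1, 0, 2, 1, 2], [0, 2, 2, 0, 1, 1, 1, 2, 1, 0, 2, 0], [1, 0, 0, 1, 2, 2, 2, 0, 2, 1, 0, 1], [0, 2, 2, 0, 1, 1, 1, 2, 1, 0, 2, 0]], [[0, 0, 2, 1, 1, 2, 1, 2,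 2, 1, 0, 0], [0, 0, 2, 1, 1, 2, 1, 2, 2, 1, 0, 0], [1, 1, 0, 2, 2, 0, 2, 0, 0, 2, 1, 1], [2, 2, 1, 0, 0, 1, 0, 1, 1, 0, 2, 2], [2, 2, 1, 0, 0, 1, 0, 1, 1, 0, 2, 2], [1, 1, 0, 2, 2, 0, 2, 0, 0, 2, 1, 1], [2, 2, 1, 0, 0, 1, 0, 1, 1, 0, 2, 2], [1, 1, 0, 2, 2, 0, 2, 0, 0, 2, 1, 1], [1, 1, 0, 2, 2, 0, 2, 0, 0, 2, 1, 1], [2, 2, 1, 0, 0, 1, 0, 1, 1, 0, 2, 2], [0, 0, 2, 1, 1, 2, 1, 2, 2, 1, 0, 0], [0, 0, 2, 1, 1, 2, 1, 2, 2, 1, 0, 0]], [[0, 2, 0, 1, 2, 1, 2, 0, 1, 1, 2, 0], [1, 0, 1, 2, 0, 2, 0, 1, 2, 2, 0, 1], [0, 2, 0, 1, 2, 1, 2, 0, 1, 1, 2, 0], [2, 1, 2, 0, 1, 0, 1, 2, 0, 0, 1, 2], [1, 0, 1, 2, 0, 2, 0, 1, 2, 2, 0, 1], [2, 1, 2, 0, 1, 0, 1, 2, 0, 0, 1, 2], [1, 0, 1, 2, 0, 2, 0, 1, 2, 2, 0, 1], [0, 2, 0, 1, 2, 1, 2, 0, 1, 1, 2, 0], [2, 1, 2, 0, 1, 0, 1, 2, 0, 0, 1, 2], [2, 1, 2, 0, 1, 0, 1, 2, 0, 0, 1, 2], [1, 0, 1, 2, 0, 2, 0, 1, 2, 2,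 0, 1], [0, 2, 0, 1, 2, 1, 2, 0, 1, 1, 2, 0]], [[0, 2, 1, 1, 0, 2, 0, 1, 2, 1, 2, 0], [1, 0, 2, 2, 1, 0, 1, 2, 0, 2, 0, 1], [2, 1, 0, 0, 2, 1, 2, 0, 1, 0, 1, 2], [2, 1, 0, 0, 2, 1, 2, 0, 1, 0, 1, 2], [0, 2, 1, 1, 0, 2, 0, 1, 2, 1, 2, 0], [1, 0, 2, 2, 1, 0, 1, 2, 0, 2, 0, 1], [0, 2, 1, 1, 0, 2, 0, 1, 2, 1, 2, 0], [2, 1, 0, 0, 2, 1, 2, 0, 1, 0, 1, 2], [1, 0, 2, 2, 1, 0, 1, 2, 0, 2, 0, 1], [2, 1, 0, 0, 2, 1, 2, 0, 1, 0, 1, 2], [1, 0, 2, 2, 1, 0, 1, 2, 0, 2, 0, 1], [0, 2, 1, 1, 0, 2, 0, 1, 2, 1, 2, 0]]]"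
lemma vt_0: "vt ! 0 = ((-1,0),(-1,0),(-1,0))" by (simp add: vt_def)
lemma nb_0: "nb ! 0 = [8, 9, 10]" by (simp add: nb_def)
lemma ngl_0: "ngl ! 0 = 7" by (simp add: ngl_def)
lemma fau_0: "fau ! 0 = [0, 1, 2]" by (simp add: fau_def)
lemma certt_0: "certt ! 0 = [[(0,0), (0,0), (0,0)], [(0,0), (0,1), (1,0)], [(1,0), (0,0), (0,1)], [(1,0), (0,1), (1,1)], [(0,1), (1,0), (0,0)], [(0,1), (1,1), (1,0)], [(1,1), (1,0), (0,1)], [(1,1), (1,1), (1,1)], [(1,0), (0,0), (0,0)], [(0,0), (1,0), (0,0)], [(0,0), (0,0), (1,0)], [(1,0), (1,1), (0,1)], [(0,1), (1,0), (1,1)], [(1,1), (0,1), (1,0)], [(0,1), (0,0), (1,0)], [(1,0), (0,1), (0,0)], [(0,0), (1,0), (0,1)], [(0,1), (1,1), (1,1)], [(1,1), (0,1), (1,1)], [(1,1), (1,1), (0,1)]]" by (simp add: certt_def)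
lemma vt_1: "vt ! 1 = ((-1,0),(-1,0),(1,0))" by (simp add: vt_def)
lemma nb_1: "nb ! 1 = [9, 11, 16]" by (simp add: nb_def)
lemma ngl_1: "ngl ! 1 = 6" by (simp add: ngl_def)
lemma fau_1: "fau ! 1 = [3, 0, 4]" by (simp add: fau_def)
lemma certt_1: "certt ! 1 = [[(0,1), (0,0), (1,0)], [(0,0), (0,0), (0,0)], [(0,1), (1,0), (1,1)], [(0,0), (1,0), (0,1)], [(1,1), (0,1), (1,0)], [(1,0), (0,1), (0,0)], [(1,1), (1,1), (1,1)], [(1,0), (1,1), (0,1)], [(1,1), (1,0), (0,1)], [(1,0), (0,0), (0,0)], [(1,0), (0,0), (0,1)], [(0,0), (1,0), (0,0)], [(1,0), (0,1), (1,1)], [(1,1), (1,1), (0,1)], [(1,1), (0,1), (1,1)], [(0,1), (1,0), (0,0)], [(0,0), (0,0), (1,0)], [(0,0), (0,1), (1,0)], [(0,1), (1,1), (1,1)], [(0,1), (1,1), (1,0)]]" by (simp add: certt_def)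
lemma vt_1s: "vt ! Suc 0 = ((-1,0),(-1,0),(1,0))" by (simp add: vt_def)
lemma nb_1s: "nb ! Suc 0 = [9, 11, 16]" by (simp add: nb_def)
lemma ngl_1s: "ngl ! Suc 0 = 6" by (simp add: ngl_def)
lemma fau_1s: "fau ! Suc 0 = [3, 0, 4]" by (simp add: fau_def)
lemma certt_1s: "certt ! Suc 0 = [[(0,1), (0,0), (1,0)], [(0,0), (0,0), (0,0)], [(0,1), (1,0), (1,1)], [(0,0), (1,0), (0,1)], [(1,1), (0,1), (1,0)], [(1,0), (0,1), (0,0)], [(1,1), (1,1), (1,1)], [(1,0), (1,1), (0,1)], [(1,1), (1,0), (0,1)], [(1,0), (0,0), (0,0)], [(1,0), (0,0), (0,1)], [(0,0), (1,0), (0,0)], [(1,0), (0,1), (1,1)], [(1,1), (1,1), (0,1)], [(1,1), (0,1), (1,1)], [(0,1), (1,0), (0,0)], [(0,0), (0,0), (1,0)], [(0,0), (0,1), (1,0)], [(0,1), (1,1), (1,1)], [(0,1), (1,1), (1,0)]]" by (simp add: certt_def)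
lemma vt_2: "vt ! 2 = ((-1,0),(1,0),(-1,0))" by (simp add: vt_def)
lemma nb_2: "nb ! 2 = [10, 12, 14]" by (simp add: nb_def)
lemma ngl_2: "ngl ! 2 = 5" by (simp add: ngl_def)
lemma fau_2: "fau ! 2 = [6, 1, 5]" by (simp add: fau_def)
lemma certt_2: "certt ! 2 = [[(0,1), (0,0), (1,0)], [(1,1), (0,1), (1,0)], [(0,0), (0,0), (0,0)], [(1,0), (0,1), (0,0)], [(0,1), (1,0), (1,1)], [(1,1), (1,1), (1,1)], [(0,0), (1,0), (0,1)], [(1,0), (1,1), (0,1)], [(1,0), (0,0), (0,1)], [(1,1), (1,0), (0,1)], [(1,0), (0,0), (0,0)], [(1,1), (1,1), (0,1)], [(0,0), (1,0), (0,0)], [(1,0), (0,1), (1,1)], [(0,0), (0,0), (1,0)], [(1,1), (0,1), (1,1)], [(0,1), (1,0), (0,0)], [(0,1), (1,1), (1,0)], [(0,0), (0,1), (1,0)], [(0,1), (1,1), (1,1)]]" by (simp add: certt_def)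
lemma vt_3: "vt ! 3 = ((-1,0),(1,0),(1,0))" by (simp add: vt_def)
lemma nb_3: "nb ! 3 = [12, 16, 17]" by (simp add: nb_def)
lemma ngl_3: "ngl ! 3 = 4" by (simp add: ngl_def)
lemma fau_3: "fau ! 3 = [3, 7, 5]" by (simp add: fau_def)
lemma certt_3: "certt ! 3 = [[(0,1), (1,1), (1,0)], [(0,0), (0,1), (1,0)], [(0,1), (1,0), (0,0)], [(0,0), (0,0), (0,0)], [(1,1), (1,1), (1,1)], [(1,0), (0,1), (1,1)], [(1,1), (1,0), (0,1)], [(1,0), (0,0), (0,1)], [(1,1), (1,1), (0,1)], [(1,0), (1,1), (0,1)], [(1,0), (0,1), (0,0)], [(0,0), (1,0), (0,1)], [(1,0), (0,0), (0,0)], [(1,1), (0,1), (1,1)], [(1,1), (0,1), (1,0)], [(0,1), (1,1), (1,1)], [(0,0), (1,0), (0,0)], [(0,0), (0,0), (1,0)], [(0,1), (0,0), (1,0)], [(0,1), (1,0), (1,1)]]" by (simp add: certt_def)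
lemma vt_4: "vt ! 4 = ((1,0),(-1,0),(-1,0))" by (simp add: vt_def)
lemma nb_4: "nb ! 4 = [8, 13, 15]" by (simp add: nb_def)
lemma ngl_4: "ngl ! 4 = 3" by (simp add: ngl_def)
lemma fau_4: "fau ! 4 = [8, 2, 9]" by (simp add: fau_def)
lemma certt_4: "certt ! 4 = [[(0,1), (0,0), (1,0)], [(0,1), (1,0), (1,1)], [(1,1), (0,1), (1,0)], [(1,1), (1,1), (1,1)], [(0,0), (0,0), (0,0)], [(0,0), (1,0), (0,1)], [(1,0), (0,1), (0,0)], [(1,0), (1,1), (0,1)], [(1,0), (0,0), (0,0)], [(1,0), (0,0), (0,1)], [(1,1), (1,0), (0,1)], [(1,0), (0,1), (1,1)], [(1,1), (1,1), (0,1)], [(0,0), (1,0), (0,0)], [(0,1), (1,0), (0,0)], [(0,0), (0,0), (1,0)], [(1,1), (0,1), (1,1)], [(0,1), (1,1), (1,1)], [(0,1), (1,1), (1,0)], [(0,0), (0,1), (1,0)]]" by (simp add: certt_def)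
lemma vt_5: "vt ! 5 = ((1,0),(-1,0),(1,0))" by (simp add: vt_def)
lemma nb_5: "nb ! 5 = [11, 15, 19]" by (simp add: nb_def)
lemma ngl_5: "ngl ! 5 = 2" by (simp add: ngl_def)
lemma fau_5: "fau ! 5 = [8, 10, 4]" by (simp add: fau_def)
lemma certt_5: "certt ! 5 = [[(0,1), (1,1), (1,0)], [(0,1), (1,0), (0,0)], [(1,1), (1,1), (1,1)], [(1,1), (1,0), (0,1)], [(0,0), (0,1), (1,0)], [(0,0), (0,0), (0,0)], [(1,0), (0,1), (1,1)], [(1,0), (0,0), (0,1)], [(1,0), (1,1), (0,1)], [(1,0), (0,1), (0,0)], [(1,1), (1,1), (0,1)], [(1,0), (0,0), (0,0)], [(1,1), (0,1), (1,1)], [(0,0), (1,0), (0,1)], [(0,1), (1,1), (1,1)], [(0,0), (1,0), (0,0)], [(1,1), (0,1), (1,0)], [(0,1), (0,0), (1,0)], [(0,1), (1,0), (1,1)], [(0,0), (0,0), (1,0)]]" by (simp add: certt_def)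
lemma vt_6: "vt ! 6 = ((1,0),(1,0),(-1,0))" by (simp add: vt_def)
lemma nb_6: "nb ! 6 = [13, 14, 18]" by (simp add: nb_def)
lemma ngl_6: "ngl ! 6 = 1" by (simp add: ngl_def)
lemma fau_6: "fau ! 6 = [6, 11, 9]" by (simp add: fau_def)
lemma certt_6: "certt ! 6 = [[(0,1), (1,1), (1,0)], [(1,1), (1,1), (1,1)], [(0,0), (0,1), (1,0)], [(1,0), (0,1), (1,1)], [(0,1), (1,0), (0,0)], [(1,1), (1,0), (0,1)], [(0,0), (0,0), (0,0)], [(1,0), (0,0), (0,1)], [(1,0), (0,1), (0,0)], [(1,1), (1,1), (0,1)], [(1,0), (1,1), (0,1)], [(1,1), (0,1), (1,1)], [(0,0), (1,0), (0,1)], [(1,0), (0,0), (0,0)], [(0,0), (1,0), (0,0)], [(1,1), (0,1), (1,0)], [(0,1), (1,1), (1,1)], [(0,1), (1,0), (1,1)], [(0,0), (0,0), (1,0)], [(0,1), (0,0), (1,0)]]" by (simp add: certt_def)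
lemma vt_7: "vt ! 7 = ((1,0),(1,0),(1,0))" by (simp add: vt_def)
lemma nb_7: "nb ! 7 = [17, 18, 19]" by (simp add: nb_def)
lemma ngl_7: "ngl ! 7 = 0" by (simp add: ngl_def)
lemma fau_7: "fau ! 7 = [11, 10, 7]" by (simp add: fau_def)
lemma certt_7: "certt ! 7 = [[(1,1), (1,1), (1,1)], [(1,1), (1,0), (0,1)], [(0,1), (1,1), (1,0)], [(0,1), (1,0), (0,0)], [(1,0), (0,1), (1,1)], [(1,0), (0,0), (0,1)], [(0,0), (0,1), (1,0)], [(0,0), (0,0), (0,0)], [(0,1), (1,1), (1,1)], [(1,1), (0,1), (1,1)], [(1,1), (1,1), (0,1)], [(0,1), (0,0), (1,0)], [(1,0), (0,1), (0,0)], [(0,0), (1,0), (0,1)], [(1,0), (1,1), (0,1)], [(0,1), (1,0), (1,1)], [(1,1), (0,1), (1,0)], [(1,0), (0,0), (0,0)], [(0,0), (1,0), (0,0)], [(0,0), (0,0), (1,0)]]" by (simp add: certt_def)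
lemma vt_8: "vt ! 8 = ((0,0),(1,-1),(0,-1))" by (simp add: vt_def)
lemma nb_8: "nb ! 8 = [0, 4, 14]" by (simp add: nb_def)
lemma ngl_8: "ngl ! 8 = 17" by (simp add: ngl_def)
lemma fau_8: "fau ! 8 = [9, 1, 2]" by (simp add: fau_def)
lemma certt_8: "certt ! 8 = [[(1,0), (0,0), (0,0)], [(1,1), (0,1), (1,0)], [(1,0), (0,0), (0,1)], [(1,1), (0,1), (1,1)], [(0,0), (1,0), (0,0)], [(0,1), (1,1), (1,0)], [(0,0), (1,0), (0,1)], [(0,1), (1,1), (1,1)], [(0,0), (0,0), (0,0)], [(0,1), (1,0), (0,0)], [(0,1), (0,0), (1,0)], [(1,1), (1,1), (0,1)], [(0,1), (1,0), (1,1)], [(0,0), (0,1), (1,0)], [(0,0), (0,0), (1,0)], [(1,0), (0,1), (0,0)], [(1,1), (1,0), (0,1)], [(1,1), (1,1), (1,1)], [(1,0), (0,1), (1,1)], [(1,0), (1,1), (0,1)]]" by (simp add: certt_def)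
lemma vt_9: "vt ! 9 = ((1,-1),(0,-1),(0,0))" by (simp add: vt_def)
lemma nb_9: "nb ! 9 = [0, 1, 15]" by (simp add: nb_def)
lemma ngl_9: "ngl ! 9 = 18" by (simp add: ngl_def)
lemma fau_9: "fau ! 9 = [4, 2, 0]" by (simp add: fau_def)
lemma certt_9: "certt ! 9 = [[(1,0), (0,0), (0,0)], [(0,0), (1,0), (0,0)], [(1,1), (0,1), (1,0)], [(0,1), (1,1), (1,0)], [(1,0), (0,0), (0,1)], [(0,0), (1,0), (0,1)], [(1,1), (0,1), (1,1)], [(0,1), (1,1), (1,1)], [(0,1), (0,0), (1,0)], [(0,0), (0,0), (0,0)], [(0,1), (1,0), (0,0)], [(0,0), (0,1), (1,0)], [(1,1), (1,1), (0,1)], [(0,1), (1,0), (1,1)], [(1,1), (1,0), (0,1)], [(0,0), (0,0), (1,0)], [(1,0), (0,1), (0,0)], [(1,0), (1,1), (0,1)], [(1,1), (1,1), (1,1)], [(1,0), (0,1), (1,1)]]" by (simp add: certt_def)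
lemma vt_10: "vt ! 10 = ((0,-1),(0,0),(1,-1))" by (simp add: vt_def)
lemma nb_10: "nb ! 10 = [0, 2, 16]" by (simp add: nb_def)
lemma ngl_10: "ngl ! 10 = 19" by (simp add: ngl_def)
lemma fau_10: "fau ! 10 = [5, 0, 1]" by (simp add: fau_def)
lemma certt_10: "certt ! 10 = [[(1,0), (0,0), (0,0)], [(1,0), (0,0), (0,1)], [(0,0), (1,0), (0,0)], [(0,0), (1,0), (0,1)], [(1,1), (0,1), (1,0)], [(1,1), (0,1), (1,1)], [(0,1), (1,1), (1,0)], [(0,1), (1,1), (1,1)], [(0,1), (1,0), (0,0)], [(0,1), (0,0), (1,0)], [(0,0), (0,0), (0,0)], [(0,1), (1,0), (1,1)], [(0,0), (0,1), (1,0)], [(1,1), (1,1), (0,1)], [(1,0), (0,1), (0,0)], [(1,1), (1,0), (0,1)], [(0,0), (0,0), (1,0)], [(1,0), (0,1), (1,1)], [(1,0), (1,1), (0,1)], [(1,1), (1,1), (1,1)]]" by (simp add: certt_def)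
lemma vt_11: "vt ! 11 = ((0,0),(1,-1),(0,1))" by (simp add: vt_def)
lemma nb_11: "nb ! 11 = [1, 5, 17]" by (simp add: nb_def)
lemma ngl_11: "ngl ! 11 = 14" by (simp add: ngl_def)
lemma fau_11: "fau ! 11 = [10, 3, 4]" by (simp add: fau_def)
lemma certt_11: "certt ! 11 = [[(1,1), (0,1), (1,0)], [(1,0), (0,0), (0,0)], [(1,1), (0,1), (1,1)], [(1,0), (0,0), (0,1)], [(0,1), (1,1), (1,0)], [(0,0), (1,0), (0,0)], [(0,1), (1,1), (1,1)], [(0,0), (1,0), (0,1)], [(1,1), (1,1), (0,1)], [(0,1), (1,0), (0,0)], [(1,1), (1,0), (0,1)], [(0,0), (0,0), (0,0)], [(0,1), (1,0), (1,1)], [(1,0), (1,1), (0,1)], [(1,1), (1,1), (1,1)], [(1,0), (0,1), (0,0)], [(0,1), (0,0), (1,0)], [(0,0), (0,0), (1,0)], [(1,0), (0,1), (1,1)], [(0,0), (0,1), (1,0)]]" by (simp add: certt_def)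
lemma vt_12: "vt ! 12 = ((1,-1),(0,1),(0,0))" by (simp add: vt_def)
lemma nb_12: "nb ! 12 = [2, 3, 18]" by (simp add: nb_def)
lemma ngl_12: "ngl ! 12 = 15" by (simp add: ngl_def)
lemma fau_12: "fau ! 12 = [7, 6, 5]" by (simp add: fau_def)
lemma certt_12: "certt ! 12 = [[(1,1), (0,1), (1,0)], [(0,1), (1,1), (1,0)], [(1,0), (0,0), (0,0)], [(0,0), (1,0), (0,0)], [(1,1), (0,1), (1,1)], [(0,1), (1,1), (1,1)], [(1,0), (0,0), (0,1)], [(0,0), (1,0), (0,1)], [(1,1), (1,0), (0,1)], [(1,1), (1,1), (0,1)], [(0,1), (1,0), (0,0)], [(1,0), (1,1), (0,1)], [(0,0), (0,0), (0,0)], [(0,1), (1,0), (1,1)], [(0,1), (0,0), (1,0)], [(1,1), (1,1), (1,1)], [(1,0), (0,1), (0,0)], [(0,0), (0,1), (1,0)], [(0,0), (0,0), (1,0)], [(1,0), (0,1), (1,1)]]" by (simp add: certt_def)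
lemma vt_13: "vt ! 13 = ((0,1),(0,0),(1,-1))" by (simp add: vt_def)
lemma nb_13: "nb ! 13 = [4, 6, 19]" by (simp add: nb_def)
lemma ngl_13: "ngl ! 13 = 16" by (simp add: ngl_def)
lemma fau_13: "fau ! 13 = [11, 8, 9]" by (simp add: fau_def)
lemma certt_13: "certt ! 13 = [[(1,1), (0,1), (1,0)], [(1,1), (0,1), (1,1)], [(0,1), (1,1), (1,0)], [(0,1), (1,1), (1,1)], [(1,0), (0,0), (0,0)], [(1,0), (0,0), (0,1)], [(0,0), (1,0), (0,0)], [(0,0), (1,0), (0,1)], [(0,1), (1,0), (0,0)], [(1,1), (1,0), (0,1)], [(1,1), (1,1), (0,1)], [(0,1), (1,0), (1,1)], [(1,0), (1,1), (0,1)], [(0,0), (0,0), (0,0)], [(1,0), (0,1), (0,0)], [(0,1), (0,0), (1,0)], [(1,1), (1,1), (1,1)], [(1,0), (0,1), (1,1)], [(0,0), (0,1), (1,0)], [(0,0), (0,0), (1,0)]]" by (simp add: certt_def)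
lemma vt_14: "vt ! 14 = ((0,0),(-1,1),(0,-1))" by (simp add: vt_def)
lemma nb_14: "nb ! 14 = [2, 6, 8]" by (simp add: nb_def)
lemma ngl_14: "ngl ! 14 = 11" by (simp add: ngl_def)
lemma fau_14: "fau ! 14 = [9, 1, 6]" by (simp add: fau_def)
lemma certt_14: "certt ! 14 = [[(1,0), (0,0), (0,1)], [(1,1), (0,1), (1,1)], [(1,0), (0,0), (0,0)], [(1,1), (0,1), (1,0)], [(0,0), (1,0), (0,1)], [(0,1), (1,1), (1,1)], [(0,0), (1,0), (0,0)], [(0,1), (1,1), (1,0)], [(0,0), (0,0), (1,0)], [(0,1), (1,0), (1,1)], [(0,1), (0,0), (1,0)], [(1,1), (1,1), (1,1)], [(0,1), (1,0), (0,0)], [(0,0), (0,1), (1,0)], [(0,0), (0,0), (0,0)], [(1,0), (0,1), (1,1)], [(1,1), (1,0), (0,1)], [(1,1), (1,1), (0,1)], [(1,0), (0,1), (0,0)], [(1,0), (1,1), (0,1)]]" by (simp add: certt_def)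
lemma vt_15: "vt ! 15 = ((-1,1),(0,-1),(0,0))" by (simp add: vt_def)
lemma nb_15: "nb ! 15 = [4, 5, 9]" by (simp add: nb_def)
lemma ngl_15: "ngl ! 15 = 12" by (simp add: ngl_def)
lemma fau_15: "fau ! 15 = [4, 2, 8]" by (simp add: fau_def)
lemma certt_15: "certt ! 15 = [[(1,0), (0,0), (0,1)], [(0,0), (1,0), (0,1)], [(1,1), (0,1), (1,1)], [(0,1), (1,1), (1,1)], [(1,0), (0,0), (0,0)], [(0,0), (1,0), (0,0)], [(1,1), (0,1), (1,0)], [(0,1), (1,1), (1,0)], [(0,1), (0,0), (1,0)], [(0,0), (0,0), (1,0)], [(0,1), (1,0), (1,1)], [(0,0), (0,1), (1,0)], [(1,1), (1,1), (1,1)], [(0,1), (1,0), (0,0)], [(1,1), (1,0), (0,1)], [(0,0), (0,0), (0,0)], [(1,0), (0,1), (1,1)], [(1,0), (1,1), (0,1)], [(1,1), (1,1), (0,1)], [(1,0), (0,1), (0,0)]]" by (simp add: certt_def)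
lemma vt_16: "vt ! 16 = ((0,-1),(0,0),(-1,1))" by (simp add: vt_def)
lemma nb_16: "nb ! 16 = [1, 3, 10]" by (simp add: nb_def)
lemma ngl_16: "ngl ! 16 = 13" by (simp add: ngl_def)
lemma fau_16: "fau ! 16 = [5, 0, 3]" by (simp add: fau_def)
lemma certt_16: "certt ! 16 = [[(1,0), (0,0), (0,1)], [(1,0), (0,0), (0,0)], [(0,0), (1,0), (0,1)], [(0,0), (1,0), (0,0)], [(1,1), (0,1), (1,1)], [(1,1), (0,1), (1,0)], [(0,1), (1,1), (1,1)], [(0,1), (1,1), (1,0)], [(0,1), (1,0), (1,1)], [(0,1), (0,0), (1,0)], [(0,0), (0,0), (1,0)], [(0,1), (1,0), (0,0)], [(0,0), (0,1), (1,0)], [(1,1), (1,1), (1,1)], [(1,0), (0,1), (1,1)], [(1,1), (1,0), (0,1)], [(0,0), (0,0), (0,0)], [(1,0), (0,1), (0,0)], [(1,0), (1,1), (0,1)], [(1,1), (1,1), (0,1)]]" by (simp add: certt_def)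
lemma vt_17: "vt ! 17 = ((0,0),(-1,1),(0,1))" by (simp add: vt_def)
lemma nb_17: "nb ! 17 = [3, 7, 11]" by (simp add: nb_def)
lemma ngl_17: "ngl ! 17 = 8" by (simp add: ngl_def)
lemma fau_17: "fau ! 17 = [10, 3, 7]" by (simp add: fau_def)
lemma certt_17: "certt ! 17 = [[(1,1), (0,1), (1,1)], [(1,0), (0,0), (0,1)], [(1,1), (0,1), (1,0)], [(1,0), (0,0), (0,0)], [(0,1), (1,1), (1,1)], [(0,0), (1,0), (0,1)], [(0,1), (1,1), (1,0)], [(0,0), (1,0), (0,0)], [(1,1), (1,1), (1,1)], [(0,1), (1,0), (1,1)], [(1,1), (1,0), (0,1)], [(0,0), (0,0), (1,0)], [(0,1), (1,0), (0,0)], [(1,0), (1,1), (0,1)], [(1,1), (1,1), (0,1)], [(1,0), (0,1), (1,1)], [(0,1), (0,0), (1,0)], [(0,0), (0,0), (0,0)], [(1,0), (0,1), (0,0)], [(0,0), (0,1), (1,0)]]" by (simp add: certt_def)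
lemma vt_18: "vt ! 18 = ((-1,1),(0,1),(0,0))" by (simp add: vt_def)
lemma nb_18: "nb ! 18 = [6, 7, 12]" by (simp add: nb_def)
lemma ngl_18: "ngl ! 18 = 9" by (simp add: ngl_def)
lemma fau_18: "fau ! 18 = [7, 6, 11]" by (simp add: fau_def)
lemma certt_18: "certt ! 18 = [[(1,1), (0,1), (1,1)], [(0,1), (1,1), (1,1)], [(1,0), (0,0), (0,1)], [(0,0), (1,0), (0,1)], [(1,1), (0,1), (1,0)], [(0,1), (1,1), (1,0)], [(1,0), (0,0), (0,0)], [(0,0), (1,0), (0,0)], [(1,1), (1,0), (0,1)], [(1,1), (1,1), (1,1)], [(0,1), (1,0), (1,1)], [(1,0), (1,1), (0,1)], [(0,0), (0,0), (1,0)], [(0,1), (1,0), (0,0)], [(0,1), (0,0), (1,0)], [(1,1), (1,1), (0,1)], [(1,0), (0,1), (1,1)], [(0,0), (0,1), (1,0)], [(0,0), (0,0), (0,0)], [(1,0), (0,1), (0,0)]]" by (simp add: certt_def)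
lemma vt_19: "vt ! 19 = ((0,1),(0,0),(-1,1))" by (simp add: vt_def)
lemma nb_19: "nb ! 19 = [5, 7, 13]" by (simp add: nb_def)
lemma ngl_19: "ngl ! 19 = 10" by (simp add: ngl_def)
lemma fau_19: "fau ! 19 = [11, 8, 10]" by (simp add: fau_def)
lemma certt_19: "certt ! 19 = [[(1,1), (0,1), (1,1)], [(1,1), (0,1), (1,0)], [(0,1), (1,1), (1,1)], [(0,1), (1,1), (1,0)], [(1,0), (0,0), (0,1)], [(1,0), (0,0), (0,0)], [(0,0), (1,0), (0,1)], [(0,0), (1,0), (0,0)], [(0,1), (1,0), (1,1)], [(1,1), (1,0), (0,1)], [(1,1), (1,1), (1,1)], [(0,1), (1,0), (0,0)], [(1,0), (1,1), (0,1)], [(0,0), (0,0), (1,0)], [(1,0), (0,1), (1,1)], [(0,1), (0,0), (1,0)], [(1,1), (1,1), (0,1)], [(1,0), (0,1), (0,0)], [(0,0), (0,1), (1,0)], [(0,0), (0,0), (0,0)]]" by (simp add: certt_def)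
lemma fcs_0: "fcs ! 0 = [0, 1, 9, 10, 16]" by (simp add: fcs_def)
lemma ngfl_0: "ngfl ! 0 = 11" by (simp add: ngfl_def)
lemma fcs_1: "fcs ! 1 = [0, 2, 8, 10, 14]" by (simp add: fcs_def)
lemma ngfl_1: "ngfl ! 1 = 10" by (simp add: ngfl_def)
lemma fcs_1s: "fcs ! Suc 0 = [0, 2, 8, 10, 14]" by (simp add: fcs_def)
lemma ngfl_1s: "ngfl ! Suc 0 = 10" by (simp add: ngfl_def)
lemma fcs_2: "fcs ! 2 = [0, 4, 8, 9, 15]" by (simp add: fcs_def)
lemma ngfl_2: "ngfl ! 2 = 7" by (simp add: ngfl_def)
lemma fcs_3: "fcs ! 3 = [1, 3, 11, 16, 17]" by (simp add: fcs_def)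
lemma ngfl_3: "ngfl ! 3 = 9" by (simp add: ngfl_def)
lemma fcs_4: "fcs ! 4 = [1, 5, 9, 11, 15]" by (simp add: fcs_def)
lemma ngfl_4: "ngfl ! 4 = 6" by (simp add: ngfl_def)
lemma fcs_5: "fcs ! 5 = [2, 3, 10, 12, 16]" by (simp add: fcs_def)
lemma ngfl_5: "ngfl ! 5 = 8" by (simp add: ngfl_def)
lemma fcs_6: "fcs ! 6 = [2, 6, 12, 14, 18]" by (simp add: fcs_def)
lemma ngfl_6: "ngfl ! 6 = 4" by (simp add: ngfl_def)
lemma fcs_7: "fcs ! 7 = [3, 7, 12, 17, 18]" by (simp add: fcs_def)
lemma ngfl_7: "ngfl ! 7 = 2" by (simp add: ngfl_def)
lemma fcs_8: "fcs ! 8 = [4, 5, 13, 15, 19]" by (simp add: fcs_def)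
lemma ngfl_8: "ngfl ! 8 = 5" by (simp add: ngfl_def)
lemma fcs_9: "fcs ! 9 = [4, 6, 8, 13, 14]" by (simp add: fcs_def)
lemma ngfl_9: "ngfl ! 9 = 3" by (simp add: ngfl_def)
lemma fcs_10: "fcs ! 10 = [5, 7, 11, 17, 19]" by (simp add: fcs_def)
lemma ngfl_10: "ngfl ! 10 = 1" by (simp add: ngfl_def)
lemma fcs_11: "fcs ! 11 = [6, 7, 13, 18, 19]" by (simp add: fcs_def)
lemma ngfl_11: "ngfl ! 11 = 0" by (simp add: ngfl_def)
lemmas tabs = vt_0 nb_0 ngl_0 fau_0 certt_0 vt_1 nb_1 ngl_1 fau_1 certt_1 vt_1s nb_1s ngl_1s fau_1s certt_1s vt_2 nb_2 ngl_2 fau_2 certt_2 vt_3 nb_3 ngl_3 fau_3 certt_3 vt_4 nb_4 ngl_4 fau_4 certt_4 vt_5 nb_5 ngl_5 fau_5 certt_5 vt_6 nb_6 ngl_6 fau_6 certt_6 vt_7 nb_7 ngl_7 fau_7 certt_7 vt_8 nb_8 ngl_8 fau_8 certt_8 vt_9 nb_9 ngl_9 fau_9 certt_9 vt_10 nb_10 ngl_10 fau_10 certt_10 vt_11 nb_11 ngl_11 fau_11 certt_11 vt_12 nb_12 ngl_12 fau_12 certt_12 vt_13 nb_13 ngl_13 fau_13 certt_13 vt_14 nb_14 ngl_14 fau_14 certt_14 vt_15 nb_15 ngl_15 fau_15 certt_15 vt_16 nb_16 ngl_16 fau_16 certt_16 vt_17 nb_17 ngl_17 fau_17 certt_17 vt_18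 nb_18 ngl_18 fau_18 certt_18 vt_19 nb_19 ngl_19 fau_19 certt_19 fcs_0 ngfl_0 fcs_1 ngfl_1 fcs_1s ngfl_1s fcs_2 ngfl_2 fcs_3 ngfl_3 fcs_4 ngfl_4 fcs_5 ngfl_5 fcs_6 ngfl_6 fcs_7 ngfl_7 fcs_8 ngfl_8 fcs_9 ngfl_9 fcs_10 ngfl_10 fcs_11 ngfl_11
definition vx :: "nat \<Rightarrow> pt" where "vx i = vec3 (vt ! i)"

definition zne :: "zq \<Rightarrow> zq \<Rightarrow> bool" where "zne p q = (zpos (zsub p q) \<or> zpos (zsub q p))"
definition vne :: "zv \<Rightarrow> zv \<Rightarrow> bool" where
  "vne u v = (case u of (a,b,c) \<Rightarrow> case v of (d,e,f) \<Rightarrow> zne a d \<or> zne b e \<or> zne c f)"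

lemma zne_sound: "zne p q \<Longrightarrow> zr p \<noteq> zr q"
  unfolding zne_def using zpos_sound[of "zsub p q"] zpos_sound[of "zsub q p"] by (auto simp: zr_sub)

lemma vne_sound: "vne u v \<Longrightarrow> vec3 u \<noteq> vec3 v"
  apply (cases u; cases v)
  apply (auto simp: vne_def vec3_def vec_eq_iff forall_3 dest!: zne_sound)
  done

definition chk_inj :: bool where
  "chk_inj = (\<forall>i\<in>{..<20}. \<forall>j\<in>{..<20}. i \<noteq> j \<longrightarrow> vne (vt ! i) (vt ! j))"

lemma chk_inj: chk_inj
  by code_simp



lemma gphi_pos: "gphi > 0" unfolding gphi_def by (simp add: add_pos_nonneg)
lemma div_gphi: "x / gphi = x * (gphi - 1)"
proof -
  have "x * (gphi - 1) * gphi = x * (gphi * gphi) - x * gphi" by (simp add: algebra_simps)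
  also have "\<dots> = x" by (simp add: gphi_sq algebra_simps)
  finally have "x * (gphi - 1) * gphi = x" .
  thus ?thesis using gphi_pos by (simp add: field_simps)
qed

lemma vector3_eq: "(vector [a,b,c] :: real^3) = vector [d,e,f] \<longleftrightarrow> a = d \<and> b = e \<and> c = f"
  by (auto simp: vec_eq_iff forall_3)

lemma comp3: "{f a b c | a b c. a \<in> {-1, 1::real} \<and> b \<in> {-1, 1::real} \<and> c \<in> {-1, 1::real}} =
  {f (-1) (-1) (-1), f (-1) (-1) 1, f (-1) 1 (-1), f (-1) 1 1, f 1 (-1) (-1), f 1 (-1) 1, f 1 1 (-1), f 1 1 1}"
  by auto
lemma comp2: "{f s t | s t. s \<in> {-1, 1::real} \<and> t \<in> {-1, 1::real}} = {f (-1) (-1), f (-1) 1, f 1 (-1), f 1 1}"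
  by auto

lemma vx0: "vector [-1, -1, -1] = vx 0"
  by (simp add: vx_def vt_def vec3_def zr_def div_gphi vector3_eq algebra_simps)
lemma vx1: "vector [-1, -1, 1] = vx 1"
  by (simp add: vx_def vt_def vec3_def zr_def div_gphi vector3_eq algebra_simps)
lemma vx2: "vector [-1, 1, -1] = vx 2"
  by (simp add: vx_def vt_def vec3_def zr_def div_gphi vector3_eq algebra_simps)
lemma vx3: "vector [-1, 1, 1] = vx 3"
  by (simp add: vx_def vt_def vec3_def zr_def div_gphi vector3_eq algebra_simps)
lemma vx4: "vector [1, -1, -1] = vx 4"
  by (simp add: vx_def vt_def vec3_def zr_def div_gphi vector3_eq algebra_simps)
lemma vx5: "vector [1, -1, 1] = vx 5"
  by (simp add: vx_def vt_def vec3_def zr_def div_gphi vector3_eq algebra_simps)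
lemma vx6: "vector [1, 1, -1] = vx 6"
  by (simp add: vx_def vt_def vec3_def zr_def div_gphi vector3_eq algebra_simps)
lemma vx7: "vector [1, 1, 1] = vx 7"
  by (simp add: vx_def vt_def vec3_def zr_def div_gphi vector3_eq algebra_simps)
lemma vx8: "vector [0, (-1) / gphi, (-1) * gphi] = vx 8"
  by (simp add: vx_def vt_def vec3_def zr_def div_gphi vector3_eq algebra_simps)
lemma vx9: "vector [(-1) / gphi, (-1) * gphi, 0] = vx 9"
  by (simp add: vx_def vt_def vec3_def zr_def div_gphi vector3_eq algebra_simps)
lemma vx10: "vector [(-1) * gphi, 0, (-1) / gphi] = vx 10"
  by (simp add: vx_def vt_def vec3_def zr_def div_gphi vector3_eq algebra_simps)
lemma vx11: "vector [0, (-1) / gphi, 1 * gphi] = vx 11"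
  by (simp add: vx_def vt_def vec3_def zr_def div_gphi vector3_eq algebra_simps)
lemma vx12: "vector [(-1) / gphi, 1 * gphi, 0] = vx 12"
  by (simp add: vx_def vt_def vec3_def zr_def div_gphi vector3_eq algebra_simps)
lemma vx13: "vector [1 * gphi, 0, (-1) / gphi] = vx 13"
  by (simp add: vx_def vt_def vec3_def zr_def div_gphi vector3_eq algebra_simps)
lemma vx14: "vector [0, 1 / gphi, (-1) * gphi] = vx 14"
  by (simp add: vx_def vt_def vec3_def zr_def div_gphi vector3_eq algebra_simps)
lemma vx15: "vector [1 / gphi, (-1) * gphi, 0] = vx 15"
  by (simp add: vx_def vt_def vec3_def zr_def div_gphi vector3_eq algebra_simps)
lemma vx16: "vector [(-1) * gphi, 0, 1 / gphi] = vx 16"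
  by (simp add: vx_def vt_def vec3_def zr_def div_gphi vector3_eq algebra_simps)
lemma vx17: "vector [0, 1 / gphi, 1 * gphi] = vx 17"
  by (simp add: vx_def vt_def vec3_def zr_def div_gphi vector3_eq algebra_simps)
lemma vx18: "vector [1 / gphi, 1 * gphi, 0] = vx 18"
  by (simp add: vx_def vt_def vec3_def zr_def div_gphi vector3_eq algebra_simps)
lemma vx19: "vector [1 * gphi, 0, 1 / gphi] = vx 19"
  by (simp add: vx_def vt_def vec3_def zr_def div_gphi vector3_eq algebra_simps)

lemma V_eq: "dodeca_V = vx ` {..<20}"
proof -
  have "dodeca_V = {vx 0, vx 1, vx 2, vx 3, vx 4, vx 5, vx 6, vx 7, vx 8, vx 9, vx 10, vx 11, vx 12, vx 13, vx 14, vx 15, vx 16, vx 17, vx 18, vx 19}"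
    unfolding dodeca_V_def
    apply (subst comp3[where f="\<lambda>a b c. vector [a,b,c]"])
    apply (subst comp2[where f="\<lambda>s t. vector [0, s / gphi, t * gphi]"])
    apply (subst comp2[where f="\<lambda>s t. vector [s / gphi, t * gphi, 0]"])
    apply (subst comp2[where f="\<lambda>s t. vector [t * gphi, 0, s / gphi]"])
    apply (simp only: vx0 vx1 vx2 vx3 vx4 vx5 vx6 vx7 vx8 vx9 vx10 vx11 vx12 vx13 vx14 vx15 vx16 vx17 vx18 vx19)
    by auto
  also have "\<dots> = set (map vx [0..<20])"
    by (simp add: upt_rec numeral_eq_Suc)
  also have "\<dots> = vx ` {..<20}" by auto
  finally show ?thesis .
qed


lemma inj_vx: "inj_on vx {..<20}"
proof (rule inj_onI)
  fix i j assume "i \<in> {..<20::nat}" "j \<in> {..<20::nat}" "vx i = vx j"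
  thus "i = j" using chk_inj vne_sound unfolding chk_inj_def vx_def by blast
qed

lemma vx_eq_iff: "i < 20 \<Longrightarrow> j < 20 \<Longrightarrow> vx i = vx j \<longleftrightarrow> i = j"
  using inj_vx by (auto dest: inj_onD)

lemma less3: "k < (3::nat) \<longleftrightarrow> k = 0 \<or> k = 1 \<or> k = 2" by auto
lemma all20: "(\<forall>i<20::nat. P i) \<longleftrightarrow> P 0 \<and> P 1 \<and> P 2 \<and> P 3 \<and> P 4 \<and> P 5 \<and> P 6 \<and> P 7 \<and> P 8 \<and> P 9 \<and> P 10 \<and> P 11 \<and> P 12 \<and> P 13 \<and> P 14 \<and> P 15 \<and> P 16 \<and> P 17 \<and> P 18 \<and> P 19"
proof
  assume "\<forall>i<20::nat. P i" thus "P 0 \<and> P 1 \<and> P 2 \<and> P 3 \<and> P 4 \<and> P 5 \<and> P 6 \<and> P 7 \<and> P 8 \<and> P 9 \<and> P 10 \<and> P 11 \<and> P 12 \<and> P 13 \<and> P 14 \<and> P 15 \<and> P 16 \<and> P 17 \<and> P 18 \<and> P 19" by simp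
next
  assume h: "P 0 \<and> P 1 \<and> P 2 \<and> P 3 \<and> P 4 \<and> P 5 \<and> P 6 \<and> P 7 \<and> P 8 \<and> P 9 \<and> P 10 \<and> P 11 \<and> P 12 \<and> P 13 \<and> P 14 \<and> P 15 \<and> P 16 \<and> P 17 \<and> P 18 \<and> P 19"
  show "\<forall>i<20::nat. P i"
  proof (intro allI impI)
    fix i :: nat assume "i < 20"
    hence "i = 0 \<or> i = 1 \<or> i = 2 \<or> i = 3 \<or> i = 4 \<or> i = 5 \<or> i = 6 \<or> i = 7 \<or> i = 8 \<or> i = 9 \<or> i = 10 \<or> i = 11 \<or> i = 12 \<or> i = 13 \<or> i = 14 \<or> i = 15 \<or> i = 16 \<or> i = 17 \<or> i = 18 \<or> i = 19" by presburger
    thus "P i" using h by blast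
  qed
qed
lemma all3: "(\<forall>i<3::nat. P i) \<longleftrightarrow> P 0 \<and> P 1 \<and> P 2"
  by (auto simp: less3)



lemma zadd2: "zadd (a,b) (c,d) = (a+c, b+d)" by (simp add: zadd_def)
lemma zsub2: "zsub (a,b) (c,d) = (a-c, b-d)" by (simp add: zsub_def)
lemma zmul2: "zmul (a,b) (c,d) = (a*c+b*d, a*d+b*c+b*d)" by (simp add: zmul_def)
lemma vadd2: "vadd (a,b,c) (d,e,f) = (zadd a d, zadd b e, zadd c f)" by (simp add: vadd_def)
lemma vsub2: "vsub (a,b,c) (d,e,f) = (zsub a d, zsub b e, zsub c f)" by (simp add: vsub_def)
lemma vsm2: "vsm k (d,e,f) = (zmul k d, zmul k e, zmul k f)" by (simp add: vsm_def)
lemma vdot2: "vdot (a,b,c) (d,e,f) = zadd (zmul a d) (zadd (zmul b e) (zmul c f))" by (simp add: vdot_def)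
lemma vcross2: "vcross (a,b,c) (d,e,f) = (zsub (zmul b f) (zmul c e), zsub (zmul c d) (zmul a f), zsub (zmul a e) (zmul b d))"
  by (simp add: vcross_def)
lemma zpos2': "zpos (a,b) = zpos2 (2*a+b) b" by (simp add: zpos_def)

definition dd :: "nat \<Rightarrow> nat \<Rightarrow> nat \<Rightarrow> zv" where "dd u v k = vsub (vt ! (nb ! u ! k)) (vt ! u)"
definition ccomb :: "nat \<Rightarrow> nat \<Rightarrow> zv" where
  "ccomb u v = vadd (vsm (certt!u!v!0) (dd u v 0)) (vadd (vsm (certt!u!v!1) (dd u v 1)) (vsm (certt!u!v!2) (dd u v 2)))"
definition supp :: "nat \<Rightarrow> nat \<Rightarrow> nat list" where
  "supp u v = map (\<lambda>k. nb!u!k) (filter (\<lambda>k. certt!u!v!k \<noteq> (0,0)) [0,1,2])"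
definition miss :: "nat \<Rightarrow> nat \<Rightarrow> nat" where
  "miss u v = (if certt!u!v!0 = (0,0) then 0 else if certt!u!v!1 = (0,0) then 1 else 2)"

lemmas evs = ccomb_def dd_def supp_def miss_def zadd2 zsub2 zmul2 vadd2 vsub2 vsm2 vdot2 vcross2 zpos2' zpos2_def tabs insert_commute

definition chk_row :: "nat \<Rightarrow> bool" where
  "chk_row u = (length (nb!u) = 3 \<and> (\<forall>k<3. nb!u!k < 20 \<and> fau!u!k < 12) \<and> u \<notin> set (nb!u) \<and> distinct (nb!u) \<and>
      (\<forall>v<20. u \<noteq> v \<longrightarrow> vsub (vt!v) (vt!u) = ccomb u v \<and>
          (\<forall>k<3. certt!u!v!k = (0,0) \<or> zpos (certt!u!v!k)) \<and>
          supp u v \<noteq> [] \<and> (set (supp u v) \<subseteq> {v} \<longrightarrow> v \<in> set (nb!u)) \<and>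
          (length (supp u v) = 1 \<longrightarrow> v \<in> set (nb!u)) \<and>
          (length (supp u v) = 3 \<longrightarrow> set (supp u v) = set (nb!u)) \<and>
          (length (supp u v) = 2 \<longrightarrow> miss u v < 3 \<and>
              set (supp u v) = {nb!u!((miss u v + 1) mod 3), nb!u!((miss u v + 2) mod 3)}) \<and>
          (\<forall>k<3. v \<notin> set (fcs!(fau!u!k)) \<longrightarrow> nb!u!k \<in> set (supp u v))))"

lemma chk_row_0: "chk_row 0"
  by (simp only: chk_row_def all20 all3 tabs) (simp add: evs)
lemma chk_row_1: "chk_row 1"
  by (simp only: chk_row_def all20 all3 tabs) (simp add: evs)
lemma chk_row_2: "chk_row 2"
  by (simp only: chk_row_def all20 all3 tabs) (simp add: evs)
lemma chk_row_3: "chk_row 3"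
  by (simp only: chk_row_def all20 all3 tabs) (simp add: evs)
lemma chk_row_4: "chk_row 4"
  by (simp only: chk_row_def all20 all3 tabs) (simp add: evs)
lemma chk_row_5: "chk_row 5"
  by (simp only: chk_row_def all20 all3 tabs) (simp add: evs)
lemma chk_row_6: "chk_row 6"
  by (simp only: chk_row_def all20 all3 tabs) (simp add: evs)
lemma chk_row_7: "chk_row 7"
  by (simp only: chk_row_def all20 all3 tabs) (simp add: evs)
lemma chk_row_8: "chk_row 8"
  by (simp only: chk_row_def all20 all3 tabs) (simp add: evs)
lemma chk_row_9: "chk_row 9"
  by (simp only: chk_row_def all20 all3 tabs) (simp add: evs)
lemma chk_row_10: "chk_row 10"
  by (simp only: chk_row_def all20 all3 tabs) (simp add: evs)
lemma chk_row_11: "chk_row 11"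
  by (simp only: chk_row_def all20 all3 tabs) (simp add: evs)
lemma chk_row_12: "chk_row 12"
  by (simp only: chk_row_def all20 all3 tabs) (simp add: evs)
lemma chk_row_13: "chk_row 13"
  by (simp only: chk_row_def all20 all3 tabs) (simp add: evs)
lemma chk_row_14: "chk_row 14"
  by (simp only: chk_row_def all20 all3 tabs) (simp add: evs)
lemma chk_row_15: "chk_row 15"
  by (simp only: chk_row_def all20 all3 tabs) (simp add: evs)
lemma chk_row_16: "chk_row 16"
  by (simp only: chk_row_def all20 all3 tabs) (simp add: evs)
lemma chk_row_17: "chk_row 17"
  by (simp only: chk_row_def all20 all3 tabs) (simp add: evs)
lemma chk_row_18: "chk_row 18"
  by (simp only: chk_row_def all20 all3 tabs) (simp add: evs)
lemma chk_row_19: "chk_row 19"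
  by (simp only: chk_row_def all20 all3 tabs) (simp add: evs)


definition chk_fc :: "nat \<Rightarrow> bool" where
  "chk_fc u = ((\<forall>k<3. u \<in> set (fcs!(fau!u!k)) \<and> nb!u!((k+1) mod 3) \<noteq> nb!u!((k+2) mod 3) \<and>
       set (fcs!(fau!u!k)) \<subseteq> {u, nb!u!((k+1) mod 3), nb!u!((k+2) mod 3)} \<union> set (supp (nb!u!((k+1) mod 3)) (nb!u!((k+2) mod 3)))
          \<union> set (supp (nb!u!((k+2) mod 3)) (nb!u!((k+1) mod 3)))) \<and>
     (\<forall>a\<in>set (nb!u). \<forall>b\<in>set (nb!u). b \<notin> set (nb!a)))"

lemma chk_fc_0: "chk_fc 0"
  by (simp only: chk_fc_def all3 tabs) (simp add: evs)
lemma chk_fc_1: "chk_fc 1"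
  by (simp only: chk_fc_def all3 tabs) (simp add: evs)
lemma chk_fc_2: "chk_fc 2"
  by (simp only: chk_fc_def all3 tabs) (simp add: evs)
lemma chk_fc_3: "chk_fc 3"
  by (simp only: chk_fc_def all3 tabs) (simp add: evs)
lemma chk_fc_4: "chk_fc 4"
  by (simp only: chk_fc_def all3 tabs) (simp add: evs)
lemma chk_fc_5: "chk_fc 5"
  by (simp only: chk_fc_def all3 tabs) (simp add: evs)
lemma chk_fc_6: "chk_fc 6"
  by (simp only: chk_fc_def all3 tabs) (simp add: evs)
lemma chk_fc_7: "chk_fc 7"
  by (simp only: chk_fc_def all3 tabs) (simp add: evs)
lemma chk_fc_8: "chk_fc 8"
  by (simp only: chk_fc_def all3 tabs) (simp add: evs)
lemma chk_fc_9: "chk_fc 9"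
  by (simp only: chk_fc_def all3 tabs) (simp add: evs)
lemma chk_fc_10: "chk_fc 10"
  by (simp only: chk_fc_def all3 tabs) (simp add: evs)
lemma chk_fc_11: "chk_fc 11"
  by (simp only: chk_fc_def all3 tabs) (simp add: evs)
lemma chk_fc_12: "chk_fc 12"
  by (simp only: chk_fc_def all3 tabs) (simp add: evs)
lemma chk_fc_13: "chk_fc 13"
  by (simp only: chk_fc_def all3 tabs) (simp add: evs)
lemma chk_fc_14: "chk_fc 14"
  by (simp only: chk_fc_def all3 tabs) (simp add: evs)
lemma chk_fc_15: "chk_fc 15"
  by (simp only: chk_fc_def all3 tabs) (simp add: evs)
lemma chk_fc_16: "chk_fc 16"
  by (simp only: chk_fc_def all3 tabs) (simp add: evs)
lemma chk_fc_17: "chk_fc 17"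
  by (simp only: chk_fc_def all3 tabs) (simp add: evs)
lemma chk_fc_18: "chk_fc 18"
  by (simp only: chk_fc_def all3 tabs) (simp add: evs)
lemma chk_fc_19: "chk_fc 19"
  by (simp only: chk_fc_def all3 tabs) (simp add: evs)

lemma chk_row: "u < 20 \<Longrightarrow> chk_row u"
proof -
  assume "u < 20"
  hence "u = 0 \<or> u = 1 \<or> u = 2 \<or> u = 3 \<or> u = 4 \<or> u = 5 \<or> u = 6 \<or> u = 7 \<or> u = 8 \<or> u = 9 \<or> u = 10 \<or> u = 11 \<or> u = 12 \<or> u = 13 \<or> u = 14 \<or> u = 15 \<or> u = 16 \<or> u = 17 \<or> u = 18 \<or> u = 19" by presburger
  thus ?thesis by (elim disjE) (simp_all only: chk_row_0 chk_row_1 chk_row_2 chk_row_3 chk_row_4 chk_row_5 chk_row_6 chk_row_7 chk_row_8 chk_row_9 chk_row_10 chk_row_11 chk_row_12 chk_row_13 chk_row_14 chk_row_15 chk_row_16 chk_row_17 chk_row_18 chk_row_19)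
qed
lemma chk_fc: "u < 20 \<Longrightarrow> chk_fc u"
proof -
  assume "u < 20"
  hence "u = 0 \<or> u = 1 \<or> u = 2 \<or> u = 3 \<or> u = 4 \<or> u = 5 \<or> u = 6 \<or> u = 7 \<or> u = 8 \<or> u = 9 \<or> u = 10 \<or> u = 11 \<or> u = 12 \<or> u = 13 \<or> u = 14 \<or> u = 15 \<or> u = 16 \<or> u = 17 \<or> u = 18 \<or> u = 19" by presburger
  thus ?thesis by (elim disjE) (simp_all only: chk_fc_0 chk_fc_1 chk_fc_2 chk_fc_3 chk_fc_4 chk_fc_5 chk_fc_6 chk_fc_7 chk_fc_8 chk_fc_9 chk_fc_10 chk_fc_11 chk_fc_12 chk_fc_13 chk_fc_14 chk_fc_15 chk_fc_16 chk_fc_17 chk_fc_18 chk_fc_19)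
qed

lemma nb_facts: assumes "u < 20" shows "length (nb!u) = 3" "\<And>k. k < 3 \<Longrightarrow> nb!u!k < 20" "u \<notin> set (nb!u)"
  "distinct (nb!u)" "\<And>k. k < 3 \<Longrightarrow> fau!u!k < 12"
  using chk_row[OF assms] unfolding chk_row_def by auto

lemma set_nb: "u < 20 \<Longrightarrow> set (nb!u) = {nb!u!0, nb!u!1, nb!u!2}"
  using nb_facts(1)[of u] by (auto simp: set_conv_nth less3)

lemma nb_lt: "u < 20 \<Longrightarrow> x \<in> set (nb!u) \<Longrightarrow> x < 20"
  using set_nb nb_facts(2) by auto

lemma row_facts:
  assumes "u < 20" "v < 20" "u \<noteq> v"
  shows "vsub (vt!v) (vt!u) = ccomb u v"
    "\<And>k. k < 3 \<Longrightarrow> certt!u!v!k = (0,0) \<or> zpos (certt!u!v!k)"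
    "supp u v \<noteq> []" "set (supp u v) \<subseteq> {v} \<Longrightarrow> v \<in> set (nb!u)"
    "length (supp u v) = 1 \<Longrightarrow> v \<in> set (nb!u)"
    "length (supp u v) = 3 \<Longrightarrow> set (supp u v) = set (nb!u)"
    "length (supp u v) = 2 \<Longrightarrow> miss u v < 3 \<and>
              set (supp u v) = {nb!u!((miss u v + 1) mod 3), nb!u!((miss u v + 2) mod 3)}"
    "\<And>k. k<3 \<Longrightarrow> v \<notin> set (fcs!(fau!u!k)) \<Longrightarrow> nb!u!k \<in> set (supp u v)"
  using chk_row[OF assms(1)] assms(2,3) unfolding chk_row_def by auto

lemma cert_real:
  assumes "u < 20" "v < 20" "u \<noteq> v"
  shows "vx v - vx u = zr (certt!u!v!0) *\<^sub>R (vx (nb!u!0) - vx u) + zr (certt!u!v!1) *\<^sub>R (vx (nb!u!1) - vx u)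
           + zr (certt!u!v!2) *\<^sub>R (vx (nb!u!2) - vx u)"
proof -
  have "vec3 (vsub (vt!v) (vt!u)) = vec3 (ccomb u v)" using row_facts(1)[OF assms] by simp
  thus ?thesis by (simp add: ccomb_def vec3_add vec3_sm vec3_sub dd_def vx_def add.assoc)
qed

lemma cert_nonneg: "u < 20 \<Longrightarrow> v < 20 \<Longrightarrow> u \<noteq> v \<Longrightarrow> k < 3 \<Longrightarrow> zr (certt!u!v!k) \<ge> 0"
  using row_facts(2)[of u v k] zpos_sound[of "certt!u!v!k"] by (auto simp: zr_def)

lemma cert_pos: "u < 20 \<Longrightarrow> v < 20 \<Longrightarrow> u \<noteq> v \<Longrightarrow> k < 3 \<Longrightarrow> certt!u!v!k \<noteq> (0,0) \<Longrightarrow> zr (certt!u!v!k) > 0"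
  using row_facts(2)[of u v k] zpos_sound[of "certt!u!v!k"] by auto

lemma set_supp: "set (supp u v) = {nb!u!k | k. k < 3 \<and> certt!u!v!k \<noteq> (0,0)}"
proof (intro equalityI subsetI)
  fix x assume "x \<in> set (supp u v)"
  then obtain k where k: "k \<in> {0,1,2}" "certt!u!v!k \<noteq> (0,0)" "x = nb!u!k"
    unfolding supp_def set_map set_filter list.set(1) list.set(2) by blast
  hence "k < 3" by auto
  with k show "x \<in> {nb!u!k | k. k < 3 \<and> certt!u!v!k \<noteq> (0,0)}" by blast
next
  fix x assume "x \<in> {nb!u!k | k. k < 3 \<and> certt!u!v!k \<noteq> (0,0)}"
  then obtain k where "k < 3" "x = nb!u!k" "certt!u!v!k \<noteq> (0,0)" by blast
  thus "x \<in> set (supp u v)" unfolding supp_def set_map set_filter list.set(1) list.set(2) less3 by blast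
qed

lemma supp_sub_nb: "u < 20 \<Longrightarrow> set (supp u v) \<subseteq> set (nb!u)"
  unfolding set_supp set_nb by (auto simp: less3)

lemma length_supp: "length (supp u v) \<le> 3"
  unfolding supp_def by (simp add: length_filter_le[of _ "[0,1,2]", simplified])

lemma E1:
  assumes le: "\<forall>i<20. n \<bullet> vx i \<le> c" and u: "u < 20" "n \<bullet> vx u = c" and v: "v < 20" "n \<bullet> vx v = c"
    and uv: "u \<noteq> v" and x: "x \<in> set (supp u v)"
  shows "x < 20 \<and> n \<bullet> vx x = c"
proof -
  obtain k where k: "k < 3" "x = nb!u!k" "certt!u!v!k \<noteq> (0,0)" using x set_supp by auto
  define t where "t j = zr (certt!u!v!j) * (n \<bullet> vx (nb!u!j) - c)" for j
  have tle: "t j \<le> 0" if "j < 3" for j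
  proof -
    have "n \<bullet> vx (nb!u!j) \<le> c" using le nb_facts(2)[OF u(1) that] by auto
    thus ?thesis unfolding t_def using cert_nonneg[OF u(1) v(1) uv that]
      by (simp add: mult_nonneg_nonpos)
  qed
  have "n \<bullet> (vx v - vx u) = t 0 + t 1 + t 2"
    unfolding cert_real[OF u(1) v(1) uv] t_def by (simp add: inner_add_right inner_diff_right u(2))
  hence "t 0 + t 1 + t 2 = 0" by (simp add: inner_diff_right u v)
  moreover have "t 0 \<le> 0" "t 1 \<le> 0" "t 2 \<le> 0" using tle by auto
  ultimately have "t 0 = 0 \<and> t 1 = 0 \<and> t 2 = 0" by linarith
  hence "t k = 0" using k(1) unfolding less3 by auto
  hence "n \<bullet> vx x = c" using cert_pos[OF u(1) v(1) uv k(1) k(3)] k(2) unfolding t_def by simp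
  thus ?thesis using nb_facts(2)[OF u(1) k(1)] k(2) by simp
qed

lemma vx_small: "vx 0 = vector [-1,-1,-1]" "vx 1 = vector [-1,-1,1]" "vx 2 = vector [-1,1,-1]" "vx 7 = vector [1,1,1]"
  by (simp_all add: vx_def vt_def vec3_def zr_def)

lemma E2:
  assumes le: "\<forall>i<20. n \<bullet> vx i \<le> c" and n0: "n \<noteq> 0" and u: "u < 20" "n \<bullet> vx u = c"
  shows "\<not> (\<forall>x\<in>set (nb!u). n \<bullet> vx x = c)"
proof
  assume all: "\<forall>x\<in>set (nb!u). n \<bullet> vx x = c"
  have allv: "n \<bullet> vx v = c" if "v < 20" for v
  proof (cases "v = u")
    case True thus ?thesis using u by simp
  next
    case False
    have "n \<bullet> (vx v - vx u) = 0"
      unfolding cert_real[OF u(1) that False[symmetric]]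
      using all set_nb[OF u(1)] by (simp add: inner_add_right inner_diff_right u(2))
    thus ?thesis by (simp add: inner_diff_right u(2))
  qed
  have "n \<bullet> vx 0 = c" "n \<bullet> vx 1 = c" "n \<bullet> vx 2 = c" "n \<bullet> vx 7 = c" using allv by auto
  hence "n$1 = 0 \<and> n$2 = 0 \<and> n$3 = 0"
    unfolding vx_small by (simp add: inner_vec_def sum_3)
  thus False using n0 by (simp add: vec_eq_iff forall_3)
qed

lemma nb_set3: "u < 20 \<Longrightarrow> k < 3 \<Longrightarrow> set (nb!u) = {nb!u!k, nb!u!((k+1) mod 3), nb!u!((k+2) mod 3)}"
  unfolding set_nb less3 by (auto simp: numeral_2_eq_2)

lemma comb2:
  assumes T: "T \<subseteq> {..<20}" and H1': "\<forall>u\<in>T. \<forall>v\<in>T. u\<noteq>v \<longrightarrow> set (supp u v) \<subseteq> T"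
   and H2': "\<forall>u\<in>T. \<not> set (nb!u) \<subseteq> T" and x: "x\<in>T" "y\<in>T" "x\<noteq>y"
  shows "y \<in> set (nb!x) \<or> (\<exists>j<12. T = set (fcs!j))"
proof -
  have H1: "\<And>u v. u\<in>T \<Longrightarrow> v\<in>T \<Longrightarrow> u\<noteq>v \<Longrightarrow> set (supp u v) \<subseteq> T" using H1' by blast
  have H2: "\<And>u. u\<in>T \<Longrightarrow> \<not> set (nb!u) \<subseteq> T" using H2' by blast
  have x20: "x < 20" "y < 20" using T x by auto
  have ne: "supp x y \<noteq> []" using row_facts(3)[OF x20 x(3)] .
  have le3: "length (supp x y) \<le> 3" by (rule length_supp)
  have l0: "0 < length (supp x y)" using ne by simp
  have "length (supp x y) = 1 \<or> length (supp x y) = 2 \<or> length (supp x y) = 3" using l0 le3 by presburger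
  then consider "length (supp x y) = 1" | "length (supp x y) = 2" | "length (supp x y) = 3" by blast
  then show ?thesis
  proof cases
    case 1 thus ?thesis using row_facts(5)[OF x20 x(3)] by simp
  next
    case 3
    hence "set (nb!x) \<subseteq> T" using row_facts(6)[OF x20 x(3)] H1[OF x] by simp
    thus ?thesis using H2[OF x(1)] by simp
  next
    case 2
    define k0 where "k0 = miss x y"
    define a where "a = nb!x!((k0+1) mod 3)"
    define b where "b = nb!x!((k0+2) mod 3)"
    define j where "j = fau!x!k0"
    have k0: "k0 < 3" and sab: "set (supp x y) = {a, b}"
      using row_facts(7)[OF x20 x(3) 2] unfolding k0_def a_def b_def by auto
    have abT: "a \<in> T" "b \<in> T" using H1[OF x] sab by auto
    have j12: "j < 12" using nb_facts(5)[OF x20(1) k0] unfolding j_def .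
    have fc: "x \<in> set (fcs!j)" "a \<noteq> b" "set (fcs!j) \<subseteq> {x, a, b} \<union> set (supp a b) \<union> set (supp b a)"
      using chk_fc[OF x20(1)] k0 unfolding chk_fc_def a_def b_def j_def by auto
    have sub1: "set (fcs!j) \<subseteq> T"
      using fc(3) H1[OF abT fc(2)] H1[OF abT(2,1) fc(2)[symmetric]] abT x(1) by blast
    have sub2: "T \<subseteq> set (fcs!j)"
    proof
      fix z assume z: "z \<in> T"
      show "z \<in> set (fcs!j)"
      proof (rule ccontr)
        assume nz: "z \<notin> set (fcs!j)"
        hence zx: "x \<noteq> z" using fc(1) by auto
        have z20: "z < 20" using T z by auto
        have "nb!x!k0 \<in> set (supp x z)" using row_facts(8)[OF x20(1) z20 zx k0] nz unfolding j_def by simp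
        hence "nb!x!k0 \<in> T" using H1[OF x(1) z zx] by auto
        hence "set (nb!x) \<subseteq> T" using nb_set3[OF x20(1) k0] abT unfolding a_def b_def by auto
        thus False using H2[OF x(1)] by simp
      qed
    qed
    show ?thesis using sub1 sub2 j12 by blast
  qed
qed

lemma three_elems:
  assumes "finite T" "3 \<le> card T"
  obtains x y z where "x \<in> T" "y \<in> T" "z \<in> T" "x \<noteq> y" "x \<noteq> z" "y \<noteq> z"
proof -
  obtain x where x: "x \<in> T" using assms by fastforce
  have "2 \<le> card (T - {x})" using assms x by (simp add: card_Diff_singleton)
  hence "T - {x} \<noteq> {}" by (metis card.empty not_numeral_le_zero)
  then obtain y where y: "y \<in> T - {x}" by blast
  have "1 \<le> card (T - {x} - {y})" using assms x y by (simp add: card_Diff_singleton)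
  hence "T - {x} - {y} \<noteq> {}" by (metis card.empty not_one_le_zero)
  then obtain z where z: "z \<in> T - {x} - {y}" by blast
  show ?thesis using that x y z by blast
qed

lemma comb3:
  assumes T: "T \<subseteq> {..<20}" and H1': "\<forall>u\<in>T. \<forall>v\<in>T. u\<noteq>v \<longrightarrow> set (supp u v) \<subseteq> T"
   and H2': "\<forall>u\<in>T. \<not> set (nb!u) \<subseteq> T" and c: "3 \<le> card T"
  shows "\<exists>j<12. T = set (fcs!j)"
proof -
  have fin: "finite T" using T finite_subset by blast
  obtain x y z where xyz: "x \<in> T" "y \<in> T" "z \<in> T" "x \<noteq> y" "x \<noteq> z" "y \<noteq> z"
    using three_elems[OF fin c] by blast
  note C = comb2[OF T H1' H2']
  show ?thesis
  proof (rule ccontr)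
    assume nf: "\<not> ?thesis"
    have "y \<in> set (nb!x)" "z \<in> set (nb!x)" "z \<in> set (nb!y)"
      using C[OF xyz(1,2,4)] C[OF xyz(1,3,5)] C[OF xyz(2,3,6)] nf by auto
    moreover have "x < 20" using T xyz by auto
    ultimately show False using chk_fc unfolding chk_fc_def by blast
  qed
qed


definition chk_edge :: "nat \<Rightarrow> bool" where
  "chk_edge i = (\<forall>k<3. vdot (vadd (vt!i) (vt!(nb!i!k))) (vt!(nb!i!k)) = vdot (vadd (vt!i) (vt!(nb!i!k))) (vt!i) \<and>
     ngl!i < 20 \<and> ngl!i \<noteq> i \<and> ngl!i \<noteq> nb!i!k \<and>
     (\<forall>m<20. m = i \<or> m = nb!i!k \<or> zpos (zsub (vdot (vadd (vt!i) (vt!(nb!i!k))) (vt!i)) (vdot (vadd (vt!i) (vt!(nb!i!k))) (vt!m)))))"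

definition fsum :: "nat \<Rightarrow> zv" where
  "fsum j = vadd (vt!(fcs!j!0)) (vadd (vt!(fcs!j!1)) (vadd (vt!(fcs!j!2)) (vadd (vt!(fcs!j!3)) (vt!(fcs!j!4)))))"

definition chk_face :: "nat \<Rightarrow> bool" where
  "chk_face j = (length (fcs!j) = 5 \<and> distinct (fcs!j) \<and> (\<forall>m\<in>set (fcs!j). m < 20) \<and>
     ngl!(fcs!j!0) < 20 \<and> ngl!(fcs!j!0) \<notin> set (fcs!j) \<and>
     (\<forall>m<20. (m \<in> set (fcs!j) \<longrightarrow> vdot (fsum j) (vt!m) = vdot (fsum j) (vt!(fcs!j!0))) \<and>
        (m \<notin> set (fcs!j) \<longrightarrow> zpos (zsub (vdot (fsum j) (vt!(fcs!j!0))) (vdot (fsum j) (vt!m))))))"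

lemma chk_edge_0: "chk_edge 0"
  by (simp only: chk_edge_def all20 all3 tabs) (simp add: evs)
lemma chk_edge_1: "chk_edge 1"
  by (simp only: chk_edge_def all20 all3 tabs) (simp add: evs)
lemma chk_edge_2: "chk_edge 2"
  by (simp only: chk_edge_def all20 all3 tabs) (simp add: evs)
lemma chk_edge_3: "chk_edge 3"
  by (simp only: chk_edge_def all20 all3 tabs) (simp add: evs)
lemma chk_edge_4: "chk_edge 4"
  by (simp only: chk_edge_def all20 all3 tabs) (simp add: evs)
lemma chk_edge_5: "chk_edge 5"
  by (simp only: chk_edge_def all20 all3 tabs) (simp add: evs)
lemma chk_edge_6: "chk_edge 6"
  by (simp only: chk_edge_def all20 all3 tabs) (simp add: evs)
lemma chk_edge_7: "chk_edge 7"
  by (simp only: chk_edge_def all20 all3 tabs) (simp add: evs)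
lemma chk_edge_8: "chk_edge 8"
  by (simp only: chk_edge_def all20 all3 tabs) (simp add: evs)
lemma chk_edge_9: "chk_edge 9"
  by (simp only: chk_edge_def all20 all3 tabs) (simp add: evs)
lemma chk_edge_10: "chk_edge 10"
  by (simp only: chk_edge_def all20 all3 tabs) (simp add: evs)
lemma chk_edge_11: "chk_edge 11"
  by (simp only: chk_edge_def all20 all3 tabs) (simp add: evs)
lemma chk_edge_12: "chk_edge 12"
  by (simp only: chk_edge_def all20 all3 tabs) (simp add: evs)
lemma chk_edge_13: "chk_edge 13"
  by (simp only: chk_edge_def all20 all3 tabs) (simp add: evs)
lemma chk_edge_14: "chk_edge 14"
  by (simp only: chk_edge_def all20 all3 tabs) (simp add: evs)
lemma chk_edge_15: "chk_edge 15"
  by (simp only: chk_edge_def all20 all3 tabs) (simp add: evs)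
lemma chk_edge_16: "chk_edge 16"
  by (simp only: chk_edge_def all20 all3 tabs) (simp add: evs)
lemma chk_edge_17: "chk_edge 17"
  by (simp only: chk_edge_def all20 all3 tabs) (simp add: evs)
lemma chk_edge_18: "chk_edge 18"
  by (simp only: chk_edge_def all20 all3 tabs) (simp add: evs)
lemma chk_edge_19: "chk_edge 19"
  by (simp only: chk_edge_def all20 all3 tabs) (simp add: evs)
lemma chk_face_0: "chk_face 0"
  by (simp only: chk_face_def fsum_def all20 tabs) (simp add: evs)
lemma chk_face_1: "chk_face 1"
  by (simp only: chk_face_def fsum_def all20 tabs) (simp add: evs)
lemma chk_face_2: "chk_face 2"
  by (simp only: chk_face_def fsum_def all20 tabs) (simp add: evs)
lemma chk_face_3: "chk_face 3"
  by (simp only: chk_face_def fsum_def all20 tabs) (simp add: evs)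
lemma chk_face_4: "chk_face 4"
  by (simp only: chk_face_def fsum_def all20 tabs) (simp add: evs)
lemma chk_face_5: "chk_face 5"
  by (simp only: chk_face_def fsum_def all20 tabs) (simp add: evs)
lemma chk_face_6: "chk_face 6"
  by (simp only: chk_face_def fsum_def all20 tabs) (simp add: evs)
lemma chk_face_7: "chk_face 7"
  by (simp only: chk_face_def fsum_def all20 tabs) (simp add: evs)
lemma chk_face_8: "chk_face 8"
  by (simp only: chk_face_def fsum_def all20 tabs) (simp add: evs)
lemma chk_face_9: "chk_face 9"
  by (simp only: chk_face_def fsum_def all20 tabs) (simp add: evs)
lemma chk_face_10: "chk_face 10"
  by (simp only: chk_face_def fsum_def all20 tabs) (simp add: evs)
lemma chk_face_11: "chk_face 11"
  by (simp only: chk_face_def fsum_def all20 tabs) (simp add: evs)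

lemma chk_edge: "u < 20 \<Longrightarrow> chk_edge u"
proof -
  assume "u < 20"
  hence "u = 0 \<or> u = 1 \<or> u = 2 \<or> u = 3 \<or> u = 4 \<or> u = 5 \<or> u = 6 \<or> u = 7 \<or> u = 8 \<or> u = 9 \<or> u = 10 \<or> u = 11 \<or> u = 12 \<or> u = 13 \<or> u = 14 \<or> u = 15 \<or> u = 16 \<or> u = 17 \<or> u = 18 \<or> u = 19" by presburger
  thus ?thesis by (elim disjE) (simp_all only: chk_edge_0 chk_edge_1 chk_edge_2 chk_edge_3 chk_edge_4 chk_edge_5 chk_edge_6 chk_edge_7 chk_edge_8 chk_edge_9 chk_edge_10 chk_edge_11 chk_edge_12 chk_edge_13 chk_edge_14 chk_edge_15 chk_edge_16 chk_edge_17 chk_edge_18 chk_edge_19)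
qed

lemma chk_face: "u < 12 \<Longrightarrow> chk_face u"
proof -
  assume "u < 12"
  hence "u = 0 \<or> u = 1 \<or> u = 2 \<or> u = 3 \<or> u = 4 \<or> u = 5 \<or> u = 6 \<or> u = 7 \<or> u = 8 \<or> u = 9 \<or> u = 10 \<or> u = 11" by presburger
  thus ?thesis by (elim disjE) (simp_all only: chk_face_0 chk_face_1 chk_face_2 chk_face_3 chk_face_4 chk_face_5 chk_face_6 chk_face_7 chk_face_8 chk_face_9 chk_face_10 chk_face_11)
qed

lemma vx_in_V: "i < 20 \<Longrightarrow> vx i \<in> dodeca_V" by (simp add: V_eq)

lemma exposedD:
  assumes "exposed_face dodeca_V F"
  obtains n c where "n \<noteq> 0" "\<forall>i<20. n \<bullet> vx i \<le> c" "F = vx ` {i. i < 20 \<and> n \<bullet> vx i = c}"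
proof -
  obtain n c where nc: "n \<noteq> 0" "\<forall>v\<in>dodeca_V. n \<bullet> v \<le> c" "F = {v\<in>dodeca_V. n \<bullet> v = c}"
    using assms unfolding exposed_face_def by blast
  have "F = vx ` {i. i < 20 \<and> n \<bullet> vx i = c}" unfolding nc(3) V_eq by auto
  moreover have "\<forall>i<20. n \<bullet> vx i \<le> c" using nc(2) vx_in_V by auto
  ultimately show ?thesis using that nc(1) by blast
qed

lemma HT:
  assumes n0: "n \<noteq> 0" and le: "\<forall>i<20. n \<bullet> vx i \<le> c" and T: "T = {i. i < 20 \<and> n \<bullet> vx i = c}"
  shows "\<forall>u\<in>T. \<forall>v\<in>T. u\<noteq>v \<longrightarrow> set (supp u v) \<subseteq> T" "\<forall>u\<in>T. \<not> set (nb!u) \<subseteq> T"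
proof -
  show "\<forall>u\<in>T. \<forall>v\<in>T. u\<noteq>v \<longrightarrow> set (supp u v) \<subseteq> T"
    using E1[OF le] unfolding T by blast
  show "\<forall>u\<in>T. \<not> set (nb!u) \<subseteq> T"
  proof (intro ballI notI)
    fix u assume u: "u \<in> T" and s: "set (nb!u) \<subseteq> T"
    have "\<forall>x\<in>set (nb!u). n \<bullet> vx x = c" using s unfolding T by auto
    thus False using E2[OF le n0] u unfolding T by auto
  qed
qed

lemma faces_sub:
  assumes "F \<in> dodeca_faces" shows "\<exists>j<12. F = vx ` set (fcs!j)"
proof -
  have ex: "exposed_face dodeca_V F" and c3: "card F \<ge> 3" using assms unfolding dodeca_faces_def by auto
  obtain n c where nc: "n \<noteq> 0" "\<forall>i<20. n \<bullet> vx i \<le> c" "F = vx ` {i. i < 20 \<and> n \<bullet> vx i = c}"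
    using exposedD[OF ex] by blast
  define T where "T = {i. i < 20 \<and> n \<bullet> vx i = c}"
  have Tsub: "T \<subseteq> {..<20}" unfolding T_def by auto
  have "card F = card T" unfolding nc(3) T_def[symmetric]
    by (rule card_image) (meson Tsub inj_vx inj_on_subset)
  hence "3 \<le> card T" using c3 by simp
  then obtain j where "j < 12" "T = set (fcs!j)" using comb3[OF Tsub HT[OF nc(1,2) T_def]] by blast
  thus ?thesis using nc(3) T_def by blast
qed

lemma edges_sub:
  assumes "(p, q) \<in> dodeca_oedges" shows "\<exists>i<20. \<exists>j\<in>set (nb!i). p = vx i \<and> q = vx j"
proof -
  have pq: "p \<noteq> q" and ex: "exposed_face dodeca_V {p, q}" using assms unfolding dodeca_oedges_def by auto
  obtain n c where nc: "n \<noteq> 0" "\<forall>i<20. n \<bullet> vx i \<le> c" "{p,q} = vx ` {i. i < 20 \<and> n \<bullet> vx i = c}"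
    using exposedD[OF ex] by blast
  define T where "T = {i. i < 20 \<and> n \<bullet> vx i = c}"
  obtain i where i: "i \<in> T" "p = vx i" using nc(3) T_def by (metis imageE insertI1)
  obtain j where j: "j \<in> T" "q = vx j" using nc(3) T_def by (metis imageE insertI1 insert_commute)
  have i20: "i < 20" "j < 20" using i j T_def by auto
  have ij: "i \<noteq> j" using pq i j by auto
  have TT: "T \<subseteq> {i, j}"
  proof
    fix x assume x: "x \<in> T"
    hence "vx x \<in> {p, q}" using nc(3) T_def by auto
    thus "x \<in> {i, j}" using vx_eq_iff x i j i20 T_def by auto
  qed
  have "set (supp i j) \<subseteq> T" using HT(1)[OF nc(1,2) T_def] i j ij by blast
  moreover have "i \<notin> set (supp i j)" using supp_sub_nb[OF i20(1)] nb_facts(3)[OF i20(1)] by blast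
  ultimately have "set (supp i j) \<subseteq> {j}" using TT by blast
  hence "j \<in> set (nb!i)" using row_facts(4)[OF i20 ij] by blast
  thus ?thesis using i j i20 by blast
qed

lemma len5: "length xs = 5 \<Longrightarrow> xs = [xs!0, xs!1, xs!2, xs!3, xs!4]"
proof (rule nth_equalityI)
  assume l: "length xs = 5"
  thus "length xs = length [xs!0, xs!1, xs!2, xs!3, xs!4]" by simp
  fix i assume "i < length xs"
  hence "i = 0 \<or> i = 1 \<or> i = 2 \<or> i = 3 \<or> i = 4" using l by presburger
  thus "xs ! i = [xs!0, xs!1, xs!2, xs!3, xs!4] ! i" by auto
qed

lemma vec3_fsum: "j < 12 \<Longrightarrow> vec3 (fsum j) = (\<Sum>w\<in>vx ` set (fcs!j). w)"
proof -
  assume j: "j < 12"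
  have cf: "length (fcs!j) = 5" "distinct (fcs!j)" "\<forall>m\<in>set (fcs!j). m < 20" using chk_face[OF j] unfolding chk_face_def by auto
  have inj: "inj_on vx (set (fcs!j))" using cf(3) inj_vx by (meson inj_on_subset lessThan_iff subsetI)
  have "(\<Sum>w\<in>vx ` set (fcs!j). w) = (\<Sum>m\<in>set (fcs!j). vx m)" by (simp add: sum.reindex[OF inj])
  also have "\<dots> = sum_list (map vx (fcs!j))" using cf(2) by (simp add: sum_list_distinct_conv_sum_set)
  also have "\<dots> = vx (fcs!j!0) + (vx (fcs!j!1) + (vx (fcs!j!2) + (vx (fcs!j!3) + vx (fcs!j!4))))"
    by (subst len5[OF cf(1)]) simp
  finally show ?thesis by (simp add: fsum_def vec3_add vx_def)
qed


definition farl :: "nat list list" where "farl = [[3, 5, 6, 7, 11, 12, 13], [2, 4, 6, 7, 8, 12, 19], [1, 4, 5, 7, 9, 13, 17], [0, 4, 5, 6, 9, 14, 19], [1, 2, 3, 7, 10, 11, 18], [0, 2, 3, 6, 8, 16, 18], [0, 1, 3, 5, 10, 15, 17], [0, 1, 2, 4, 14, 15, 16], [1, 5, 12, 16, 17, 18, 19], [2, 3, 13, 14, 17, 18, 19], [4, 6, 11, 15, 17, 18, 19], [0, 4, 10, 12, 13, 14, 18], [0, 1, 8, 11, 13, 15, 19], [0, 2, 9, 11, 12, 16, 17], [3, 7, 9, 11, 15, 16, 19], [6, 7, 10, 12, 14, 16, 17], [5, 7, 8, 13, 14, 15, 18], [2, 6, 8, 9, 10, 13, 15], [4, 5, 8,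 9, 10, 11, 16], [1, 3, 8, 9, 10, 12, 14]]"
lemma farl_0: "farl ! 0 = [3, 5, 6, 7, 11, 12, 13]" by (simp add: farl_def)
lemma farl_1: "farl ! 1 = [2, 4, 6, 7, 8, 12, 19]" by (simp add: farl_def)
lemma farl_1s: "farl ! Suc 0 = [2, 4, 6, 7, 8, 12, 19]" by (simp add: farl_def)
lemma farl_2: "farl ! 2 = [1, 4, 5, 7, 9, 13, 17]" by (simp add: farl_def)
lemma farl_3: "farl ! 3 = [0, 4, 5, 6, 9, 14, 19]" by (simp add: farl_def)
lemma farl_4: "farl ! 4 = [1, 2, 3, 7, 10, 11, 18]" by (simp add: farl_def)
lemma farl_5: "farl ! 5 = [0, 2, 3, 6, 8, 16, 18]" by (simp add: farl_def)
lemma farl_6: "farl ! 6 = [0, 1, 3, 5, 10, 15, 17]" by (simp add: farl_def)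
lemma farl_7: "farl ! 7 = [0, 1, 2, 4, 14, 15, 16]" by (simp add: farl_def)
lemma farl_8: "farl ! 8 = [1, 5, 12, 16, 17, 18, 19]" by (simp add: farl_def)
lemma farl_9: "farl ! 9 = [2, 3, 13, 14, 17, 18, 19]" by (simp add: farl_def)
lemma farl_10: "farl ! 10 = [4, 6, 11, 15, 17, 18, 19]" by (simp add: farl_def)
lemma farl_11: "farl ! 11 = [0, 4, 10, 12, 13, 14, 18]" by (simp add: farl_def)
lemma farl_12: "farl ! 12 = [0, 1, 8, 11, 13, 15, 19]" by (simp add: farl_def)
lemma farl_13: "farl ! 13 = [0, 2, 9, 11, 12, 16, 17]" by (simp add: farl_def)
lemma farl_14: "farl ! 14 = [3, 7, 9, 11, 15, 16, 19]" by (simp add: farl_def)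
lemma farl_15: "farl ! 15 = [6, 7, 10, 12, 14, 16, 17]" by (simp add: farl_def)
lemma farl_16: "farl ! 16 = [5, 7, 8, 13, 14, 15, 18]" by (simp add: farl_def)
lemma farl_17: "farl ! 17 = [2, 6, 8, 9, 10, 13, 15]" by (simp add: farl_def)
lemma farl_18: "farl ! 18 = [4, 5, 8, 9, 10, 11, 16]" by (simp add: farl_def)
lemma farl_19: "farl ! 19 = [1, 3, 8, 9, 10, 12, 14]" by (simp add: farl_def)
lemma tets_0: "tets ! 0 = [0, 3, 5, 6]" by (simp add: tets_def)
lemma tets_1: "tets ! 1 = [0, 11, 12, 13]" by (simp add: tets_def)
lemma tets_1s: "tets ! Suc 0 = [0, 11, 12, 13]" by (simp add: tets_def)
lemma tets_2: "tets ! 2 = [1, 2, 4, 7]" by (simp add: tets_def)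
lemma tets_3: "tets ! 3 = [1, 8, 12, 19]" by (simp add: tets_def)
lemma tets_4: "tets ! 4 = [2, 9, 13, 17]" by (simp add: tets_def)
lemma tets_5: "tets ! 5 = [3, 9, 14, 19]" by (simp add: tets_def)
lemma tets_6: "tets ! 6 = [4, 10, 11, 18]" by (simp add: tets_def)
lemma tets_7: "tets ! 7 = [5, 8, 16, 18]" by (simp add: tets_def)
lemma tets_8: "tets ! 8 = [6, 10, 15, 17]" by (simp add: tets_def)
lemma tets_9: "tets ! 9 = [7, 14, 15, 16]" by (simp add: tets_def)
lemmas farls = farl_0 farl_1 farl_2 farl_3 farl_4 farl_5 farl_6 farl_7 farl_8 farl_9 farl_10 farl_11 farl_12 farl_13 farl_14 farl_15 farl_16 farl_17 farl_18 farl_19 farl_1s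
lemmas tetss = tets_0 tets_1 tets_2 tets_3 tets_4 tets_5 tets_6 tets_7 tets_8 tets_9 tets_1s

definition vneg :: "zv \<Rightarrow> zv" where "vneg v = (case v of (a,b,c) \<Rightarrow> (zsub (0,0) a, zsub (0,0) b, zsub (0,0) c))"
lemma vneg2: "vneg (a,b,c) = (zsub (0,0) a, zsub (0,0) b, zsub (0,0) c)" by (simp add: vneg_def)
lemma vec3_neg: "vec3 (vneg v) = - vec3 v"
  by (cases v) (auto simp: vneg_def vec3_def vec_eq_iff forall_3 zr_def zsub_def)
definition tidx :: "nat \<Rightarrow> nat \<Rightarrow> nat" where
  "tidx i y = hd (filter (\<lambda>k. i \<in> set (tets!k) \<and> y \<in> set (tets!k)) [0,1,2,3,4,5,6,7,8,9])"
definition cmn :: "nat \<Rightarrow> nat \<Rightarrow> nat list" where "cmn i y = filter (\<lambda>z. z \<in> set (farl!y)) (farl!i)"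
lemma zne2: "zne p q = (zpos (zsub p q) \<or> zpos (zsub q p))" by (simp add: zne_def)
lemmas evs2 = vneg2 zne2 tidx_def cmn_def farls tetss

definition chk_dot :: "nat \<Rightarrow> bool" where
  "chk_dot i = (vdot (vt!i) (vt!i) = (3,0) \<and> i \<notin> set (farl!i) \<and> ngl!i < 20 \<and> vt!(ngl!i) = vneg (vt!i) \<and> (\<forall>j\<in>set (farl!i). j < 20) \<and>
     (\<forall>j<20. i \<noteq> j \<longrightarrow> (j \<in> set (farl!i) \<longrightarrow> (vdot (vt!i) (vt!j) = (-1,0) \<or> vdot (vt!i) (vt!j) = (-3,0))) \<and>
        (j \<notin> set (farl!i) \<longrightarrow> zne (vdot (vt!i) (vt!j)) (-1,0) \<and> zne (vdot (vt!i) (vt!j)) (-3,0))))"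

definition chk_tet :: "nat \<Rightarrow> bool" where
  "chk_tet i = (\<forall>y\<in>set (farl!i). cmn i y = [] \<or> (length (cmn i y) = 2 \<and> tidx i y < 10 \<and>
      set (tets!(tidx i y)) = {i, y, cmn i y ! 0, cmn i y ! 1}))"

definition chk_tl :: "nat \<Rightarrow> bool" where
  "chk_tl k = (length (tets!k) = 4 \<and> distinct (tets!k) \<and> (\<forall>m\<in>set (tets!k). m < 20))"

lemma chk_dot_0: "chk_dot 0"
  by (simp only: chk_dot_def all20 tabs farls) (simp add: evs evs2)
lemma chk_tet_0: "chk_tet 0"
  by (simp only: chk_tet_def tabs farls tetss) (simp add: evs evs2)
lemma chk_dot_1: "chk_dot 1"
  by (simp only: chk_dot_def all20 tabs farls) (simp add: evs evs2)
lemma chk_tet_1: "chk_tet 1"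
  by (simp only: chk_tet_def tabs farls tetss) (simp add: evs evs2)
lemma chk_dot_2: "chk_dot 2"
  by (simp only: chk_dot_def all20 tabs farls) (simp add: evs evs2)
lemma chk_tet_2: "chk_tet 2"
  by (simp only: chk_tet_def tabs farls tetss) (simp add: evs evs2)
lemma chk_dot_3: "chk_dot 3"
  by (simp only: chk_dot_def all20 tabs farls) (simp add: evs evs2)
lemma chk_tet_3: "chk_tet 3"
  by (simp only: chk_tet_def tabs farls tetss) (simp add: evs evs2)
lemma chk_dot_4: "chk_dot 4"
  by (simp only: chk_dot_def all20 tabs farls) (simp add: evs evs2)
lemma chk_tet_4: "chk_tet 4"
  by (simp only: chk_tet_def tabs farls tetss) (simp add: evs evs2)
lemma chk_dot_5: "chk_dot 5"
  by (simp only: chk_dot_def all20 tabs farls) (simp add: evs evs2)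
lemma chk_tet_5: "chk_tet 5"
  by (simp only: chk_tet_def tabs farls tetss) (simp add: evs evs2)
lemma chk_dot_6: "chk_dot 6"
  by (simp only: chk_dot_def all20 tabs farls) (simp add: evs evs2)
lemma chk_tet_6: "chk_tet 6"
  by (simp only: chk_tet_def tabs farls tetss) (simp add: evs evs2)
lemma chk_dot_7: "chk_dot 7"
  by (simp only: chk_dot_def all20 tabs farls) (simp add: evs evs2)
lemma chk_tet_7: "chk_tet 7"
  by (simp only: chk_tet_def tabs farls tetss) (simp add: evs evs2)
lemma chk_dot_8: "chk_dot 8"
  by (simp only: chk_dot_def all20 tabs farls) (simp add: evs evs2)
lemma chk_tet_8: "chk_tet 8"
  by (simp only: chk_tet_def tabs farls tetss) (simp add: evs evs2)
lemma chk_dot_9: "chk_dot 9"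
  by (simp only: chk_dot_def all20 tabs farls) (simp add: evs evs2)
lemma chk_tet_9: "chk_tet 9"
  by (simp only: chk_tet_def tabs farls tetss) (simp add: evs evs2)
lemma chk_dot_10: "chk_dot 10"
  by (simp only: chk_dot_def all20 tabs farls) (simp add: evs evs2)
lemma chk_tet_10: "chk_tet 10"
  by (simp only: chk_tet_def tabs farls tetss) (simp add: evs evs2)
lemma chk_dot_11: "chk_dot 11"
  by (simp only: chk_dot_def all20 tabs farls) (simp add: evs evs2)
lemma chk_tet_11: "chk_tet 11"
  by (simp only: chk_tet_def tabs farls tetss) (simp add: evs evs2)
lemma chk_dot_12: "chk_dot 12"
  by (simp only: chk_dot_def all20 tabs farls) (simp add: evs evs2)
lemma chk_tet_12: "chk_tet 12"
  by (simp only: chk_tet_def tabs farls tetss) (simp add: evs evs2)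
lemma chk_dot_13: "chk_dot 13"
  by (simp only: chk_dot_def all20 tabs farls) (simp add: evs evs2)
lemma chk_tet_13: "chk_tet 13"
  by (simp only: chk_tet_def tabs farls tetss) (simp add: evs evs2)
lemma chk_dot_14: "chk_dot 14"
  by (simp only: chk_dot_def all20 tabs farls) (simp add: evs evs2)
lemma chk_tet_14: "chk_tet 14"
  by (simp only: chk_tet_def tabs farls tetss) (simp add: evs evs2)
lemma chk_dot_15: "chk_dot 15"
  by (simp only: chk_dot_def all20 tabs farls) (simp add: evs evs2)
lemma chk_tet_15: "chk_tet 15"
  by (simp only: chk_tet_def tabs farls tetss) (simp add: evs evs2)
lemma chk_dot_16: "chk_dot 16"
  by (simp only: chk_dot_def all20 tabs farls) (simp add: evs evs2)
lemma chk_tet_16: "chk_tet 16"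
  by (simp only: chk_tet_def tabs farls tetss) (simp add: evs evs2)
lemma chk_dot_17: "chk_dot 17"
  by (simp only: chk_dot_def all20 tabs farls) (simp add: evs evs2)
lemma chk_tet_17: "chk_tet 17"
  by (simp only: chk_tet_def tabs farls tetss) (simp add: evs evs2)
lemma chk_dot_18: "chk_dot 18"
  by (simp only: chk_dot_def all20 tabs farls) (simp add: evs evs2)
lemma chk_tet_18: "chk_tet 18"
  by (simp only: chk_tet_def tabs farls tetss) (simp add: evs evs2)
lemma chk_dot_19: "chk_dot 19"
  by (simp only: chk_dot_def all20 tabs farls) (simp add: evs evs2)
lemma chk_tet_19: "chk_tet 19"
  by (simp only: chk_tet_def tabs farls tetss) (simp add: evs evs2)
lemma chk_tl_0: "chk_tl 0"
  by (simp only: chk_tl_def tetss) simp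
lemma chk_tl_1: "chk_tl 1"
  by (simp only: chk_tl_def tetss) simp
lemma chk_tl_2: "chk_tl 2"
  by (simp only: chk_tl_def tetss) simp
lemma chk_tl_3: "chk_tl 3"
  by (simp only: chk_tl_def tetss) simp
lemma chk_tl_4: "chk_tl 4"
  by (simp only: chk_tl_def tetss) simp
lemma chk_tl_5: "chk_tl 5"
  by (simp only: chk_tl_def tetss) simp
lemma chk_tl_6: "chk_tl 6"
  by (simp only: chk_tl_def tetss) simp
lemma chk_tl_7: "chk_tl 7"
  by (simp only: chk_tl_def tetss) simp
lemma chk_tl_8: "chk_tl 8"
  by (simp only: chk_tl_def tetss) simp
lemma chk_tl_9: "chk_tl 9"
  by (simp only: chk_tl_def tetss) simp

lemma chk_dot: "u < 20 \<Longrightarrow> chk_dot u"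
proof -
  assume "u < 20"
  hence "u = 0 \<or> u = 1 \<or> u = 2 \<or> u = 3 \<or> u = 4 \<or> u = 5 \<or> u = 6 \<or> u = 7 \<or> u = 8 \<or> u = 9 \<or> u = 10 \<or> u = 11 \<or> u = 12 \<or> u = 13 \<or> u = 14 \<or> u = 15 \<or> u = 16 \<or> u = 17 \<or> u = 18 \<or> u = 19" by presburger
  thus ?thesis by (elim disjE) (simp_all only: chk_dot_0 chk_dot_1 chk_dot_2 chk_dot_3 chk_dot_4 chk_dot_5 chk_dot_6 chk_dot_7 chk_dot_8 chk_dot_9 chk_dot_10 chk_dot_11 chk_dot_12 chk_dot_13 chk_dot_14 chk_dot_15 chk_dot_16 chk_dot_17 chk_dot_18 chk_dot_19)
qed
lemma chk_tet: "u < 20 \<Longrightarrow> chk_tet u"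
proof -
  assume "u < 20"
  hence "u = 0 \<or> u = 1 \<or> u = 2 \<or> u = 3 \<or> u = 4 \<or> u = 5 \<or> u = 6 \<or> u = 7 \<or> u = 8 \<or> u = 9 \<or> u = 10 \<or> u = 11 \<or> u = 12 \<or> u = 13 \<or> u = 14 \<or> u = 15 \<or> u = 16 \<or> u = 17 \<or> u = 18 \<or> u = 19" by presburger
  thus ?thesis by (elim disjE) (simp_all only: chk_tet_0 chk_tet_1 chk_tet_2 chk_tet_3 chk_tet_4 chk_tet_5 chk_tet_6 chk_tet_7 chk_tet_8 chk_tet_9 chk_tet_10 chk_tet_11 chk_tet_12 chk_tet_13 chk_tet_14 chk_tet_15 chk_tet_16 chk_tet_17 chk_tet_18 chk_tet_19)
qed
lemma chk_tl: "u < 10 \<Longrightarrow> chk_tl u"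
proof -
  assume "u < 10"
  hence "u = 0 \<or> u = 1 \<or> u = 2 \<or> u = 3 \<or> u = 4 \<or> u = 5 \<or> u = 6 \<or> u = 7 \<or> u = 8 \<or> u = 9" by presburger
  thus ?thesis by (elim disjE) (simp_all only: chk_tl_0 chk_tl_1 chk_tl_2 chk_tl_3 chk_tl_4 chk_tl_5 chk_tl_6 chk_tl_7 chk_tl_8 chk_tl_9)
qed

lemma vx_inner: "vx i \<bullet> vx j = zr (vdot (vt!i) (vt!j))" by (simp add: vx_def vec3_inner)

lemma vx_norm3: "i < 20 \<Longrightarrow> vx i \<bullet> vx i = 3"
  using chk_dot[of i] unfolding chk_dot_def vx_inner by (simp add: zr_def)

lemma vx_ngl: "i < 20 \<Longrightarrow> vx (ngl!i) = - vx i" "i < 20 \<Longrightarrow> ngl!i < 20"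
  using chk_dot[of i] unfolding chk_dot_def vx_def by (auto simp: vec3_neg)

lemma farD: assumes "i < 20" "j < 20" "i \<noteq> j" "vx i \<bullet> vx j = -1 \<or> vx i \<bullet> vx j = -3"
  shows "j \<in> set (farl!i)"
proof (rule ccontr)
  assume "j \<notin> set (farl!i)"
  hence "zne (vdot (vt!i) (vt!j)) (-1,0)" "zne (vdot (vt!i) (vt!j)) (-3,0)"
    using chk_dot[OF assms(1)] assms(2,3) unfolding chk_dot_def by auto
  hence "zr (vdot (vt!i) (vt!j)) \<noteq> zr (-1,0)" "zr (vdot (vt!i) (vt!j)) \<noteq> zr (-3,0)" using zne_sound by blast+
  hence "vx i \<bullet> vx j \<noteq> -1" "vx i \<bullet> vx j \<noteq> -3" unfolding vx_inner by (simp_all add: zr_def)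
  thus False using assms(4) by simp
qed

lemma farl_sym: assumes "i < 20" "j \<in> set (farl!i)" shows "j < 20" "vx i \<bullet> vx j = -1 \<or> vx i \<bullet> vx j = -3"
proof -
  show j: "j < 20" using chk_dot[OF assms(1)] assms(2) unfolding chk_dot_def by auto
  have "i \<noteq> j" using chk_dot[OF assms(1)] assms(2) unfolding chk_dot_def by auto
  have "vdot (vt!i) (vt!j) = (-1,0) \<or> vdot (vt!i) (vt!j) = (-3,0)"
    using chk_dot[OF assms(1)] assms(2) j \<open>i \<noteq> j\<close> unfolding chk_dot_def by auto
  thus "vx i \<bullet> vx j = -1 \<or> vx i \<bullet> vx j = -3" unfolding vx_inner by (auto simp: zr_def)
qed

lemma tet_comb:
  assumes T: "T \<subseteq> {..<20}" and c4: "card T = 4" and far: "\<forall>i\<in>T. \<forall>j\<in>T. i \<noteq> j \<longrightarrow> j \<in> set (farl!i)"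
  shows "\<exists>k<10. T = set (tets!k)"
proof -
  have fin: "finite T" using T finite_subset by blast
  have "T \<noteq> {}" using c4 by auto
  then obtain x where x: "x \<in> T" by blast
  have "card (T - {x}) = 3" using c4 x fin by (simp add: card_Diff_singleton)
  hence "T - {x} \<noteq> {}" by (intro notI) simp
  then obtain y where y: "y \<in> T" "y \<noteq> x" by blast
  have x20: "x < 20" using x T by auto
  have yf: "y \<in> set (farl!x)" using far[rule_format, OF x y(1)] y(2) by simp
  have sub: "T \<subseteq> {x, y} \<union> set (cmn x y)"
  proof
    fix z assume z: "z \<in> T"
    show "z \<in> {x, y} \<union> set (cmn x y)"
    proof (cases "z = x \<or> z = y")
      case False
      hence "z \<in> set (farl!x)" "z \<in> set (farl!y)" using far[rule_format, OF x z] far[rule_format, OF y(1) z] by auto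
      thus ?thesis unfolding cmn_def by auto
    qed auto
  qed
  have ct: "cmn x y = [] \<or> (length (cmn x y) = 2 \<and> tidx x y < 10 \<and>
      set (tets!(tidx x y)) = {x, y, cmn x y ! 0, cmn x y ! 1})"
    using chk_tet[OF x20] yf unfolding chk_tet_def by blast
  show ?thesis
  proof (cases "cmn x y = []")
    case True
    hence "T \<subseteq> {x, y}" using sub by auto
    hence "card T \<le> card {x, y}" by (intro card_mono) auto
    moreover have "card {x, y} \<le> 2" by (cases "x = y") auto
    ultimately have "card T \<le> 2" by linarith
    thus ?thesis using c4 by simp
  next
    case False
    hence l2: "length (cmn x y) = 2" and k: "tidx x y < 10" and st: "set (tets!(tidx x y)) = {x, y, cmn x y ! 0, cmn x y ! 1}"
      using ct by auto
    have "set (cmn x y) = {cmn x y ! 0, cmn x y ! 1}" using l2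
      by (auto simp: set_conv_nth less_Suc_eq numeral_2_eq_2)
    hence TS: "T \<subseteq> set (tets!(tidx x y))" using sub st by auto
    have "card (set (tets!(tidx x y))) = 4" using chk_tl[OF k] unfolding chk_tl_def by (simp add: distinct_card)
    hence "T = set (tets!(tidx x y))" using TS c4 by (simp add: card_subset_eq)
    thus ?thesis using k by blast
  qed
qed


lemma orth_zero:
  fixes a e1 e2 e3 :: "real^3"
  assumes "e1 \<noteq> 0" "e2 \<noteq> 0" "e3 \<noteq> 0" "e1 \<bullet> e2 = 0" "e2 \<bullet> e3 = 0" "e1 \<bullet> e3 = 0"
    "a \<bullet> e1 = 0" "a \<bullet> e2 = 0" "a \<bullet> e3 = 0"
  shows "a = 0"
proof -
  define B where "B = {e1, e2, e3}"
  have d: "e1 \<noteq> e2" "e2 \<noteq> e3" "e1 \<noteq> e3" using assms by (auto simp: inner_eq_zero_iff)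
  have po: "pairwise orthogonal B" unfolding B_def pairwise_def orthogonal_def using assms by (auto simp: inner_commute)
  have ind: "independent B" using pairwise_orthogonal_independent[OF po] assms unfolding B_def by auto
  have cB: "card B = 3" unfolding B_def using d by auto
  have "dim (UNIV :: (real^3) set) = 3" by simp
  hence "UNIV \<subseteq> span B" using card_ge_dim_independent[of B UNIV] ind cB by auto
  hence "a \<in> span B" by auto
  hence "orthogonal a a" by (rule orthogonal_to_span) (use assms in \<open>auto simp: B_def orthogonal_def\<close>)
  thus ?thesis by (simp add: orthogonal_def)
qed

lemma signs:
  assumes "x1 \<in> {-1,1::real}" "x2 \<in> {-1,1::real}" "x3 \<in> {-1,1::real}" "y1 \<in> {-1,1::real}" "y2 \<in> {-1,1::real}" "y3 \<in> {-1,1::real}"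
  shows "(x1*y1+x2*y2+x3*y3 = 3 \<and> x1=y1 \<and> x2=y2 \<and> x3=y3) \<or> x1*y1+x2*y2+x3*y3 = 1 \<or> x1*y1+x2*y2+x3*y3 = -1 \<or> x1*y1+x2*y2+x3*y3 = -3"
  using assms by auto

lemma V_norm3: "v \<in> dodeca_V \<Longrightarrow> v \<bullet> v = 3"
  unfolding V_eq using vx_norm3 by auto

lemma cube_dots:
  assumes S: "S \<in> inscribed_cubes" and ES: "E \<subseteq> S" and nadj: "\<forall>u\<in>E. \<forall>v\<in>E. \<not> cube_adj S u v"
  shows "\<forall>u\<in>E. \<forall>v\<in>E. u \<noteq> v \<longrightarrow> u \<bullet> v = -1 \<or> u \<bullet> v = -3"
proof -
  obtain a e1 e2 e3 where e: "e1 \<noteq> 0" "norm e1 = norm e2" "norm e2 = norm e3" "e1 \<bullet> e2 = 0" "e2 \<bullet> e3 = 0" "e1 \<bullet> e3 = 0"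
    and Sd: "S = {a + s1 *\<^sub>R e1 + s2 *\<^sub>R e2 + s3 *\<^sub>R e3 | s1 s2 s3. s1 \<in> {-1, 1} \<and> s2 \<in> {-1, 1} \<and> s3 \<in> {-1, 1}}"
    using S unfolding inscribed_cubes_def is_cube_vertex_set_def by blast
  have SV: "S \<subseteq> dodeca_V" using S unfolding inscribed_cubes_def by blast
  define g where "g s1 s2 s3 = a + s1 *\<^sub>R e1 + s2 *\<^sub>R e2 + s3 *\<^sub>R e3" for s1 s2 s3 :: real
  define L where "L = e1 \<bullet> e1"
  have L2: "e2 \<bullet> e2 = L" "e3 \<bullet> e3 = L" using e(2,3) unfolding L_def power2_norm_eq_inner[symmetric] by simp_all
  have gg: "g s1 s2 s3 \<bullet> g t1 t2 t3 = a \<bullet> a + (s1*t1 + s2*t2 + s3*t3) * L + (s1+t1)*(a \<bullet> e1) + (s2+t2)*(a \<bullet> e2) + (s3+t3)*(a \<bullet> e3)"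
    for s1 s2 s3 t1 t2 t3
  proof -
    have c: "e2 \<bullet> e1 = 0" "e3 \<bullet> e2 = 0" "e3 \<bullet> e1 = 0" "e1 \<bullet> a = a \<bullet> e1" "e2 \<bullet> a = a \<bullet> e2" "e3 \<bullet> a = a \<bullet> e3"
      using e(4-6) by (simp_all add: inner_commute)
    show ?thesis unfolding g_def
      by (simp add: inner_add_left inner_add_right e(4-6) c L2 L_def[symmetric] algebra_simps)
  qed
  have Sg: "x \<in> S \<longleftrightarrow> (\<exists>s1 s2 s3. s1 \<in> {-1,1} \<and> s2 \<in> {-1,1} \<and> s3 \<in> {-1,1} \<and> x = g s1 s2 s3)" for x
    unfolding Sd g_def by blast
  have n3: "g s1 s2 s3 \<bullet> g s1 s2 s3 = 3" if "s1 \<in> {-1,1}" "s2 \<in> {-1,1}" "s3 \<in> {-1,1}" for s1 s2 s3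
  proof -
    have "g s1 s2 s3 \<in> S" by (rule Sg[THEN iffD2]) (use that in blast)
    thus ?thesis using SV V_norm3 by blast
  qed
  have A: "a \<bullet> a + 3 * L + 2*(a \<bullet> e1) + 2*(a \<bullet> e2) + 2*(a \<bullet> e3) = 3" using n3[of 1 1 1] gg[of 1 1 1 1 1 1] by simp
  have B1: "a \<bullet> a + 3 * L - 2*(a \<bullet> e1) + 2*(a \<bullet> e2) + 2*(a \<bullet> e3) = 3" using n3[of "-1" 1 1] gg[of "-1" 1 1 "-1" 1 1] by simp
  have B2: "a \<bullet> a + 3 * L + 2*(a \<bullet> e1) - 2*(a \<bullet> e2) + 2*(a \<bullet> e3) = 3" using n3[of 1 "-1" 1] gg[of 1 "-1" 1 1 "-1" 1] by simp
  have B3: "a \<bullet> a + 3 * L + 2*(a \<bullet> e1) + 2*(a \<bullet> e2) - 2*(a \<bullet> e3) = 3" using n3[of 1 1 "-1"] gg[of 1 1 "-1" 1 1 "-1"] by simp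
  have ae: "a \<bullet> e1 = 0" "a \<bullet> e2 = 0" "a \<bullet> e3 = 0" using A B1 B2 B3 by linarith+
  have e23: "e2 \<noteq> 0" "e3 \<noteq> 0" using e(1-3) by auto
  have a0: "a = 0" using orth_zero[OF e(1) e23 e(4-6) ae] .
  have L1: "L = 1" using A ae a0 by simp
  have gdot: "g s1 s2 s3 \<bullet> g t1 t2 t3 = s1*t1 + s2*t2 + s3*t3" for s1 s2 s3 t1 t2 t3
    using gg[of s1 s2 s3 t1 t2 t3] ae a0 L1 by simp
  have dsq: "(x - y) \<bullet> (x - y) = x \<bullet> x + y \<bullet> y - 2 * (x \<bullet> y)" for x y :: pt
    by (simp add: inner_diff_left inner_diff_right inner_commute)
  show ?thesis
  proof (intro ballI impI)
    fix u v assume u: "u \<in> E" and v: "v \<in> E" and uv: "u \<noteq> v"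
    obtain s1 s2 s3 where s: "s1 \<in> {-1,1}" "s2 \<in> {-1,1}" "s3 \<in> {-1,1}" "u = g s1 s2 s3"
      using Sg[THEN iffD1, OF subsetD[OF ES u]] by blast
    obtain t1 t2 t3 where t: "t1 \<in> {-1,1}" "t2 \<in> {-1,1}" "t3 \<in> {-1,1}" "v = g t1 t2 t3"
      using Sg[THEN iffD1, OF subsetD[OF ES v]] by blast
    have uvd: "u \<bullet> v = s1*t1 + s2*t2 + s3*t3" using s(4) t(4) gdot by simp
    from signs[OF s(1-3) t(1-3)] consider "s1*t1+s2*t2+s3*t3 = 3 \<and> s1=t1 \<and> s2=t2 \<and> s3=t3"
      | "s1*t1+s2*t2+s3*t3 = 1" | "s1*t1+s2*t2+s3*t3 = -1" | "s1*t1+s2*t2+s3*t3 = -3" by blast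
    then show "u \<bullet> v = -1 \<or> u \<bullet> v = -3"
    proof cases
      case 1 thus ?thesis using s(4) t(4) uv by simp
    next
      case 2
      have uu: "u \<bullet> u = 3" "v \<bullet> v = 3" using s t n3 by auto
      have duv: "(u - v) \<bullet> (u - v) = 4" using dsq[of u v] uu uvd 2 by simp
      have "cube_adj S u v"
        unfolding cube_adj_def
      proof (intro conjI ballI impI)
        show "u \<in> S" "v \<in> S" "u \<noteq> v" using u v uv ES by auto
        fix w w' assume w: "w \<in> S" and w': "w' \<in> S" and ww: "w \<noteq> w'"
        obtain p1 p2 p3 where p: "p1 \<in> {-1,1}" "p2 \<in> {-1,1}" "p3 \<in> {-1,1}" "w = g p1 p2 p3"
          using Sg[THEN iffD1, OF w] by blast
        obtain q1 q2 q3 where q: "q1 \<in> {-1,1}" "q2 \<in> {-1,1}" "q3 \<in> {-1,1}" "w' = g q1 q2 q3"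
          using Sg[THEN iffD1, OF w'] by blast
        have ww3: "w \<bullet> w = 3" "w' \<bullet> w' = 3" using p q n3 by auto
        have "w \<bullet> w' \<le> 1"
        proof -
          have "w \<bullet> w' = p1*q1 + p2*q2 + p3*q3" using p(4) q(4) gdot by simp
          moreover from signs[OF p(1-3) q(1-3)] have "(p1*q1+p2*q2+p3*q3 = 3 \<and> p1=q1 \<and> p2=q2 \<and> p3=q3) \<or> p1*q1+p2*q2+p3*q3 \<le> 1"
            by auto
          ultimately show ?thesis using ww p(4) q(4) by auto
        qed
        hence "(u - v) \<bullet> (u - v) \<le> (w - w') \<bullet> (w - w')" using dsq[of w w'] ww3 duv by simp
        thus "dist u v \<le> dist w w'" unfolding dist_norm by (simp add: norm_le)
      qed
      thus ?thesis using nadj u v by blast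
    next
      case 3 thus ?thesis using uvd by simp
    next
      case 4 thus ?thesis using uvd by simp
    qed
  qed
qed

lemma E_tet:
  assumes S: "S \<in> inscribed_cubes" and ES: "E \<subseteq> S" and c4: "card E = 4"
    and nadj: "\<forall>u\<in>E. \<forall>v\<in>E. \<not> cube_adj S u v"
  shows "\<exists>k<10. E = vx ` set (tets!k)"
proof -
  have EV: "E \<subseteq> vx ` {..<20}" using S ES unfolding inscribed_cubes_def V_eq by blast
  define T where "T = {i. i < 20 \<and> vx i \<in> E}"
  have ET: "E = vx ` T" using EV unfolding T_def by auto
  have Tsub: "T \<subseteq> {..<20}" unfolding T_def by auto
  have "card E = card T" unfolding ET by (rule card_image) (meson Tsub inj_vx inj_on_subset)
  hence cT: "card T = 4" using c4 by simp
  have dots: "\<forall>u\<in>E. \<forall>v\<in>E. u \<noteq> v \<longrightarrow> u \<bullet> v = -1 \<or> u \<bullet> v = -3" using cube_dots[OF S ES nadj] .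
  have far: "\<forall>i\<in>T. \<forall>j\<in>T. i \<noteq> j \<longrightarrow> j \<in> set (farl!i)"
  proof (intro ballI impI)
    fix i j assume i: "i \<in> T" and j: "j \<in> T" and ij: "i \<noteq> j"
    have i20: "i < 20" "j < 20" using i j T_def by auto
    have "vx i \<noteq> vx j" using vx_eq_iff[OF i20] ij by simp
    hence "vx i \<bullet> vx j = -1 \<or> vx i \<bullet> vx j = -3" using dots i j T_def by auto
    thus "j \<in> set (farl!i)" using farD[OF i20 ij] by simp
  qed
  obtain k where "k < 10" "T = set (tets!k)" using tet_comb[OF Tsub cT far] by blast
  thus ?thesis using ET by blast
qed


lemma face_in:
  assumes j: "j < 12" shows "vx ` set (fcs!j) \<in> dodeca_faces"
proof -
  define P where "P = fcs!j"
  have cf: "length P = 5" "distinct P" "\<forall>m\<in>set P. m < 20" "ngl!(P!0) < 20" "ngl!(P!0) \<notin> set P"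
    and cm: "\<forall>m<20. (m \<in> set P \<longrightarrow> vdot (fsum j) (vt!m) = vdot (fsum j) (vt!(P!0))) \<and>
        (m \<notin> set P \<longrightarrow> zpos (zsub (vdot (fsum j) (vt!(P!0))) (vdot (fsum j) (vt!m))))"
    using chk_face[OF j] unfolding chk_face_def P_def[symmetric] by blast+
  define n where "n = vec3 (fsum j)"
  define c where "c = n \<bullet> vx (P!0)"
  have nv: "n \<bullet> vx m = zr (vdot (fsum j) (vt!m))" for m unfolding n_def vx_def by (simp add: vec3_inner)
  have eq: "m \<in> set P \<Longrightarrow> m < 20 \<Longrightarrow> n \<bullet> vx m = c" for m using cm unfolding c_def nv by auto
  have lt: "m \<notin> set P \<Longrightarrow> m < 20 \<Longrightarrow> n \<bullet> vx m < c" for m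
    using cm zpos_sound unfolding c_def nv by (fastforce simp: zr_sub)
  have n0: "n \<noteq> 0" using lt[OF cf(5,4)] unfolding c_def by auto
  have le: "\<forall>v\<in>dodeca_V. n \<bullet> v \<le> c" unfolding V_eq using eq lt by (force simp: less_imp_le)
  have Feq: "vx ` set P = {v\<in>dodeca_V. n \<bullet> v = c}"
  proof
    show "vx ` set P \<subseteq> {v\<in>dodeca_V. n \<bullet> v = c}" using eq cf(3) vx_in_V by auto
    show "{v\<in>dodeca_V. n \<bullet> v = c} \<subseteq> vx ` set P" unfolding V_eq using lt by force
  qed
  have "card (vx ` set P) = 5"
  proof -
    have "inj_on vx (set P)" using cf(3) inj_vx by (meson inj_on_subset lessThan_iff subsetI)
    thus ?thesis using cf(1,2) by (simp add: card_image distinct_card)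
  qed
  thus ?thesis unfolding dodeca_faces_def exposed_face_def P_def[symmetric] using n0 le Feq by auto
qed

lemma faces_eq: "dodeca_faces = (\<lambda>j. vx ` set (fcs!j)) ` {..<12}"
  using faces_sub face_in by blast

lemma edge_in:
  assumes i: "i < 20" and k: "k < 3" shows "(vx i, vx (nb!i!k)) \<in> dodeca_oedges"
proof -
  define j where "j = nb!i!k"
  have ce: "vdot (vadd (vt!i) (vt!j)) (vt!j) = vdot (vadd (vt!i) (vt!j)) (vt!i)" "ngl!i < 20" "ngl!i \<noteq> i" "ngl!i \<noteq> j"
    and cm: "\<forall>m<20. m = i \<or> m = j \<or> zpos (zsub (vdot (vadd (vt!i) (vt!j)) (vt!i)) (vdot (vadd (vt!i) (vt!j)) (vt!m)))"
    using chk_edge[OF i, unfolded chk_edge_def, rule_format, OF k, folded j_def] by blast+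
  have j20: "j < 20" using nb_facts(2)[OF i k] j_def by simp
  have ij: "i \<noteq> j" using nb_facts(3)[OF i] k set_nb[OF i] unfolding j_def less3 by auto
  define n where "n = vec3 (vadd (vt!i) (vt!j))"
  define c where "c = n \<bullet> vx i"
  have nv: "n \<bullet> vx m = zr (vdot (vadd (vt!i) (vt!j)) (vt!m))" for m unfolding n_def vx_def by (simp add: vec3_inner)
  have eqj: "n \<bullet> vx j = c" using ce(1) unfolding c_def nv by simp
  have lt: "m \<noteq> i \<Longrightarrow> m \<noteq> j \<Longrightarrow> m < 20 \<Longrightarrow> n \<bullet> vx m < c" for m
    using cm zpos_sound unfolding c_def nv by (fastforce simp: zr_sub)
  have n0: "n \<noteq> 0" using lt[OF ce(3,4,2)] unfolding c_def by auto
  have le: "\<forall>v\<in>dodeca_V. n \<bullet> v \<le> c" unfolding V_eq using eqj lt c_def by (force simp: less_imp_le)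
  have Feq: "{vx i, vx j} = {v\<in>dodeca_V. n \<bullet> v = c}"
  proof
    show "{vx i, vx j} \<subseteq> {v\<in>dodeca_V. n \<bullet> v = c}" using eqj c_def vx_in_V i j20 by auto
    show "{v\<in>dodeca_V. n \<bullet> v = c} \<subseteq> {vx i, vx j}" unfolding V_eq using lt by force
  qed
  have "vx i \<noteq> vx j" using vx_eq_iff[OF i j20] ij by simp
  thus ?thesis unfolding dodeca_oedges_def exposed_face_def j_def[symmetric] using n0 le Feq by auto
qed

lemma oedges_eq: "dodeca_oedges = {(vx i, vx j) | i j. i < 20 \<and> j \<in> set (nb!i)}"
proof
  show "dodeca_oedges \<subseteq> {(vx i, vx j) | i j. i < 20 \<and> j \<in> set (nb!i)}"
    using edges_sub by fast
  show "{(vx i, vx j) | i j. i < 20 \<and> j \<in> set (nb!i)} \<subseteq> dodeca_oedges"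
  proof clarify
    fix i j assume "i < 20" "j \<in> set (nb!i)"
    thus "(vx i, vx j) \<in> dodeca_oedges" using edge_in set_nb less3 by auto
  qed
qed


lemma fbvt_0: "fbvt ! 0 = [0, 1, -1, -1, 0, 1, 0, 0, 0, 0, 0, 0, 0, 0, 0, 0, 0, 0, 0, 0, 0, 0, 0, 0, 0, 0, -1, 0, 0, 0]" by (simp add: fbvt_def)
lemma fbvt_1: "fbvt ! 1 = [-1, 0, 1, 0, 0, 0, -1, 0, 1, 0, 0, 0, 0, 0, 0, 0, 0, 0, 0, 0, 0, 0, 0, 0, -1, 0, 0, 0, 0, 0]" by (simp add: fbvt_def)
lemma fbvt_1s: "fbvt ! Suc 0 = [-1, 0, 1, 0, 0, 0, -1, 0, 1, 0, 0, 0, 0, 0, 0, 0, 0, 0, 0, 0, 0, 0, 0, 0, -1, 0, 0, 0, 0, 0]" by (simp add: fbvt_def)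
lemma fbvt_2: "fbvt ! 2 = [1, -1, 0, 0, 0, 0, 0, 0, 0, 0, 0, 0, -1, 0, 1, 0, 0, 0, 0, 0, 0, 0, 0, 0, 0, -1, 0, 0, 0, 0]" by (simp add: fbvt_def)
lemma fbvt_3: "fbvt ! 3 = [0, 0, 0, 0, 1, -1, 0, 0, 0, 0, 1, -1, 0, 0, 0, 0, 0, 0, 0, 0, 0, 0, 0, 0, 0, 0, 0, 1, 0, 0]" by (simp add: fbvt_def)
lemma fbvt_4: "fbvt ! 4 = [0, 0, 0, 1, -1, 0, 0, 0, 0, 0, 0, 0, 0, 0, 0, 1, -1, 0, 0, 0, 0, 0, 0, 0, 0, 1, 0, 0, 0, 0]" by (simp add: fbvt_def)
lemma fbvt_5: "fbvt ! 5 = [0, 0, 0, 0, 0, 0, 1, -1, 0, 1, -1, 0, 0, 0, 0, 0, 0, 0, 0, 0, 0, 0, 0, 0, 0, 0, 1, 0, 0, 0]" by (simp add: fbvt_def)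
lemma fbvt_6: "fbvt ! 6 = [0, 0, 0, 0, 0, 0, 0, 1, -1, 0, 0, 0, 0, 0, 0, 0, 0, 0, 0, 1, -1, 0, 0, 0, 0, 0, 0, 0, 1, 0]" by (simp add: fbvt_def)
lemma fbvt_7: "fbvt ! 7 = [0, 0, 0, 0, 0, 0, 0, 0, 0, -1, 0, 1, 0, 0, 0, 0, 0, 0, 0, 0, 0, -1, 1, 0, 0, 0, 0, 0, -1, 0]" by (simp add: fbvt_def)
lemma fbvt_8: "fbvt ! 8 = [0, 0, 0, 0, 0, 0, 0, 0, 0, 0, 0, 0, 0, 1, -1, 0, 1, -1, 0, 0, 0, 0, 0, 0, 0, 0, 0, 0, 0, 1]" by (simp add: fbvt_def)
lemma fbvt_9: "fbvt ! 9 = [0, 0, 0, 0, 0, 0, 0, 0, 0, 0, 0, 0, 1, -1, 0, 0, 0, 0, 1, -1, 0, 0, 0, 0, 1, 0, 0, 0, 0, 0]" by (simp add: fbvt_def)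
lemma fbvt_10: "fbvt ! 10 = [0, 0, 0, 0, 0, 0, 0, 0, 0, 0, 0, 0, 0, 0, 0, -1, 0, 1, 0, 0, 0, 1, 0, -1, 0, 0, 0, -1, 0, 0]" by (simp add: fbvt_def)
lemma fbvt_11: "fbvt ! 11 = [0, 0, 0, 0, 0, 0, 0, 0, 0, 0, 0, 0, 0, 0, 0, 0, 0, 0, -1, 0, 1, 0, -1, 1, 0, 0, 0, 0, 0, -1]" by (simp add: fbvt_def)
lemma dlt_0: "dlt ! 0 = [1, 1, 1, -1, -1, -1, -1, -1, -1, 1, 1, 1, -1, -1, -1, 1, 1, 1, 1, 1, 1, -1, -1, -1, 0, 0, 0, 0, 0, 0]" by (simp add: dlt_def)
lemma dlt_1: "dlt ! 1 = [1, 1, 1, 0, -1, 1, 0, -1, 1, -1, 1, 0, 0, -1, 1, -1, 1, 0, -1, 1, 0, -1, -1, -1, 1, 1, 1, 1, 1, 1]" by (simp add: dlt_def)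
lemma dlt_1s: "dlt ! Suc 0 = [1, 1, 1, 0, -1, 1, 0, -1, 1, -1, 1, 0, 0, -1, 1, -1, 1, 0, -1, 1, 0, -1, -1, -1, 1, 1, 1, 1, 1, 1]" by (simp add: dlt_def)
lemma dlt_2: "dlt ! 2 = [-1, -1, -1, 1, 1, 1, 1, 1, 1, -1, -1, -1, 1, 1, 1, -1, -1, -1, -1, -1, -1, 1, 1, 1, 0, 0, 0, 0, 0, 0]" by (simp add: dlt_def)
lemma dlt_3: "dlt ! 3 = [-1, 0, 1, 1, 1, 1, 1, -1, 0, -1, 0, 1, -1, 0, 1, 0, 1, -1, -1, -1, -1, 1, 0, -1, 1, 1, -1, 1, 1, -1]" by (simp add: dlt_def)
lemma dlt_4: "dlt ! 4 = [1, -1, 0, -1, 0, 1, 1, 1, 1, 0, 1, -1, 1, -1, 0, -1, -1, -1, -1, 0, 1, -1, 1, 0, -1, 1, 1, -1, 1, 1]" by (simp add: dlt_def)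
lemma dlt_5: "dlt ! 5 = [0, -1, 1, -1, 1, 0, 1, 0, -1, 1, 1, 1, -1, -1, -1, 1, 0, -1, 0, -1, 1, 0, 1, -1, -1, 1, -1, -1, 1, -1]" by (simp add: dlt_def)
lemma dlt_6: "dlt ! 6 = [0, 1, -1, 1, -1, 0, -1, 0, 1, -1, -1, -1, 1, 1, 1, -1, 0, 1, 0, 1, -1, 0, -1, 1, 1, -1, 1, 1, -1, 1]" by (simp add: dlt_def)
lemma dlt_7: "dlt ! 7 = [-1, 1, 0, 1, 0, -1, -1, -1, -1, 0, -1, 1, -1, 1, 0, 1, 1, 1, 1, 0, -1, 1, -1, 0, 1, -1, -1, 1, -1, -1]" by (simp add: dlt_def)
lemma dlt_8: "dlt ! 8 = [1, 0, -1, -1, -1, -1, -1, 1, 0, 1, 0, -1, 1, 0, -1, 0, -1, 1, 1, 1, 1, -1, 0, 1, -1, -1, 1, -1, -1, 1]" by (simp add: dlt_def)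
lemma dlt_9: "dlt ! 9 = [-1, -1, -1, 0, 1, -1, 0, 1, -1, 1, -1, 0, 0, 1, -1, 1, -1, 0, 1, -1, 0, 1, 1, 1, -1, -1, -1, -1, -1, -1]" by (simp add: dlt_def)
lemmas tabs2 = fbvt_0 fbvt_1 fbvt_2 fbvt_3 fbvt_4 fbvt_5 fbvt_6 fbvt_7 fbvt_8 fbvt_9 fbvt_10 fbvt_11 fbvt_1s dlt_0 dlt_1 dlt_2 dlt_3 dlt_4 dlt_5 dlt_6 dlt_7 dlt_8 dlt_9 dlt_1s

definition ecp :: "nat \<times> nat \<Rightarrow> chain1" where "ecp p = edge_chain (vx (fst p), vx (snd p))"
definition pairs :: "nat list \<Rightarrow> (nat \<times> nat) list" where
  "pairs t = concat (map (\<lambda>i. map (\<lambda>j. (i,j)) (nb!i)) t)"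
fun idx :: "'a \<Rightarrow> 'a list \<Rightarrow> nat" where
  "idx x [] = 0" | "idx x (y#ys) = (if x = y then 0 else Suc (idx x ys))"
definition okp :: "nat \<times> nat \<Rightarrow> bool" where "okp p = (p \<in> set ce \<or> (snd p, fst p) \<in> set ce)"
definition cidx :: "nat \<times> nat \<Rightarrow> nat" where
  "cidx p = (if p \<in> set ce then idx p ce else idx (snd p, fst p) ce)"
definition csg :: "nat \<times> nat \<Rightarrow> int" where "csg p = (if p \<in> set ce then 1 else -1)"
definition addat :: "nat \<Rightarrow> int \<Rightarrow> int list \<Rightarrow> int list" where "addat i s c = c[i := c!i + s]"
lemma addat_simps: "addat 0 s (x#xs) = (x+s) # xs" "addat (Suc i) s (x#xs) = x # addat i s xs"
  by (simp_all add: addat_def)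
fun coefv :: "(nat \<times> nat) list \<Rightarrow> int list" where
  "coefv [] = [0,0,0,0,0,0,0,0,0,0,0,0,0,0,0,0,0,0,0,0,0,0,0,0,0,0,0,0,0,0]"
| "coefv (p#L) = addat (cidx p) (csg p) (coefv L)"

lemma z30_rep: "[0,0,0,0,0,0,0,0,0,0,0,0,0,0,0,0,0,0,0,0,0,0,0,0,0,0,0,0,0,0] = replicate 30 (0::int)" by (simp add: numeral_eq_Suc)

lemma idx_props: "x \<in> set ys \<Longrightarrow> idx x ys < length ys \<and> ys ! idx x ys = x"
  by (induction ys) auto

lemma length_ce: "length ce = 30" by (simp add: ce_def)

lemma coefv_len: "length (coefv L) = 30" by (induction L) (auto simp: numeral_eq_Suc addat_def)

lemma ec_swap: "a \<noteq> b \<Longrightarrow> edge_chain (b,a) w = - edge_chain (a,b) w"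
  unfolding edge_chain_def by auto

lemma ecp_dec:
  assumes "okp p" "vx (fst p) \<noteq> vx (snd p)"
  shows "ecp p w = csg p * ecp (ce ! cidx p) w \<and> cidx p < 30"
proof (cases "p \<in> set ce")
  case True thus ?thesis using idx_props[OF True] length_ce by (simp add: cidx_def csg_def)
next
  case False
  hence m: "(snd p, fst p) \<in> set ce" using assms(1) unfolding okp_def by auto
  have "ce ! cidx p = (snd p, fst p)" "cidx p < 30" using idx_props[OF m] False length_ce by (auto simp: cidx_def)
  thus ?thesis using False ec_swap[OF assms(2), of w] unfolding ecp_def csg_def by (cases p) auto
qed

lemma sum_coefv:
  assumes "\<forall>p\<in>set L. okp p \<and> vx (fst p) \<noteq> vx (snd p)"
  shows "sum_list (map (\<lambda>p. ecp p w) L) = (\<Sum>k<30. coefv L ! k * ecp (ce!k) w)"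
  using assms
proof (induction L)
  case Nil thus ?case by (simp add: z30_rep)
next
  case (Cons p L)
  have d: "ecp p w = csg p * ecp (ce ! cidx p) w" and c: "cidx p < 30" using ecp_dec Cons.prems by auto
  have nth: "coefv (p#L) ! k = coefv L ! k + (if k = cidx p then csg p else 0)" if "k < 30" for k
    using that coefv_len[of L] by (auto simp: nth_list_update addat_def)
  have "(\<Sum>k<30. coefv (p#L) ! k * ecp (ce!k) w) =
        (\<Sum>k<30. coefv L ! k * ecp (ce!k) w + (if k = cidx p then csg p * ecp (ce!k) w else 0))"
  proof (rule sum.cong[OF refl])
    fix k assume "k \<in> {..<30::nat}"
    hence k: "k < 30" by simp
    show "coefv (p#L) ! k * ecp (ce!k) w = coefv L ! k * ecp (ce!k) w + (if k = cidx p then csg p * ecp (ce!k) w else 0)"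
      by (simp only: nth[OF k]) (simp add: distrib_right)
  qed
  also have "\<dots> = (\<Sum>k<30. coefv L ! k * ecp (ce!k) w) + csg p * ecp (ce ! cidx p) w"
    using c by (simp add: sum.distrib)
  finally show ?case using Cons d by simp
qed

lemma sum_fun_apply: "(\<Sum>x\<in>A. f x) w = (\<Sum>x\<in>A. f x w)"
  by (induction A rule: infinite_finite_induct) (auto simp: zero_fun_def)

lemma star_set: "i < 20 \<Longrightarrow> {y\<in>dodeca_oedges. fst y = vx i} = (\<lambda>j. (vx i, vx j)) ` set (nb!i)"
proof -
  assume i: "i < 20"
  show ?thesis
  proof
    show "{y\<in>dodeca_oedges. fst y = vx i} \<subseteq> (\<lambda>j. (vx i, vx j)) ` set (nb!i)"
      unfolding oedges_eq using vx_eq_iff i by auto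
    show "(\<lambda>j. (vx i, vx j)) ` set (nb!i) \<subseteq> {y\<in>dodeca_oedges. fst y = vx i}"
      unfolding oedges_eq using i by auto
  qed
qed

lemma inj_nb: "i < 20 \<Longrightarrow> inj_on vx (set (nb!i))"
  using nb_lt inj_vx by (meson inj_on_subset lessThan_iff subsetI)

lemma star_sum: "i < 20 \<Longrightarrow> (\<Sum>y\<in>{y\<in>dodeca_oedges. fst y = vx i}. edge_chain y) w = sum_list (map (\<lambda>j. ecp (i,j) w) (nb!i))"
proof -
  assume i: "i < 20"
  have inj: "inj_on (\<lambda>j. (vx i, vx j)) (set (nb!i))" using inj_nb[OF i] by (auto simp: inj_on_def)
  have "(\<Sum>y\<in>{y\<in>dodeca_oedges. fst y = vx i}. edge_chain y) w = (\<Sum>j\<in>set (nb!i). edge_chain (vx i, vx j) w)"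
    unfolding star_set[OF i] sum_fun_apply by (simp add: sum.reindex[OF inj])
  also have "\<dots> = sum_list (map (\<lambda>j. ecp (i,j) w) (nb!i))"
    using nb_facts(4)[OF i] by (simp add: sum_list_distinct_conv_sum_set ecp_def)
  finally show ?thesis .
qed

lemma sum_list_concat_map: "sum_list (map f (concat xss)) = sum_list (map (\<lambda>xs. sum_list (map f xs)) xss)"
  by (induction xss) auto

lemma side_sum:
  assumes "set t \<subseteq> {..<20}" "distinct t"
  shows "(\<Sum>x\<in>vx ` set t. \<Sum>y\<in>{y\<in>dodeca_oedges. fst y = x}. edge_chain y) w = sum_list (map (\<lambda>p. ecp p w) (pairs t))"
proof -
  have inj: "inj_on vx (set t)" using assms(1) inj_vx inj_on_subset by blast
  have "(\<Sum>x\<in>vx ` set t. \<Sum>y\<in>{y\<in>dodeca_oedges. fst y = x}. edge_chain y) w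
      = (\<Sum>i\<in>set t. (\<Sum>y\<in>{y\<in>dodeca_oedges. fst y = vx i}. edge_chain y) w)"
    unfolding sum_fun_apply[of _ "vx ` set t"] by (simp add: sum.reindex[OF inj])
  also have "\<dots> = (\<Sum>i\<in>set t. sum_list (map (\<lambda>j. ecp (i,j) w) (nb!i)))"
    using assms(1) star_sum[of _ w] by (intro sum.cong) auto
  also have "\<dots> = sum_list (map (\<lambda>i. sum_list (map (\<lambda>j. ecp (i,j) w) (nb!i))) t)"
    using assms(2) by (simp add: sum_list_distinct_conv_sum_set)
  also have "\<dots> = sum_list (map (\<lambda>p. ecp p w) (pairs t))"
    unfolding pairs_def sum_list_concat_map by (simp add: comp_def)
  finally show ?thesis .
qed

lemma set_pairs: "set (pairs t) = {(i,j). i \<in> set t \<and> j \<in> set (nb!i)}"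
  unfolding pairs_def by auto

lemma pairs_ok_pre:
  assumes "set t \<subseteq> {..<20}" "\<forall>i<20. \<forall>j\<in>set (nb!i). okp (i,j)"
  shows "\<forall>p\<in>set (pairs t). okp p \<and> vx (fst p) \<noteq> vx (snd p)"
proof
  fix p assume "p \<in> set (pairs t)"
  then obtain i j where p: "p = (i,j)" "i \<in> set t" "j \<in> set (nb!i)" unfolding set_pairs by auto
  have i: "i < 20" using p assms(1) by auto
  have "j < 20" "i \<noteq> j" using nb_lt[OF i p(3)] nb_facts(3)[OF i] p(3) by auto
  thus "okp p \<and> vx (fst p) \<noteq> vx (snd p)" using assms(2) i p vx_eq_iff by auto
qed

definition oel :: "(nat \<times> nat) list" where "oel = pairs [0,1,2,3,4,5,6,7,8,9,10,11,12,13,14,15,16,17,18,19]"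
lemma oel_set: "set oel = {(i,j). i < 20 \<and> j \<in> set (nb!i)}"
proof -
  have "set [0::nat,1,2,3,4,5,6,7,8,9,10,11,12,13,14,15,16,17,18,19] = {..<20}" by code_simp
  thus ?thesis unfolding oel_def set_pairs by auto
qed
lemma oel_lit: "oel = pairs [0,1,2,3,4,5,6,7,8,9,10,11,12,13,14,15,16,17,18,19]" by (rule oel_def)

definition chk_ok :: bool where "chk_ok = (\<forall>p\<in>set oel. okp p)"
lemma chk_ok: chk_ok unfolding chk_ok_def oel_def pairs_def okp_def ce_def by (simp add: tabs)

lemma okp_all: "\<forall>i<20. \<forall>j\<in>set (nb!i). okp (i,j)"
  using chk_ok unfolding chk_ok_def oel_set by auto

lemma vcross_sum: "cross3 (vx a) (vx b) \<bullet> vec3 s = zr (vdot (vcross (vt!a) (vt!b)) s)"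
  by (simp add: vx_def vec3_cross vec3_inner)

definition fbe :: "nat \<Rightarrow> (nat \<times> nat) list" where
  "fbe j = filter (\<lambda>p. fst p \<in> set (fcs!j) \<and> snd p \<in> set (fcs!j) \<and> zpos (vdot (vcross (vt!(fst p)) (vt!(snd p))) (fsum j))) oel"

lemmas evs3 = addat_simps pairs_def cidx_def csg_def okp_def ce_def fsum_def

definition chk_fb :: "nat \<Rightarrow> bool" where
  "chk_fb j = ((\<forall>p\<in>set oel. fst p \<in> set (fcs!j) \<and> snd p \<in> set (fcs!j) \<longrightarrow>
       zpos (vdot (vcross (vt!(fst p)) (vt!(snd p))) (fsum j)) \<or> zpos (zsub (0,0) (vdot (vcross (vt!(fst p)) (vt!(snd p))) (fsum j))))
     \<and> coefv (fbe j) = fbvt!j)"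

lemma chk_fb_0: "chk_fb 0"
  by (simp only: chk_fb_def fbe_def tabs tabs2 oel_lit) (simp add: evs evs2 evs3)
lemma chk_fb_1: "chk_fb 1"
  by (simp only: chk_fb_def fbe_def tabs tabs2 oel_lit) (simp add: evs evs2 evs3)
lemma chk_fb_2: "chk_fb 2"
  by (simp only: chk_fb_def fbe_def tabs tabs2 oel_lit) (simp add: evs evs2 evs3)
lemma chk_fb_3: "chk_fb 3"
  by (simp only: chk_fb_def fbe_def tabs tabs2 oel_lit) (simp add: evs evs2 evs3)
lemma chk_fb_4: "chk_fb 4"
  by (simp only: chk_fb_def fbe_def tabs tabs2 oel_lit) (simp add: evs evs2 evs3)
lemma chk_fb_5: "chk_fb 5"
  by (simp only: chk_fb_def fbe_def tabs tabs2 oel_lit) (simp add: evs evs2 evs3)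
lemma chk_fb_6: "chk_fb 6"
  by (simp only: chk_fb_def fbe_def tabs tabs2 oel_lit) (simp add: evs evs2 evs3)
lemma chk_fb_7: "chk_fb 7"
  by (simp only: chk_fb_def fbe_def tabs tabs2 oel_lit) (simp add: evs evs2 evs3)
lemma chk_fb_8: "chk_fb 8"
  by (simp only: chk_fb_def fbe_def tabs tabs2 oel_lit) (simp add: evs evs2 evs3)
lemma chk_fb_9: "chk_fb 9"
  by (simp only: chk_fb_def fbe_def tabs tabs2 oel_lit) (simp add: evs evs2 evs3)
lemma chk_fb_10: "chk_fb 10"
  by (simp only: chk_fb_def fbe_def tabs tabs2 oel_lit) (simp add: evs evs2 evs3)
lemma chk_fb_11: "chk_fb 11"
  by (simp only: chk_fb_def fbe_def tabs tabs2 oel_lit) (simp add: evs evs2 evs3)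


lemma solt_0: "solt ! 0 = [[0, 1, 2, 1, 2, 0, 2, 2, 0, 1, 1, 0], [2, 0, 1, 0, 1, 2, 1, 1, 2, 0, 0, 2], [1, 2, 0, 2, 0, 1, 0, 0, 1, 2, 2, 1], [2, 0, 1, 0, 1, 2, 1, 1, 2, 0, 0, 2], [1, 2, 0, 2, 0, 1, 0, 0, 1, 2, 2, 1], [0, 1, 2, 1, 2, 0, 2, 2, 0, 1, 1, 0], [1, 2, 0, 2, 0, 1, 0, 0, 1, 2, 2, 1], [1, 2, 0, 2, 0, 1, 0, 0, 1, 2, 2, 1], [0, 1, 2, 1, 2, 0, 2, 2, 0, 1, 1, 0], [2, 0, 1, 0, 1, 2, 1, 1, 2, 0, 0, 2], [2, 0, 1, 0, 1, 2, 1, 1, 2, 0, 0, 2], [0, 1, 2, 1, 2, 0, 2, 2, 0, 1, 1, 0]]" by (simp add: solt_def)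
lemma solt_1: "solt ! 1 = [[0, 1, 2, 2, 0, 1, 0, 2, 1, 2, 1, 0], [2, 0, 1, 1, 2, 0, 2, 1, 0, 1, 0, 2], [1, 2, 0, 0, 1, 2, 1, 0, 2, 0, 2, 1], [1, 2, 0, 0, 1, 2, 1, 0, 2, 0, 2, 1], [0, 1, 2, 2, 0, 1, 0, 2, 1, 2, 1, 0], [2, 0, 1, 1, 2, 0, 2, 1, 0, 1, 0, 2], [0, 1, 2, 2, 0, 1, 0, 2, 1, 2, 1, 0], [1, 2, 0, 0, 1, 2, 1, 0, 2, 0, 2, 1], [2, 0, 1, 1, 2, 0, 2, 1, 0, 1, 0, 2], [1, 2, 0, 0, 1, 2, 1, 0, 2, 0, 2, 1], [2, 0, 1, 1, 2, 0, 2, 1, 0, 1, 0, 2], [0, 1, 2, 2, 0, 1, 0, 2, 1, 2, 1, 0]]" by (simp add: solt_def)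
lemma solt_1s: "solt ! Suc 0 = [[0, 1, 2, 2, 0, 1, 0, 2, 1, 2, 1, 0], [2, 0, 1, 1, 2, 0, 2, 1, 0, 1, 0, 2], [1, 2, 0, 0, 1, 2, 1, 0, 2, 0, 2, 1], [1, 2, 0, 0, 1, 2, 1, 0, 2, 0, 2, 1], [0, 1, 2, 2, 0, 1, 0, 2, 1, 2, 1, 0], [2, 0, 1, 1, 2, 0, 2, 1, 0, 1, 0, 2], [0, 1, 2, 2, 0, 1, 0, 2, 1, 2, 1, 0], [1, 2, 0, 0, 1, 2, 1, 0, 2, 0, 2, 1], [2, 0, 1, 1, 2, 0, 2, 1, 0, 1, 0, 2], [1, 2, 0, 0, 1, 2, 1, 0, 2, 0, 2, 1], [2, 0, 1, 1, 2, 0, 2, 1, 0, 1, 0, 2], [0, 1, 2, 2, 0, 1, 0, 2, 1, 2, 1, 0]]" by (simp add: solt_def)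
lemma solt_2: "solt ! 2 = [[0, 2, 1, 2, 1, 0, 1, 1, 0, 2, 2, 0], [1, 0, 2, 0, 2, 1, 2, 2, 1, 0, 0, 1], [2, 1, 0, 1, 0, 2, 0, 0, 2, 1, 1, 2], [1, 0, 2, 0, 2, 1, 2, 2, 1, 0, 0, 1], [2, 1, 0, 1, 0, 2, 0, 0, 2, 1, 1, 2], [0, 2, 1, 2, 1, 0, 1, 1, 0, 2, 2, 0], [2, 1, 0, 1, 0, 2, 0, 0, 2, 1, 1, 2], [2, 1, 0, 1, 0, 2, 0, 0, 2, 1, 1, 2], [0, 2, 1, 2, 1, 0, 1, 1, 0, 2, 2, 0], [1, 0, 2, 0, 2, 1, 2, 2, 1, 0, 0, 1], [1, 0, 2, 0, 2, 1, 2, 2, 1, 0, 0, 1], [0, 2, 1, 2, 1, 0, 1, 1, 0, 2, 2, 0]]" by (simp add: solt_def)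
lemma solt_3: "solt ! 3 = [[0, 1, 0, 2, 1, 2, 1, 0, 2, 2, 1, 0], [2, 0, 2, 1, 0, 1, 0, 2, 1, 1, 0, 2], [0, 1, 0, 2, 1, 2, 1, 0, 2, 2, 1, 0], [1, 2, 1, 0, 2, 0, 2, 1, 0, 0, 2, 1], [2, 0, 2, 1, 0, 1, 0, 2, 1, 1, 0, 2], [1, 2, 1, 0, 2, 0, 2, 1, 0, 0, 2, 1], [2, 0, 2, 1, 0, 1, 0, 2, 1, 1, 0, 2], [0, 1, 0, 2, 1, 2, 1, 0, 2, 2, 1, 0], [1, 2, 1, 0, 2, 0, 2, 1, 0, 0, 2, 1], [1, 2, 1, 0, 2, 0, 2, 1, 0, 0, 2, 1], [2, 0, 2, 1, 0, 1, 0, 2, 1, 1, 0, 2], [0, 1, 0, 2, 1, 2, 1, 0, 2, 2, 1, 0]]" by (simp add: solt_def)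
lemma solt_4: "solt ! 4 = [[0, 0, 1, 2, 2, 1, 2, 1, 1, 2, 0, 0], [0, 0, 1, 2, 2, 1, 2, 1, 1, 2, 0, 0], [2, 2, 0, 1, 1, 0, 1, 0, 0, 1, 2, 2], [1, 1, 2, 0, 0, 2, 0, 2, 2, 0, 1, 1], [1, 1, 2, 0, 0, 2, 0, 2, 2, 0, 1, 1], [2, 2, 0, 1, 1, 0, 1, 0, 0, 1, 2, 2], [1, 1, 2, 0, 0, 2, 0, 2, 2, 0, 1, 1], [2, 2, 0, 1, 1, 0, 1, 0, 0, 1, 2, 2], [2, 2, 0, 1, 1, 0, 1, 0, 0, 1, 2, 2], [1, 1, 2, 0, 0, 2, 0, 2, 2, 0, 1, 1], [0, 0, 1, 2, 2, 1, 2, 1, 1, 2, 0, 0], [0, 0, 1, 2, 2, 1, 2, 1, 1, 2, 0, 0]]" by (simp add: solt_def)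
lemma solt_5: "solt ! 5 = [[0, 1, 1, 0, 2, 2, 2, 1, 2, 0, 1, 0], [2, 0, 0, 2, 1, 1, 1, 0, 1, 2, 0, 2], [2, 0, 0, 2, 1, 1, 1, 0, 1, 2, 0, 2], [0, 1, 1, 0, 2, 2, 2, 1, 2, 0, 1, 0], [1, 2, 2, 1, 0, 0, 0, 2, 0, 1, 2, 1], [1, 2, 2, 1, 0, 0, 0, 2, 0, 1, 2, 1], [1, 2, 2, 1, 0, 0, 0, 2, 0, 1, 2, 1], [2, 0, 0, 2, 1, 1, 1, 0, 1, 2, 0, 2], [1, 2, 2, 1, 0, 0, 0, 2, 0, 1, 2, 1], [0, 1, 1, 0, 2, 2, 2, 1, 2, 0, 1, 0], [2, 0, 0, 2, 1, 1, 1, 0, 1, 2, 0, 2], [0, 1, 1, 0, 2, 2, 2, 1, 2, 0, 1, 0]]" by (simp add: solt_def)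
lemma solt_6: "solt ! 6 = [[0, 2, 2, 0, 1, 1, 1, 2, 1, 0, 2, 0], [1, 0, 0, 1, 2, 2, 2, 0, 2, 1, 0, 1], [1, 0, 0, 1, 2, 2, 2, 0, 2, 1, 0, 1], [0, 2, 2, 0, 1, 1, 1, 2, 1, 0, 2, 0], [2, 1, 1, 2, 0, 0, 0, 1, 0, 2, 1, 2], [2, 1, 1, 2, 0, 0, 0, 1, 0, 2, 1, 2], [2, 1, 1, 2, 0, 0, 0, 1, 0, 2, 1, 2], [1, 0, 0, 1, 2, 2, 2, 0, 2, 1, 0, 1], [2, 1, 1, 2, 0, 0, 0, 1, 0, 2, 1, 2], [0, 2, 2, 0, 1, 1, 1, 2, 1, 0, 2, 0], [1, 0, 0, 1, 2, 2, 2, 0, 2, 1, 0, 1], [0, 2, 2, 0, 1, 1, 1, 2, 1, 0, 2, 0]]" by (simp add: solt_def)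
lemma solt_7: "solt ! 7 = [[0, 0, 2, 1, 1, 2, 1, 2, 2, 1, 0, 0], [0, 0, 2, 1, 1, 2, 1, 2, 2, 1, 0, 0], [1, 1, 0, 2, 2, 0, 2, 0, 0, 2, 1, 1], [2, 2, 1, 0, 0, 1, 0, 1, 1, 0, 2, 2], [2, 2, 1, 0, 0, 1, 0, 1, 1, 0, 2, 2], [1, 1, 0, 2, 2, 0, 2, 0, 0, 2, 1, 1], [2, 2, 1, 0, 0, 1, 0, 1, 1, 0, 2, 2], [1, 1, 0, 2, 2, 0, 2, 0, 0, 2, 1, 1], [1, 1, 0, 2, 2, 0, 2, 0, 0, 2, 1, 1], [2, 2, 1, 0, 0, 1, 0, 1, 1, 0, 2, 2], [0, 0, 2, 1, 1, 2, 1, 2, 2, 1, 0, 0], [0, 0, 2, 1, 1, 2, 1, 2, 2, 1, 0, 0]]" by (simp add: solt_def)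
lemma solt_8: "solt ! 8 = [[0, 2, 0, 1, 2, 1, 2, 0, 1, 1, 2, 0], [1, 0, 1, 2, 0, 2, 0, 1, 2, 2, 0, 1], [0, 2, 0, 1, 2, 1, 2, 0, 1, 1, 2, 0], [2, 1, 2, 0, 1, 0, 1, 2, 0, 0, 1, 2], [1, 0, 1, 2, 0, 2, 0, 1, 2, 2, 0, 1], [2, 1, 2, 0, 1, 0, 1, 2, 0, 0, 1, 2], [1, 0, 1, 2, 0, 2, 0, 1, 2, 2, 0, 1], [0, 2, 0, 1, 2, 1, 2, 0, 1, 1, 2, 0], [2, 1, 2, 0, 1, 0, 1, 2, 0, 0, 1, 2], [2, 1, 2, 0, 1, 0, 1, 2, 0, 0, 1, 2], [1, 0, 1, 2, 0, 2, 0, 1, 2, 2, 0, 1], [0, 2, 0, 1, 2, 1, 2, 0, 1, 1, 2, 0]]" by (simp add: solt_def)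
lemma solt_9: "solt ! 9 = [[0, 2, 1, 1, 0, 2, 0, 1, 2, 1, 2, 0], [1, 0, 2, 2, 1, 0, 1, 2, 0, 2, 0, 1], [2, 1, 0, 0, 2, 1, 2, 0, 1, 0, 1, 2], [2, 1, 0, 0, 2, 1, 2, 0, 1, 0, 1, 2], [0, 2, 1, 1, 0, 2, 0, 1, 2, 1, 2, 0], [1, 0, 2, 2, 1, 0, 1, 2, 0, 2, 0, 1], [0, 2, 1, 1, 0, 2, 0, 1, 2, 1, 2, 0], [2, 1, 0, 0, 2, 1, 2, 0, 1, 0, 1, 2], [1, 0, 2, 2, 1, 0, 1, 2, 0, 2, 0, 1], [2, 1, 0, 0, 2, 1, 2, 0, 1, 0, 1, 2], [1, 0, 2, 2, 1, 0, 1, 2, 0, 2, 0, 1], [0, 2, 1, 1, 0, 2, 0, 1, 2, 1, 2, 0]]" by (simp add: solt_def)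
lemmas tabs3 = solt_0 solt_1 solt_2 solt_3 solt_4 solt_5 solt_6 solt_7 solt_8 solt_9 solt_1s
lemma all12: "(\<forall>i<12::nat. P i) \<longleftrightarrow> P 0 \<and> P 1 \<and> P 2 \<and> P 3 \<and> P 4 \<and> P 5 \<and> P 6 \<and> P 7 \<and> P 8 \<and> P 9 \<and> P 10 \<and> P 11"
proof
  assume "\<forall>i<12::nat. P i" thus "P 0 \<and> P 1 \<and> P 2 \<and> P 3 \<and> P 4 \<and> P 5 \<and> P 6 \<and> P 7 \<and> P 8 \<and> P 9 \<and> P 10 \<and> P 11" by simp
next
  assume h: "P 0 \<and> P 1 \<and> P 2 \<and> P 3 \<and> P 4 \<and> P 5 \<and> P 6 \<and> P 7 \<and> P 8 \<and> P 9 \<and> P 10 \<and> P 11"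
  show "\<forall>i<12::nat. P i"
  proof (intro allI impI)
    fix i :: nat assume "i < 12"
    hence "i = 0 \<or> i = 1 \<or> i = 2 \<or> i = 3 \<or> i = 4 \<or> i = 5 \<or> i = 6 \<or> i = 7 \<or> i = 8 \<or> i = 9 \<or> i = 10 \<or> i = 11" by presburger
    thus "P i" using h by blast
  qed
qed


fun vlin :: "int list \<Rightarrow> int list list \<Rightarrow> int list" where
  "vlin (c#cs) (v#vs) = map2 (\<lambda>x y. c * x + y) v (vlin cs vs)"
| "vlin _ _ = [0,0,0,0,0,0,0,0,0,0,0,0,0,0,0,0,0,0,0,0,0,0,0,0,0,0,0,0,0,0]"

lemma vlin_nth:
  assumes "length cs = length vs" "\<forall>v\<in>set vs. length v = 30" "k < 30"
  shows "vlin cs vs ! k = (\<Sum>j<length cs. cs!j * vs!j!k) \<and> length (vlin cs vs) = 30"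
  using assms
proof (induction cs vs rule: vlin.induct)
  case (1 c cs v vs)
  hence IH: "vlin cs vs ! k = (\<Sum>j<length cs. cs!j * vs!j!k)" "length (vlin cs vs) = 30" by auto
  have lv: "length v = 30" using 1 by auto
  have "vlin (c#cs) (v#vs) ! k = c * v!k + vlin cs vs ! k" using IH(2) lv \<open>k < 30\<close> by simp
  also have "\<dots> = (\<Sum>j<length (c#cs). (c#cs)!j * (v#vs)!j!k)"
    unfolding IH(1) length_Cons sum.lessThan_Suc_shift by simp
  finally show ?case using IH(2) lv by simp
qed (auto simp: z30_rep)

definition chk_dl :: "nat \<Rightarrow> bool" where
  "chk_dl t = (map2 (-) (coefv (pairs (tets!t))) (coefv (pairs (map (\<lambda>i. ngl!i) (tets!t)))) = dlt!t)"

definition chk_fin :: "nat \<Rightarrow> bool" where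
  "chk_fin t = (length (solt!t) = 12 \<and> length (dlt!t) = 30 \<and> (\<forall>j0<12. length (solt!t!j0) = 12 \<and> solt!t!j0!j0 = 0 \<and> solt!t!j0!(ngfl!j0) = 0 \<and>
      map (\<lambda>x. x mod 3) (dlt!t) = map (\<lambda>x. x mod 3) (vlin (solt!t!j0) fbvt)))"

definition chk_ngf :: "nat \<Rightarrow> bool" where
  "chk_ngf j = (ngfl!j < 12 \<and> set (map (\<lambda>i. ngl!i) (fcs!j)) = set (fcs!(ngfl!j)) \<and>
     (\<forall>j'<12. j' \<noteq> j \<longrightarrow> hd (filter (\<lambda>m. m \<notin> set (fcs!j')) (fcs!j)) \<in> set (fcs!j) - set (fcs!j')))"

definition chk_fbv :: bool where "chk_fbv = (length fbvt = 12 \<and> (\<forall>v\<in>set fbvt. length v = 30))"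
lemma chk_fbv: chk_fbv unfolding chk_fbv_def fbvt_def by simp

lemma chk_dl_0: "chk_dl 0"
  by (simp only: chk_dl_def tetss tabs tabs2) (simp add: evs evs2 evs3)
lemma chk_dl_1: "chk_dl 1"
  by (simp only: chk_dl_def tetss tabs tabs2) (simp add: evs evs2 evs3)
lemma chk_dl_2: "chk_dl 2"
  by (simp only: chk_dl_def tetss tabs tabs2) (simp add: evs evs2 evs3)
lemma chk_dl_3: "chk_dl 3"
  by (simp only: chk_dl_def tetss tabs tabs2) (simp add: evs evs2 evs3)
lemma chk_dl_4: "chk_dl 4"
  by (simp only: chk_dl_def tetss tabs tabs2) (simp add: evs evs2 evs3)
lemma chk_dl_5: "chk_dl 5"
  by (simp only: chk_dl_def tetss tabs tabs2) (simp add: evs evs2 evs3)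
lemma chk_dl_6: "chk_dl 6"
  by (simp only: chk_dl_def tetss tabs tabs2) (simp add: evs evs2 evs3)
lemma chk_dl_7: "chk_dl 7"
  by (simp only: chk_dl_def tetss tabs tabs2) (simp add: evs evs2 evs3)
lemma chk_dl_8: "chk_dl 8"
  by (simp only: chk_dl_def tetss tabs tabs2) (simp add: evs evs2 evs3)
lemma chk_dl_9: "chk_dl 9"
  by (simp only: chk_dl_def tetss tabs tabs2) (simp add: evs evs2 evs3)
lemma chk_fin_0: "chk_fin 0"
  by (simp only: chk_fin_def all12 tabs tabs2 tabs3) (simp add: evs evs3 fbvt_def)
lemma chk_fin_1: "chk_fin 1"
  by (simp only: chk_fin_def all12 tabs tabs2 tabs3) (simp add: evs evs3 fbvt_def)
lemma chk_fin_2: "chk_fin 2"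
  by (simp only: chk_fin_def all12 tabs tabs2 tabs3) (simp add: evs evs3 fbvt_def)
lemma chk_fin_3: "chk_fin 3"
  by (simp only: chk_fin_def all12 tabs tabs2 tabs3) (simp add: evs evs3 fbvt_def)
lemma chk_fin_4: "chk_fin 4"
  by (simp only: chk_fin_def all12 tabs tabs2 tabs3) (simp add: evs evs3 fbvt_def)
lemma chk_fin_5: "chk_fin 5"
  by (simp only: chk_fin_def all12 tabs tabs2 tabs3) (simp add: evs evs3 fbvt_def)
lemma chk_fin_6: "chk_fin 6"
  by (simp only: chk_fin_def all12 tabs tabs2 tabs3) (simp add: evs evs3 fbvt_def)
lemma chk_fin_7: "chk_fin 7"
  by (simp only: chk_fin_def all12 tabs tabs2 tabs3) (simp add: evs evs3 fbvt_def)
lemma chk_fin_8: "chk_fin 8"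
  by (simp only: chk_fin_def all12 tabs tabs2 tabs3) (simp add: evs evs3 fbvt_def)
lemma chk_fin_9: "chk_fin 9"
  by (simp only: chk_fin_def all12 tabs tabs2 tabs3) (simp add: evs evs3 fbvt_def)
lemma chk_ngf_0: "chk_ngf 0"
  by (simp only: chk_ngf_def all12 tabs) (simp add: tabs insert_commute)
lemma chk_ngf_1: "chk_ngf 1"
  by (simp only: chk_ngf_def all12 tabs) (simp add: tabs insert_commute)
lemma chk_ngf_2: "chk_ngf 2"
  by (simp only: chk_ngf_def all12 tabs) (simp add: tabs insert_commute)
lemma chk_ngf_3: "chk_ngf 3"
  by (simp only: chk_ngf_def all12 tabs) (simp add: tabs insert_commute)
lemma chk_ngf_4: "chk_ngf 4"
  by (simp only: chk_ngf_def all12 tabs) (simp add: tabs insert_commute)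
lemma chk_ngf_5: "chk_ngf 5"
  by (simp only: chk_ngf_def all12 tabs) (simp add: tabs insert_commute)
lemma chk_ngf_6: "chk_ngf 6"
  by (simp only: chk_ngf_def all12 tabs) (simp add: tabs insert_commute)
lemma chk_ngf_7: "chk_ngf 7"
  by (simp only: chk_ngf_def all12 tabs) (simp add: tabs insert_commute)
lemma chk_ngf_8: "chk_ngf 8"
  by (simp only: chk_ngf_def all12 tabs) (simp add: tabs insert_commute)
lemma chk_ngf_9: "chk_ngf 9"
  by (simp only: chk_ngf_def all12 tabs) (simp add: tabs insert_commute)
lemma chk_ngf_10: "chk_ngf 10"
  by (simp only: chk_ngf_def all12 tabs) (simp add: tabs insert_commute)
lemma chk_ngf_11: "chk_ngf 11"
  by (simp only: chk_ngf_def all12 tabs) (simp add: tabs insert_commute)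
lemma chk_dl: "u < 10 \<Longrightarrow> chk_dl u"
proof -
  assume "u < 10"
  hence "u = 0 \<or> u = 1 \<or> u = 2 \<or> u = 3 \<or> u = 4 \<or> u = 5 \<or> u = 6 \<or> u = 7 \<or> u = 8 \<or> u = 9" by presburger
  thus ?thesis by (elim disjE) (simp_all only: chk_dl_0 chk_dl_1 chk_dl_2 chk_dl_3 chk_dl_4 chk_dl_5 chk_dl_6 chk_dl_7 chk_dl_8 chk_dl_9)
qed
lemma chk_fin: "u < 10 \<Longrightarrow> chk_fin u"
proof -
  assume "u < 10"
  hence "u = 0 \<or> u = 1 \<or> u = 2 \<or> u = 3 \<or> u = 4 \<or> u = 5 \<or> u = 6 \<or> u = 7 \<or> u = 8 \<or> u = 9" by presburger
  thus ?thesis by (elim disjE) (simp_all only: chk_fin_0 chk_fin_1 chk_fin_2 chk_fin_3 chk_fin_4 chk_fin_5 chk_fin_6 chk_fin_7 chk_fin_8 chk_fin_9)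
qed
lemma chk_ngf: "u < 12 \<Longrightarrow> chk_ngf u"
proof -
  assume "u < 12"
  hence "u = 0 \<or> u = 1 \<or> u = 2 \<or> u = 3 \<or> u = 4 \<or> u = 5 \<or> u = 6 \<or> u = 7 \<or> u = 8 \<or> u = 9 \<or> u = 10 \<or> u = 11" by presburger
  thus ?thesis by (elim disjE) (simp_all only: chk_ngf_0 chk_ngf_1 chk_ngf_2 chk_ngf_3 chk_ngf_4 chk_ngf_5 chk_ngf_6 chk_ngf_7 chk_ngf_8 chk_ngf_9 chk_ngf_10 chk_ngf_11)
qed


lemma chk_fb: "u < 12 \<Longrightarrow> chk_fb u"
proof -
  assume "u < 12"
  hence "u = 0 \<or> u = 1 \<or> u = 2 \<or> u = 3 \<or> u = 4 \<or> u = 5 \<or> u = 6 \<or> u = 7 \<or> u = 8 \<or> u = 9 \<or> u = 10 \<or> u = 11" by presburger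
  thus ?thesis by (elim disjE) (simp_all only: chk_fb_0 chk_fb_1 chk_fb_2 chk_fb_3 chk_fb_4 chk_fb_5 chk_fb_6 chk_fb_7 chk_fb_8 chk_fb_9 chk_fb_10 chk_fb_11)
qed

lemma tets_facts: "t < 10 \<Longrightarrow> set (tets!t) \<subseteq> {..<20} \<and> distinct (tets!t)"
  using chk_tl[of t] unfolding chk_tl_def by auto

lemma neg_img: "set tt \<subseteq> {..<20} \<Longrightarrow> uminus ` vx ` set tt = vx ` set (map (\<lambda>i. ngl!i) tt)"
proof -
  assume a: "set tt \<subseteq> {..<20}"
  have "uminus ` vx ` set tt = (\<lambda>i. - vx i) ` set tt" by (simp add: image_image)
  also have "\<dots> = (\<lambda>i. vx (ngl!i)) ` set tt" using a vx_ngl(1) by (intro image_cong) auto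
  also have "\<dots> = vx ` set (map (\<lambda>i. ngl!i) tt)" by (simp add: image_image)
  finally show ?thesis .
qed

lemma ngl_facts: assumes "set tt \<subseteq> {..<20}" "distinct tt"
  shows "set (map (\<lambda>i. ngl!i) tt) \<subseteq> {..<20}" "distinct (map (\<lambda>i. ngl!i) tt)"
proof -
  show "set (map (\<lambda>i. ngl!i) tt) \<subseteq> {..<20}" using assms(1) vx_ngl(2) by auto
  have "inj_on (\<lambda>i. ngl!i) (set tt)"
  proof (rule inj_onI)
    fix i j assume ij: "i \<in> set tt" "j \<in> set tt" "ngl!i = ngl!j"
    hence "- vx i = - vx j" using vx_ngl(1) assms(1) by (metis lessThan_iff subsetD)
    thus "i = j" using vx_eq_iff ij assms(1) by auto
  qed
  thus "distinct (map (\<lambda>i. ngl!i) tt)" using assms(2) by (simp add: distinct_map)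
qed

lemma map2_nth: "k < length xs \<Longrightarrow> k < length ys \<Longrightarrow> map2 f xs ys ! k = f (xs!k) (ys!k)"
  by simp

lemma delta_val:
  assumes t: "t < 10"
  shows "delta_edge (vx ` set (tets!t)) w = (\<Sum>k<30. dlt!t!k * ecp (ce!k) w)"
proof -
  define tt where "tt = tets!t"
  define tt' where "tt' = map (\<lambda>i. ngl!i) tt"
  have tf: "set tt \<subseteq> {..<20}" "distinct tt" using tets_facts[OF t] tt_def by auto
  have tf': "set tt' \<subseteq> {..<20}" "distinct tt'" using ngl_facts[OF tf] tt'_def by auto
  have "delta_edge (vx ` set tt) w = sum_list (map (\<lambda>p. ecp p w) (pairs tt)) - sum_list (map (\<lambda>p. ecp p w) (pairs tt'))"
    unfolding delta_edge_def minus_apply neg_img[OF tf(1)] tt'_def[symmetric] side_sum[OF tf] side_sum[OF tf'] ..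
  also have "\<dots> = (\<Sum>k<30. coefv (pairs tt) ! k * ecp (ce!k) w) - (\<Sum>k<30. coefv (pairs tt') ! k * ecp (ce!k) w)"
    using sum_coefv[OF pairs_ok_pre[OF tf(1) okp_all]] sum_coefv[OF pairs_ok_pre[OF tf'(1) okp_all]] by simp
  also have "\<dots> = (\<Sum>k<30. (coefv (pairs tt) ! k - coefv (pairs tt') ! k) * ecp (ce!k) w)"
    by (simp add: sum_subtractf left_diff_distrib)
  also have "\<dots> = (\<Sum>k<30. dlt!t!k * ecp (ce!k) w)"
  proof (rule sum.cong[OF refl])
    fix k assume "k \<in> {..<30::nat}"
    hence k: "k < 30" by simp
    have "dlt!t = map2 (-) (coefv (pairs tt)) (coefv (pairs tt'))" using chk_dl[OF t] unfolding chk_dl_def tt_def tt'_def by simp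
    hence "dlt!t!k = coefv (pairs tt) ! k - coefv (pairs tt') ! k" using k coefv_len by simp
    thus "(coefv (pairs tt) ! k - coefv (pairs tt') ! k) * ecp (ce!k) w = dlt!t!k * ecp (ce!k) w" by simp
  qed
  finally show ?thesis unfolding tt_def .
qed

lemma distinct_oel: "distinct oel"
  unfolding oel_def pairs_def by (simp add: tabs)

lemma fb_val:
  assumes j: "j < 12"
  shows "face_boundary (vx ` set (fcs!j)) w = (\<Sum>k<30. fbvt!j!k * ecp (ce!k) w)"
proof -
  define P where "P = fcs!j"
  have cf: "\<forall>m\<in>set P. m < 20" using chk_face[OF j] unfolding chk_face_def P_def by auto
  have sg: "\<forall>p\<in>set oel. fst p \<in> set P \<and> snd p \<in> set P \<longrightarrow>
       zpos (vdot (vcross (vt!(fst p)) (vt!(snd p))) (fsum j)) \<or> zpos (zsub (0,0) (vdot (vcross (vt!(fst p)) (vt!(snd p))) (fsum j)))"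
    and cv: "coefv (fbe j) = fbvt!j" using chk_fb[of j] j unfolding chk_fb_def P_def by auto
  define pm where "pm p = (vx (fst p), vx (snd p))" for p :: "nat \<times> nat"
  have memP: "i < 20 \<Longrightarrow> vx i \<in> vx ` set P \<longleftrightarrow> i \<in> set P" for i
    using cf vx_eq_iff by auto
  have Seq: "{(u, v). (u, v) \<in> dodeca_oedges \<and> u \<in> vx ` set P \<and> v \<in> vx ` set P \<and> (cross3 u v) \<bullet> (\<Sum>w\<in>vx ` set P. w) > 0}
     = pm ` set (fbe j)"
  proof
    show "{(u, v). (u, v) \<in> dodeca_oedges \<and> u \<in> vx ` set P \<and> v \<in> vx ` set P \<and> (cross3 u v) \<bullet> (\<Sum>w\<in>vx ` set P. w) > 0}
       \<subseteq> pm ` set (fbe j)"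
    proof
      fix y assume "y \<in> {(u, v). (u, v) \<in> dodeca_oedges \<and> u \<in> vx ` set P \<and> v \<in> vx ` set P \<and> (cross3 u v) \<bullet> (\<Sum>w\<in>vx ` set P. w) > 0}"
      then obtain u v where y: "y = (u, v)" and a: "(u, v) \<in> dodeca_oedges" "u \<in> vx ` set P" "v \<in> vx ` set P" "cross3 u v \<bullet> (\<Sum>w\<in>vx ` set P. w) > 0"
        by blast
      obtain i i' where ii: "i < 20" "i' \<in> set (nb!i)" "u = vx i" "v = vx i'" using a(1) unfolding oedges_eq by blast
      have i'20: "i' < 20" using nb_lt[OF ii(1,2)] .
      have o: "(i, i') \<in> set oel" using ii oel_set by auto
      have inP: "i \<in> set P" "i' \<in> set P" using memP[OF ii(1)] memP[OF i'20] a(2,3) ii by auto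
      have pos: "zr (vdot (vcross (vt!i) (vt!i')) (fsum j)) > 0"
        using a(4) unfolding ii(3,4) vec3_fsum[OF j, folded P_def, symmetric] vcross_sum .
      have "zpos (vdot (vcross (vt!i) (vt!i')) (fsum j))"
      proof (rule ccontr)
        assume "\<not> ?thesis"
        hence "zpos (zsub (0,0) (vdot (vcross (vt!i) (vt!i')) (fsum j)))" using sg o inP by auto
        hence "zr (zsub (0,0) (vdot (vcross (vt!i) (vt!i')) (fsum j))) > 0" by (rule zpos_sound)
        moreover have "zr (0,0) = 0" by (simp add: zr_def)
        ultimately show False using pos by (simp add: zr_sub)
      qed
      hence "(i, i') \<in> set (fbe j)" unfolding fbe_def using o inP P_def by auto
      thus "y \<in> pm ` set (fbe j)" unfolding pm_def using ii y by force
    qed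
    show "pm ` set (fbe j) \<subseteq> {(u, v). (u, v) \<in> dodeca_oedges \<and> u \<in> vx ` set P \<and> v \<in> vx ` set P \<and> (cross3 u v) \<bullet> (\<Sum>w\<in>vx ` set P. w) > 0}"
    proof
      fix y assume "y \<in> pm ` set (fbe j)"
      then obtain i i' where y: "y = pm (i, i')" and ii0: "(i, i') \<in> set (fbe j)" by auto
      from ii0 have o: "(i, i') \<in> set oel" and inP: "i \<in> set P" "i' \<in> set P" and z: "zpos (vdot (vcross (vt!i) (vt!i')) (fsum j))"
        unfolding fbe_def P_def by auto
      have ii: "i < 20" "i' \<in> set (nb!i)" using o oel_set by auto
      have "(vx i, vx i') \<in> dodeca_oedges" unfolding oedges_eq using ii by blast
      moreover have "cross3 (vx i) (vx i') \<bullet> (\<Sum>w\<in>vx ` set P. w) > 0"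
        unfolding vec3_fsum[OF j, folded P_def, symmetric] vcross_sum using zpos_sound[OF z] .
      ultimately show "y \<in> {(u, v). (u, v) \<in> dodeca_oedges \<and> u \<in> vx ` set P \<and> v \<in> vx ` set P \<and> (cross3 u v) \<bullet> (\<Sum>w\<in>vx ` set P. w) > 0}"
        unfolding pm_def y using inP by auto
    qed
  qed
  have injpm: "inj_on pm (set (fbe j))"
  proof (rule inj_onI)
    fix p q assume pq: "p \<in> set (fbe j)" "q \<in> set (fbe j)" "pm p = pm q"
    have "p \<in> set oel" "q \<in> set oel" using pq unfolding fbe_def by auto
    hence "fst p < 20" "snd p < 20" "fst q < 20" "snd q < 20" using oel_set nb_lt by auto
    thus "p = q" using pq(3) vx_eq_iff unfolding pm_def by (auto simp: prod_eq_iff)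
  qed
  have dfbe: "distinct (fbe j)" unfolding fbe_def using distinct_oel by simp
  have okall: "\<forall>p\<in>set (fbe j). okp p \<and> vx (fst p) \<noteq> vx (snd p)"
  proof
    fix p assume "p \<in> set (fbe j)"
    hence "p \<in> set oel" unfolding fbe_def by auto
    then obtain i i' where "p = (i,i')" "i < 20" "i' \<in> set (nb!i)" using oel_set by auto
    thus "okp p \<and> vx (fst p) \<noteq> vx (snd p)"
      using pairs_ok_pre[of "[i]", OF _ okp_all] by (auto simp: set_pairs)
  qed
  have "face_boundary (vx ` set P) w = (\<Sum>y\<in>pm ` set (fbe j). edge_chain y w)"
    unfolding face_boundary_def Seq sum_fun_apply ..
  also have "\<dots> = (\<Sum>p\<in>set (fbe j). ecp p w)" unfolding sum.reindex[OF injpm] by (simp add: ecp_def pm_def)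
  also have "\<dots> = sum_list (map (\<lambda>p. ecp p w) (fbe j))" using dfbe by (simp add: sum_list_distinct_conv_sum_set)
  also have "\<dots> = (\<Sum>k<30. fbvt!j!k * ecp (ce!k) w)" using sum_coefv[OF okall] cv by simp
  finally show ?thesis unfolding P_def .
qed

lemma mod3_sum:
  fixes a b e :: "nat \<Rightarrow> int"
  assumes "\<forall>k<30. (a k :: int) mod 3 = b k mod 3"
  shows "(\<Sum>k<30. a k * e k) mod 3 = (\<Sum>k<30. b k * e k) mod 3"
proof -
  have "(\<Sum>k<30. a k * e k) mod 3 = (\<Sum>k<30. (a k * e k) mod 3) mod 3" by (simp add: mod_sum_eq)
  also have "\<dots> = (\<Sum>k<30. (b k * e k) mod 3) mod 3"
  proof (rule arg_cong[where f="\<lambda>x. x mod 3"], rule sum.cong[OF refl])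
    fix k assume "k \<in> {..<30::nat}"
    hence ab: "a k mod 3 = b k mod 3" using assms by auto
    have "(a k * e k) mod 3 = ((a k mod 3) * e k) mod 3" by (simp add: mod_mult_left_eq)
    also have "\<dots> = ((b k mod 3) * e k) mod 3" using ab by simp
    also have "\<dots> = (b k * e k) mod 3" by (simp add: mod_mult_left_eq)
    finally show "(a k * e k) mod 3 = (b k * e k) mod 3" .
  qed
  also have "\<dots> = (\<Sum>k<30. b k * e k) mod 3" by (simp add: mod_sum_eq)
  finally show ?thesis .
qed

theorem lemma3p7:
  assumes "S \<in> inscribed_cubes"
    and "E \<subseteq> S" and "card E = 4"
    and "\<forall>u\<in>E. \<forall>v\<in>E. \<not> cube_adj S u v"
    and "z0 \<in> dodeca_faces"
  shows "\<exists>n :: pt set \<Rightarrow> int. \<forall>w.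
           delta_edge E w mod 3 = (\<Sum>z\<in>dodeca_faces - {z0, uminus ` z0}. n z * face_boundary z w) mod 3"
proof -
  obtain t where t: "t < 10" "E = vx ` set (tets!t)" using E_tet[OF assms(1-4)] by blast
  obtain j0 where j0: "j0 < 12" "z0 = vx ` set (fcs!j0)" using assms(5) unfolding faces_eq by blast
  define face where "face j = vx ` set (fcs!j)" for j
  define sol where "sol = solt!t!j0"
  have ng: "ngfl!j0 < 12" "set (map (\<lambda>i. ngl!i) (fcs!j0)) = set (fcs!(ngfl!j0))"
    using chk_ngf[OF j0(1)] unfolding chk_ngf_def by auto
  have fsub: "set (fcs!j) \<subseteq> {..<20}" if "j < 12" for j using chk_face[OF that] unfolding chk_face_def by auto
  have negz: "uminus ` z0 = face (ngfl!j0)"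
    unfolding j0(2) face_def neg_img[OF fsub[OF j0(1)]] ng(2) ..
  have injf: "inj_on face {..<12}"
  proof (rule inj_onI)
    fix j j' assume jj: "j \<in> {..<12::nat}" "j' \<in> {..<12::nat}" "face j = face j'"
    show "j = j'"
    proof (rule ccontr)
      assume ne: "j \<noteq> j'"
      define m where "m = hd (filter (\<lambda>m. m \<notin> set (fcs!j')) (fcs!j))"
      have m: "m \<in> set (fcs!j)" "m \<notin> set (fcs!j')" using chk_ngf[of j] jj ne unfolding chk_ngf_def m_def by auto
      have "vx m \<in> face j'" using m(1) jj(3) unfolding face_def by auto
      then obtain m' where "m' \<in> set (fcs!j')" "vx m = vx m'" unfolding face_def by auto
      moreover have "m < 20" "m' < 20" using fsub jj m(1) \<open>m' \<in> set (fcs!j')\<close> by auto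
      ultimately show False using vx_eq_iff m(2) by auto
    qed
  qed
  have fin: "chk_fin t" by (rule chk_fin[OF t(1)])
  have sol0: "sol!j0 = 0" "sol!(ngfl!j0) = 0" "length sol = 12"
    and smod: "map (\<lambda>x. x mod 3) (dlt!t) = map (\<lambda>x. x mod 3) (vlin sol fbvt)" and ldl: "length (dlt!t) = 30"
    using fin j0(1) unfolding chk_fin_def sol_def by auto
  define n where "n z = (\<Sum>j<12. if z = face j then sol!j else 0)" for z
  have nf: "n (face j) = sol!j" if "j < 12" for j
  proof -
    have "n (face j) = (\<Sum>j'<12. if j' = j then sol!j else 0)"
      unfolding n_def by (rule sum.cong[OF refl]) (use injf that in \<open>auto dest: inj_onD\<close>)
    thus ?thesis using that by simp
  qed
  have fbv: "chk_fbv" by (rule chk_fbv)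
  have vl: "\<forall>k<30. vlin sol fbvt ! k = (\<Sum>j<12. sol!j * fbvt!j!k) \<and> length (vlin sol fbvt) = 30"
    using vlin_nth[of sol fbvt] fbv sol0(3) unfolding chk_fbv_def by auto
  show ?thesis
  proof (intro exI allI)
    fix w
    have A: "dodeca_faces - {z0, uminus ` z0} = face ` ({..<12} - {j0, ngfl!j0})"
    proof -
      have "dodeca_faces = face ` {..<12}" unfolding faces_eq face_def ..
      moreover have "z0 = face j0" using j0 face_def by simp
      ultimately show ?thesis unfolding negz using injf j0(1) ng(1)
        by (simp add: inj_on_image_set_diff[OF injf])
    qed
    have "(\<Sum>z\<in>dodeca_faces - {z0, uminus ` z0}. n z * face_boundary z w)
        = (\<Sum>j\<in>{..<12} - {j0, ngfl!j0}. n (face j) * face_boundary (face j) w)"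
    proof -
      have injA: "inj_on face ({..<12} - {j0, ngfl!j0})" by (rule inj_on_subset[OF injf]) auto
      show ?thesis unfolding A by (simp add: sum.reindex[OF injA])
    qed
    also have "\<dots> = (\<Sum>j\<in>{..<12} - {j0, ngfl!j0}. sol!j * face_boundary (face j) w)"
      using nf by (intro sum.cong refl) auto
    also have "\<dots> = (\<Sum>j<12. sol!j * face_boundary (face j) w)"
      by (rule sum.mono_neutral_left) (use sol0 in auto)
    also have "\<dots> = (\<Sum>j<12. sol!j * (\<Sum>k<30. fbvt!j!k * ecp (ce!k) w))"
      unfolding face_def using fb_val by (intro sum.cong refl) auto
    also have "\<dots> = (\<Sum>k<30. (\<Sum>j<12. sol!j * fbvt!j!k) * ecp (ce!k) w)"
      by (simp add: sum_distrib_left sum_distrib_right sum.swap[of _ "{..<12}"] mult.assoc)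
    finally have R: "(\<Sum>z\<in>dodeca_faces - {z0, uminus ` z0}. n z * face_boundary z w)
        = (\<Sum>k<30. (\<Sum>j<12. sol!j * fbvt!j!k) * ecp (ce!k) w)" .
    have L: "delta_edge E w = (\<Sum>k<30. dlt!t!k * ecp (ce!k) w)" unfolding t(2) by (rule delta_val[OF t(1)])
    have M: "\<forall>k<30. dlt!t!k mod 3 = (\<Sum>j<12. sol!j * fbvt!j!k) mod 3"
    proof (intro allI impI)
      fix k :: nat assume k: "k < 30"
      have "map (\<lambda>x. x mod 3) (dlt!t) ! k = map (\<lambda>x. x mod 3) (vlin sol fbvt) ! k" using smod by simp
      thus "dlt!t!k mod 3 = (\<Sum>j<12. sol!j * fbvt!j!k) mod 3" using k ldl vl by auto
    qed
    show "delta_edge E w mod 3 = (\<Sum>z\<in>dodeca_faces - {z0, uminus ` z0}. n z * face_boundary z w) mod 3"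
      unfolding L R by (rule mod3_sum[OF M])
  qed
qed


end
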